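(* Let $g_1,\dots,g_N$ be unit vectors in $\mathbb{R}^3$, any three of which are linearly independent, and let $\gamma_1,\dots,\gamma_N\in\mathbb{R}$ be such that the $N$-grid they define is regular. Then the grid tiling associated with this grid has a growth form, and this growth form is the polyhedron whose vertices are the points $$\pm\frac{\upsilon_{ij}}{\Delta_{ij}},\qquad 1\le i<j\le N,$$ (i.e. the boundary of the convex hull of these points), where for pairwise distinct $i,j,k$: $h_{ij}=g_i\times g_j$, $\delta_{ijk}=\dfrac{|h_{ij}|}{|(h_{ij},g_k)|}$, $D_{ijk}=\det(g_i,g_j,g_k)$ (the determinant of the $3\times 3$ matrix with rows $g_i,g_j,g_k$), $\epsilon_{ijk}=1$ if $D_{ijk}>0$ and $\epsilon_{ijk}=-1$ if $D_{ijk}<0$, and $$\Delta_{ij}=\sum_{k\neq i,j}\frac{1}{\delta_{ijk}},\qquad \upsilon_{ij}=\sum_{k\neq i,j}\frac{\epsilon_{ijk}\,g_k}{\delta_{ijk}}.$$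
   Context: Grid construction (in $\mathbb{R}^d$, here $d=3$): given unit vectors $g_1,\dots,g_N$ and reals $\gamma_1,\dots,\gamma_N$, the $N$-grid is the union of the $N$ families of equidistant parallel planes $\{x\in\mathbb{R}^d:(x,g_i)-\gamma_i\in\mathbb{Z}\}$, $1\le i\le N$, where $(\cdot,\cdot)$ is the standard scalar product. The grid is regular if no point lies on more than $d$ of these planes. The grid decomposes $\mathbb{R}^d$ into cells (closures of connected components of the complement). Define $K_i(x)=\min\{n\in\mathbb{Z}: n\ge (x,g_i)-\gamma_i\}$ and $K(x)=\sum_{i=1}^N K_i(x)g_i$; $K$ is constant on the interior of each cell, mapping cells to a discrete set $\Lambda\subset\mathbb{R}^d$. The grid tiling is the tiling with vertex set $\Lambda$ in which two points of $\Lambda$ are joined by an edge iff the corresponding cells share a facet, and whose tiles are, for each intersection point of $d$ grid planes, the parallelepiped whose vertices are the $K$-images of the $2^d$ cells containing that point. Growth form: two tiles of a tiling of $\mathbb{R}^d$ are neighbours if their intersection has positive $(d-1)$-dimensional volume. A chain is a finite sequence of tiles with consecutive tiles neighbours; its length is the number of tiles minus one; the distance between two tiles is the minimal length of a chain joining them. Given a finite nonempty set $P_0$ of tiles, the $n$-th coordination shell $P_n$ is the set of tiles at distance exactly $n$ from $P_0$. A closed $(d-1)$-dimensional surface $F\subset\mathbb{R}^d$ is a growth form of the tiling if there exist a point $x$ and a constant $C$ such that for all $n$ the shell $P_n$ lies in the $C$-neighbourhood of $x+nF$ (this does not depend on $P_0$). *)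

theory Defs
  imports "HOL-Analysis.Analysis" "HOL-Analysis.Cross3"
begin

definition grid_set :: "(nat \<Rightarrow> real^3) \<Rightarrow> (nat \<Rightarrow> real) \<Rightarrow> nat \<Rightarrow> (real^3) set" where
  "grid_set g \<gamma> N = {x. \<exists>i\<in>{1..N}. x \<bullet> g i - \<gamma> i \<in> \<int>}"

text \<open>Indices of the plane families through the point x (a point lies on at most
  one plane of each family, since these planes are parallel and disjoint).\<close>
definition planes_through :: "(nat \<Rightarrow> real^3) \<Rightarrow> (nat \<Rightarrow> real) \<Rightarrow> nat \<Rightarrow> real^3 \<Rightarrow> nat set" where
  "planes_through g \<gamma> N x = {i\<in>{1..N}. x \<bullet> g i - \<gamma> i \<in> \<int>}"

definition regular_grid :: "(nat \<Rightarrow> real^3) \<Rightarrow> (nat \<Rightarrow> real) \<Rightarrow> nat \<Rightarrow> bool" where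
  "regular_grid g \<gamma> N \<longleftrightarrow> (\<forall>x. card (planes_through g \<gamma> N x) \<le> 3)"

definition Kmap :: "(nat \<Rightarrow> real^3) \<Rightarrow> (nat \<Rightarrow> real) \<Rightarrow> nat \<Rightarrow> real^3 \<Rightarrow> real^3" where
  "Kmap g \<gamma> N x = (\<Sum>i\<in>{1..N}. of_int \<lceil>x \<bullet> g i - \<gamma> i\<rceil> *\<^sub>R g i)"

text \<open>The tile attached to an intersection point p of grid planes: the parallelepiped
  (convex hull) whose vertices are the K-images of the cells containing p. A cell is the
  closure of a connected component of the complement of the grid; its K-image is the value
  of K at any point of that (open) component.\<close>
definition grid_tile_at :: "(nat \<Rightarrow> real^3) \<Rightarrow> (nat \<Rightarrow> real) \<Rightarrow> nat \<Rightarrow> real^3 \<Rightarrow> (real^3) set" where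
  "grid_tile_at g \<gamma> N p = convex hull
     {Kmap g \<gamma> N x | x. x \<notin> grid_set g \<gamma> N \<and>
        p \<in> closure (connected_component_set (- grid_set g \<gamma> N) x)}"

definition grid_tiles :: "(nat \<Rightarrow> real^3) \<Rightarrow> (nat \<Rightarrow> real) \<Rightarrow> nat \<Rightarrow> (real^3) set set" where
  "grid_tiles g \<gamma> N = {grid_tile_at g \<gamma> N p | p. card (planes_through g \<gamma> N p) \<ge> 3}"

text \<open>Neighbouring tiles: the intersection has positive (d-1)-dimensional volume.
  The tiles are convex, so their intersection is convex, and a convex set has positive
  (d-1)-dimensional measure iff its affine dimension is at least d-1.\<close>
definition tile_nbr :: "'a::euclidean_space set set \<Rightarrow> ('a set \<times> 'a set) set" where
  "tile_nbr \<T> = {(T, T'). T \<in> \<T> \<and> T' \<in> \<T> \<and> aff_dim (T \<inter> T') \<ge> int DIM('a) - 1}"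

definition coord_shell :: "'a::euclidean_space set set \<Rightarrow> 'a set set \<Rightarrow> nat \<Rightarrow> 'a set set" where
  "coord_shell \<T> P0 n = {T \<in> \<T>. (\<exists>T0\<in>P0. (T0, T) \<in> tile_nbr \<T> ^^ n) \<and>
       \<not> (\<exists>m<n. \<exists>T0\<in>P0. (T0, T) \<in> tile_nbr \<T> ^^ m)}"

definition is_growth_form :: "'a::euclidean_space set set \<Rightarrow> 'a set \<Rightarrow> bool" where
  "is_growth_form \<T> F \<longleftrightarrow> compact F \<and>
     (\<forall>P0. finite P0 \<and> P0 \<noteq> {} \<and> P0 \<subseteq> \<T> \<longrightarrow>
        (\<exists>x C. \<forall>n. \<forall>T\<in>coord_shell \<T> P0 n. \<forall>y\<in>T.
            \<exists>z\<in>F. dist y (x + real n *\<^sub>R z) \<le> C))"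

definition hvec :: "(nat \<Rightarrow> real^3) \<Rightarrow> nat \<Rightarrow> nat \<Rightarrow> real^3" where
  "hvec g i j = cross3 (g i) (g j)"

definition delta3 :: "(nat \<Rightarrow> real^3) \<Rightarrow> nat \<Rightarrow> nat \<Rightarrow> nat \<Rightarrow> real" where
  "delta3 g i j k = norm (hvec g i j) / \<bar>hvec g i j \<bullet> g k\<bar>"

definition Ddet :: "(nat \<Rightarrow> real^3) \<Rightarrow> nat \<Rightarrow> nat \<Rightarrow> nat \<Rightarrow> real" where
  "Ddet g i j k = det (vector [g i, g j, g k] :: real^3^3)"

definition eps3 :: "(nat \<Rightarrow> real^3) \<Rightarrow> nat \<Rightarrow> nat \<Rightarrow> nat \<Rightarrow> real" where
  "eps3 g i j k = (if Ddet g i j k > 0 then 1 else if Ddet g i j k < 0 then -1 else 0)"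

definition Delta2 :: "(nat \<Rightarrow> real^3) \<Rightarrow> nat \<Rightarrow> nat \<Rightarrow> nat \<Rightarrow> real" where
  "Delta2 g N i j = (\<Sum>k\<in>{1..N} - {i, j}. 1 / delta3 g i j k)"

definition upsilon2 :: "(nat \<Rightarrow> real^3) \<Rightarrow> nat \<Rightarrow> nat \<Rightarrow> nat \<Rightarrow> real^3" where
  "upsilon2 g N i j = (\<Sum>k\<in>{1..N} - {i, j}. (eps3 g i j k / delta3 g i j k) *\<^sub>R g k)"

definition growth_vertices :: "(nat \<Rightarrow> real^3) \<Rightarrow> nat \<Rightarrow> (real^3) set" where
  "growth_vertices g N = {s *\<^sub>R ((1 / Delta2 g N i j) *\<^sub>R upsilon2 g N i j) | s i j.
      s \<in> {1, -1} \<and> 1 \<le> i \<and> i < j \<and> j \<le> N}"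

end

theory Submission
  imports Defs
begin

unbundle cross3_syntax


lemma finite_eps:
  assumes "finite A" "\<forall>k\<in>A. (0::real) < f k"
  shows "\<exists>e>0. \<forall>k\<in>A. e \<le> f k"
proof -
  let ?M = "Min (insert 1 (f ` A))"
  have "?M > 0" using assms by (subst Min_gr_iff) auto
  moreover have "\<forall>k\<in>A. ?M \<le> f k" using assms by (auto intro: Min_le)
  ultimately show ?thesis by blast
qed

lemma triple_ident:
  fixes a b c v :: "real^3"
  shows "((a \<times> b) \<bullet> c) *\<^sub>R v = (v \<bullet> a) *\<^sub>R (b \<times> c) + (v \<bullet> b) *\<^sub>R (c \<times> a) + (v \<bullet> c) *\<^sub>R (a \<times> b)"
  unfolding vec_eq_iff forall_3 by (simp add: cross3_def inner_vec_def sum_3 algebra_simps)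

lemma det_cross: "det (vector [a,b,c] :: real^3^3) = (a \<times> b) \<bullet> c"
  by (simp add: cross3_simps)

lemma rows_vector3: "rows (vector [a,b,c] :: real^3^3) = {a,b,c}"
proof -
  have "{row i (vector [a,b,c] :: real^3^3) | i. i \<in> UNIV} = {a,b,c}"
  proof (rule set_eqI, rule iffI)
    fix x assume "x \<in> {row i (vector [a,b,c] :: real^3^3) | i. i \<in> UNIV}"
    then obtain i where "x = row i (vector [a,b,c] :: real^3^3)" by blast
    thus "x \<in> {a,b,c}" using exhaust_3[of i] by (auto simp: row_def vec_lambda_eta)
  next
    fix x assume "x \<in> {a,b,c}"
    hence "x = row 1 (vector [a,b,c] :: real^3^3) \<or> x = row 2 (vector [a,b,c] :: real^3^3) \<or> x = row 3 (vector [a,b,c] :: real^3^3)"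
      by (auto simp: row_def vec_lambda_eta)
    thus "x \<in> {row i (vector [a,b,c] :: real^3^3) | i. i \<in> UNIV}" by blast
  qed
  thus ?thesis by (simp add: rows_def)
qed

lemma triple_nz:
  fixes a b c :: "real^3"
  assumes "independent {a,b,c}" "a \<noteq> b" "a \<noteq> c" "b \<noteq> c"
  shows "(a \<times> b) \<bullet> c \<noteq> 0"
proof
  assume "(a \<times> b) \<bullet> c = 0"
  hence "det (vector [a,b,c] :: real^3^3) = 0" by (simp add: det_cross)
  hence "rank (vector [a,b,c] :: real^3^3) < 3" by (simp add: det_eq_0_rank)
  hence "dim {a,b,c} < 3" by (simp add: row_rank_def rows_vector3)
  moreover have "dim {a,b,c} = 3" using assms by (simp add: dim_eq_card_independent)
  ultimately show False by simp
qed

lemma cross_norm_le: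
  fixes a b :: "real^3"
  shows "norm (a \<times> b) \<le> norm a * norm b"
proof -
  have "(norm (a \<times> b))\<^sup>2 \<le> (norm a * norm b)\<^sup>2" using norm_cross_dot[of a b] by (metis le_add_same_cancel1 zero_le_power2)
  thus ?thesis by (rule power2_le_imp_le) simp
qed

lemma ceil_gt_int:
  fixes m x :: real
  assumes "m \<in> \<int>" "m < x"
  shows "m + 1 \<le> of_int (ceiling x)"
proof -
  obtain n where n: "m = of_int n" using assms(1) Ints_cases by blast
  have "n < ceiling x" using assms(2) n by (simp add: less_ceiling_iff)
  thus ?thesis using n by simp
qed


locale gridloc =
  fixes g :: "nat \<Rightarrow> real^3" and \<gamma> :: "nat \<Rightarrow> real" and N :: nat
  assumes N3: "N \<ge> 3"
    and unit: "\<forall>i\<in>{1..N}. norm (g i) = 1"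
    and indep: "\<forall>i\<in>{1..N}. \<forall>j\<in>{1..N}. \<forall>k\<in>{1..N}. i \<noteq> j \<and> i \<noteq> k \<and> j \<noteq> k \<longrightarrow>
           independent {g i, g j, g k}"
    and reg: "regular_grid g \<gamma> N"
begin

abbreviation "I \<equiv> {1..N}"
definition val :: "real^3 \<Rightarrow> nat \<Rightarrow> real" where "val p k = p \<bullet> g k - \<gamma> k"
abbreviation S where "S p \<equiv> planes_through g \<gamma> N p"
definition cc :: "real^3 \<Rightarrow> nat \<Rightarrow> real" where "cc p k = of_int (ceiling (val p k))"
definition hi :: "real^3 \<Rightarrow> nat \<Rightarrow> real" where "hi p k = cc p k + (if k \<in> S p then 1 else 0)"
definition tau :: "real^3 \<Rightarrow> nat \<Rightarrow> real" where "tau p k = cc p k + (if k \<in> S p then 1/2 else 0)"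
definition bx :: "real^3 \<Rightarrow> (real^3) set" where
  "bx p = {y. \<exists>t. y = (\<Sum>k\<in>I. t k *\<^sub>R g k) \<and> (\<forall>k\<in>I. cc p k \<le> t k \<and> t k \<le> hi p k)}"
abbreviation Tl where "Tl p \<equiv> grid_tile_at g \<gamma> N p"
abbreviation tiles where "tiles \<equiv> grid_tiles g \<gamma> N"
abbreviation Rn where "Rn \<equiv> tile_nbr tiles"
abbreviation GS where "GS \<equiv> grid_set g \<gamma> N"
abbreviation KK where "KK \<equiv> Kmap g \<gamma> N"
definition vtx where "vtx p \<longleftrightarrow> card (S p) \<ge> 3"

lemma S_def': "S p = {k\<in>I. val p k \<in> \<int>}"
  by (simp add: planes_through_def val_def)

lemma finite_S[simp]: "finite (S p)" and S_sub: "S p \<subseteq> I"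
  by (auto simp: S_def')

lemma card_S_le: "card (S p) \<le> 3"
  using reg by (simp add: regular_grid_def)

lemma vtx_card: "vtx p \<Longrightarrow> card (S p) = 3"
  using card_S_le[of p] by (simp add: vtx_def)

lemma g_unit: "k \<in> I \<Longrightarrow> norm (g k) = 1"
  using unit by blast

lemma g_nz: "k \<in> I \<Longrightarrow> g k \<noteq> 0"
  using g_unit by force

lemma GS_iff: "x \<in> GS \<longleftrightarrow> (\<exists>k\<in>I. val x k \<in> \<int>)"
  by (simp add: grid_set_def val_def)

lemma Kmap_eq: "KK x = (\<Sum>k\<in>I. cc x k *\<^sub>R g k)"
  by (simp add: Kmap_def cc_def val_def)

lemma val_add: "val (p + v) k = val p k + v \<bullet> g k"
  by (simp add: val_def inner_add_left)

lemma val_diff: "val p k - val q k = (p - q) \<bullet> g k"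
  by (simp add: val_def inner_diff_left)

lemma cc_int: "cc p k \<in> \<int>"
  by (simp add: cc_def)

lemma cc_bounds: "val p k \<le> cc p k" "cc p k < val p k + 1"
  by (simp_all add: cc_def) linarith

lemma cc_S: "k \<in> S p \<Longrightarrow> cc p k = val p k"
  by (auto simp: S_def' cc_def elim!: Ints_cases)

lemma cc_notS: assumes "k \<in> I" "k \<notin> S p" shows "val p k < cc p k"
proof -
  have "val p k \<noteq> cc p k" using assms cc_int[of p k] by (auto simp: S_def')
  thus ?thesis using cc_bounds(1)[of p k] by simp
qed

lemma tau_val: "\<bar>tau p k - val p k\<bar> \<le> 1"
  using cc_bounds[of p k] by (cases "k \<in> S p") (auto simp: tau_def cc_S)

section \<open>Cells\<close>

lemma comp_sub: "connected_component_set (- GS) x \<subseteq> - GS"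
  by (rule connected_component_subset)

lemma comp_cc:
  assumes x: "x \<notin> GS" and y: "y \<in> connected_component_set (- GS) x" and k: "k \<in> I"
  shows "cc y k = cc x k"
proof (rule ccontr)
  let ?C = "connected_component_set (- GS) x"
  assume ne: "cc y k \<noteq> cc x k"
  have conn: "connected ?C" by simp
  have xC: "x \<in> ?C" using x by simp
  have yng: "y \<notin> GS" using y comp_sub by blast
  have nint: "\<And>z. z \<in> ?C \<Longrightarrow> val z k \<notin> \<int>" using comp_sub k GS_iff by blast
  { fix a b assume aC: "a \<in> ?C" and bC: "b \<in> ?C" and lt: "cc a k < cc b k"
    let ?m = "cc a k"
    have "val a k \<le> ?m" by (rule cc_bounds)
    moreover have "?m < val b k"
    proof (rule ccontr)
      assume "\<not> ?m < val b k"
      hence "val b k \<le> ?m" by simp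
      hence "cc b k \<le> ?m" using cc_int[of a k] by (auto simp: cc_def elim!: Ints_cases intro: ceiling_le)
      thus False using lt by simp
    qed
    ultimately have "g k \<bullet> a \<le> ?m + \<gamma> k" "?m + \<gamma> k \<le> g k \<bullet> b"
      by (auto simp: val_def inner_commute)
    then obtain z where "z \<in> ?C" "g k \<bullet> z = ?m + \<gamma> k"
      using connected_ivt_hyperplane[OF conn aC bC] by blast
    hence False using nint[of z] cc_int[of a k] by (simp add: val_def inner_commute)
  }
  thus False using ne xC y by (metis linorder_neq_iff)
qed

lemma closure_cell:
  assumes x: "x \<notin> GS" and p: "p \<in> closure (connected_component_set (- GS) x)" and k: "k \<in> I"
  shows "cc x k - 1 \<le> val p k \<and> val p k \<le> cc x k"
proof -
  let ?C = "connected_component_set (- GS) x"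
  let ?D = "{z. cc x k - 1 \<le> val z k \<and> val z k \<le> cc x k}"
  have "closed ?D"
    unfolding val_def
    by (intro closed_Collect_conj closed_Collect_le continuous_intros)
  moreover have "?C \<subseteq> ?D"
  proof
    fix z assume z: "z \<in> ?C"
    have "cc z k = cc x k" using comp_cc[OF x z k] .
    thus "z \<in> ?D" using cc_bounds[of z k] by auto
  qed
  ultimately have "closure ?C \<subseteq> ?D" by (rule closure_minimal[rotated])
  thus ?thesis using p by blast
qed

lemma gen_in_box:
  assumes x: "x \<notin> GS" and p: "p \<in> closure (connected_component_set (- GS) x)"
  shows "KK x \<in> bx p"
proof -
  have "\<forall>k\<in>I. cc p k \<le> cc x k \<and> cc x k \<le> hi p k"
  proof
    fix k assume k: "k \<in> I"
    have b: "cc x k - 1 \<le> val p k" "val p k \<le> cc x k" using closure_cell[OF x p k] by auto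
    show "cc p k \<le> cc x k \<and> cc x k \<le> hi p k"
    proof (cases "k \<in> S p")
      case True
      then obtain n where n: "val p k = of_int n" by (auto simp: S_def' elim!: Ints_cases)
      obtain m where m: "cc x k = of_int m" using cc_int by (auto elim!: Ints_cases)
      have "cc p k = of_int n" using cc_S[OF True] n by simp
      moreover have "m - 1 \<le> n" "n \<le> m" using b n m by linarith+
      ultimately show ?thesis using True m by (simp add: hi_def)
    next
      case False
      have "val p k \<noteq> cc x k" using False k cc_int[of x k] by (auto simp: S_def')
      hence lt: "val p k < cc x k" using b by simp
      have "val p k \<noteq> cc x k - 1" using False k cc_int[of x k] by (auto simp: S_def')
      hence "cc x k - 1 < val p k" using b by simp
      hence "ceiling (val p k) = ceiling (val x k)" using lt by (intro ceiling_unique) (auto simp: cc_def)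
      hence "cc p k = cc x k" by (simp add: cc_def)
      thus ?thesis using False by (simp add: hi_def)
    qed
  qed
  thus ?thesis unfolding bx_def Kmap_eq by blast
qed

lemma box_convex: "convex (bx p)"
proof (rule convexI)
  fix y1 y2 and u v :: real
  assume y1: "y1 \<in> bx p" and y2: "y2 \<in> bx p" and u: "0 \<le> u" and v: "0 \<le> v" and uv: "u + v = 1"
  obtain t1 where t1: "y1 = (\<Sum>k\<in>I. t1 k *\<^sub>R g k)" "\<forall>k\<in>I. cc p k \<le> t1 k \<and> t1 k \<le> hi p k"
    using y1 by (auto simp: bx_def)
  obtain t2 where t2: "y2 = (\<Sum>k\<in>I. t2 k *\<^sub>R g k)" "\<forall>k\<in>I. cc p k \<le> t2 k \<and> t2 k \<le> hi p k"
    using y2 by (auto simp: bx_def)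
  let ?t = "\<lambda>k. u * t1 k + v * t2 k"
  have e1: "u *\<^sub>R y1 + v *\<^sub>R y2 = (\<Sum>k\<in>I. ?t k *\<^sub>R g k)"
    by (simp add: t1 t2 scaleR_sum_right sum.distrib[symmetric] scaleR_add_left)
  have e2: "\<forall>k\<in>I. cc p k \<le> ?t k \<and> ?t k \<le> hi p k"
  proof
    fix k assume k: "k \<in> I"
    have a: "u * cc p k \<le> u * t1 k" "v * cc p k \<le> v * t2 k"
      using t1(2) t2(2) k u v by (auto intro: mult_left_mono)
    have b: "u * t1 k \<le> u * hi p k" "v * t2 k \<le> v * hi p k"
      using t1(2) t2(2) k u v by (auto intro: mult_left_mono)
    have "cc p k = u * cc p k + v * cc p k" "hi p k = u * hi p k + v * hi p k"
      using uv by (simp_all add: distrib_right[symmetric])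
    thus "cc p k \<le> ?t k \<and> ?t k \<le> hi p k" using a b by linarith
  qed
  show "u *\<^sub>R y1 + v *\<^sub>R y2 \<in> bx p" unfolding bx_def mem_Collect_eq
    by (rule exI[where x="\<lambda>k. u * t1 k + v * t2 k"]) (use e1 e2 in blast)
qed

lemma Tl_sub_box: "Tl p \<subseteq> bx p"
  unfolding grid_tile_at_def
  by (rule hull_minimal) (auto intro: gen_in_box box_convex)

lemma box_val_eq:
  assumes "\<forall>k\<in>I. val p k = val q k"
  shows "bx p = bx q"
proof -
  have "S p = S q" using assms by (auto simp: S_def')
  moreover have "\<forall>k\<in>I. cc p k = cc q k" using assms by (simp add: cc_def)
  ultimately show ?thesis unfolding bx_def hi_def by (metis (no_types, lifting))
qed

lemma box_near:
  assumes "y \<in> bx p"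
  shows "norm (y - (\<Sum>k\<in>I. val p k *\<^sub>R g k)) \<le> 2 * real N"
proof -
  obtain t where t: "y = (\<Sum>k\<in>I. t k *\<^sub>R g k)" "\<forall>k\<in>I. cc p k \<le> t k \<and> t k \<le> hi p k"
    using assms by (auto simp: bx_def)
  have "y - (\<Sum>k\<in>I. val p k *\<^sub>R g k) = (\<Sum>k\<in>I. (t k - val p k) *\<^sub>R g k)"
    by (simp add: t sum_subtractf scaleR_diff_left)
  also have "norm \<dots> \<le> (\<Sum>k\<in>I. norm ((t k - val p k) *\<^sub>R g k))" by (rule norm_sum)
  also have "\<dots> \<le> (\<Sum>k\<in>I. 2)"
  proof (rule sum_mono)
    fix k assume k: "k \<in> I"
    have "cc p k \<le> t k" "t k \<le> cc p k + 1" using t(2) k by (auto simp: hi_def split: if_splits)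
    hence "\<bar>t k - val p k\<bar> \<le> 2" using cc_bounds[of p k] by linarith
    thus "norm ((t k - val p k) *\<^sub>R g k) \<le> 2" using g_unit[OF k] by simp
  qed
  finally show ?thesis by simp
qed

end


lemma aff_dim_line: "aff_dim ((+) P ` span {v :: real^3}) \<le> 1"
proof -
  have "aff_dim ((+) P ` span {v}) = int (dim (span {v}))"
    by (simp add: aff_dim_translation_eq aff_dim_subspace)
  also have "dim (span {v}) \<le> 1" using dim_le_card[of "{v}" "{v}"] by (simp add: span_base)
  finally show ?thesis by simp
qed

lemma line_contra:
  assumes "X \<subseteq> (+) P ` span {v :: real^3}" "aff_dim X \<ge> 2"
  shows False
  using aff_dim_subset[OF assms(1)] aff_dim_line[of P v] assms(2) by simp

context gridloc begin

lemma TW: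
  assumes "val p k > val q k"
  shows "hi q k \<le> cc p k"
proof (cases "k \<in> S q")
  case True
  have "val q k \<in> \<int>" using True by (simp add: S_def')
  hence "val q k + 1 \<le> cc p k" using ceil_gt_int[OF _ assms] by (simp add: cc_def)
  thus ?thesis using True cc_S[OF True] by (simp add: hi_def)
next
  case False
  have "cc q k \<le> cc p k" using assms by (simp add: cc_def ceiling_mono)
  thus ?thesis using False by (simp add: hi_def)
qed

definition reps :: "real^3 \<Rightarrow> (nat \<Rightarrow> real) \<Rightarrow> real^3 \<Rightarrow> bool" where
  "reps p t y \<longleftrightarrow> y = (\<Sum>k\<in>I. t k *\<^sub>R g k) \<and> (\<forall>k\<in>I. cc p k \<le> t k \<and> t k \<le> hi p k)"

lemma bx_reps: "y \<in> bx p \<longleftrightarrow> (\<exists>t. reps p t y)"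
  by (simp add: bx_def reps_def)

lemma reps_bounds: "reps p t y \<Longrightarrow> k \<in> I \<Longrightarrow> cc p k \<le> t k \<and> t k \<le> hi p k"
  by (simp add: reps_def)

lemma reps_notS: "reps p t y \<Longrightarrow> k \<in> I \<Longrightarrow> k \<notin> S p \<Longrightarrow> t k = cc p k"
  by (force simp: reps_def hi_def)

lemma K1:
  assumes t: "reps p t y" and t': "reps q t' y" and k: "k \<in> I" and w: "(p - q) \<bullet> g k \<noteq> 0"
  shows "t k = t' k"
proof -
  let ?w = "p - q"
  have yt: "y = (\<Sum>k\<in>I. t k *\<^sub>R g k)" and yt': "y = (\<Sum>k\<in>I. t' k *\<^sub>R g k)"
    using t t' by (auto simp: reps_def)
  have "(\<Sum>k\<in>I. (t k - t' k) * (?w \<bullet> g k)) = (\<Sum>k\<in>I. (t k - t' k) *\<^sub>R g k) \<bullet> ?w"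
    by (simp add: inner_sum_left inner_sum_right inner_commute)
  also have "(\<Sum>k\<in>I. (t k - t' k) *\<^sub>R g k) = (\<Sum>k\<in>I. t k *\<^sub>R g k) - (\<Sum>k\<in>I. t' k *\<^sub>R g k)"
    by (simp add: scaleR_diff_left sum_subtractf)
  also have "\<dots> = 0" using yt yt' by simp
  finally have sum0: "(\<Sum>k\<in>I. (t k - t' k) * (?w \<bullet> g k)) = 0" by simp
  have nonneg: "\<forall>k\<in>I. 0 \<le> (t k - t' k) * (?w \<bullet> g k)"
  proof
    fix k assume k: "k \<in> I"
    have tb: "cc p k \<le> t k" "t k \<le> hi p k" "cc q k \<le> t' k" "t' k \<le> hi q k"
      using t t' k by (auto simp: reps_def)
    show "0 \<le> (t k - t' k) * (?w \<bullet> g k)"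
    proof (cases "?w \<bullet> g k" rule: linorder_cases[of _ 0])
      case greater
      hence "val p k > val q k" using val_diff[of p k q] by simp
      hence "hi q k \<le> cc p k" by (rule TW)
      thus ?thesis using greater tb by (intro mult_nonneg_nonneg) auto
    next
      case less
      hence "val q k > val p k" using val_diff[of p k q] by simp
      hence "hi p k \<le> cc q k" by (rule TW)
      thus ?thesis using less tb by (intro mult_nonpos_nonpos) auto
    qed simp
  qed
  have "(t k - t' k) * (?w \<bullet> g k) = 0"
    using sum0 nonneg k by (subst (asm) sum_nonneg_eq_0_iff) auto
  thus ?thesis using w by simp
qed

definition fixedp :: "real^3 \<Rightarrow> (real^3) set \<Rightarrow> nat \<Rightarrow> bool" where
  "fixedp p X k \<longleftrightarrow> (\<exists>c. \<forall>y\<in>X. \<forall>t. reps p t y \<longrightarrow> t k = c)"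

lemma LL:
  assumes v: "vtx p" and X: "X \<subseteq> bx p" and k12: "k1 \<in> S p" "k2 \<in> S p" "k1 \<noteq> k2"
    and f1: "fixedp p X k1" and f2: "fixedp p X k2" and ad: "aff_dim X \<ge> 2"
  shows False
proof -
  obtain c1 where c1: "\<forall>y\<in>X. \<forall>t. reps p t y \<longrightarrow> t k1 = c1" using f1 by (auto simp: fixedp_def)
  obtain c2 where c2: "\<forall>y\<in>X. \<forall>t. reps p t y \<longrightarrow> t k2 = c2" using f2 by (auto simp: fixedp_def)
  have c3: "card (S p) = 3" using vtx_card[OF v] .
  obtain k3 where k3: "S p = {k1, k2, k3}" "k3 \<noteq> k1" "k3 \<noteq> k2"
  proof -
    have "card (S p - {k1, k2}) = 1" using c3 k12 by (simp add: card_Diff_subset)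
    then obtain k3 where "S p - {k1, k2} = {k3}" by (auto simp: card_Suc_eq)
    hence "S p = {k1, k2, k3}" "k3 \<noteq> k1" "k3 \<noteq> k2" using k12 by auto
    thus ?thesis using that by blast
  qed
  let ?P = "(\<Sum>k\<in>I - S p. cc p k *\<^sub>R g k) + c1 *\<^sub>R g k1 + c2 *\<^sub>R g k2"
  have "X \<subseteq> (+) ?P ` span {g k3}"
  proof
    fix y assume y: "y \<in> X"
    then obtain t where t: "reps p t y" using X bx_reps by blast
    have "y = (\<Sum>k\<in>I. t k *\<^sub>R g k)" using t by (simp add: reps_def)
    also have "\<dots> = (\<Sum>k\<in>I - S p. t k *\<^sub>R g k) + (\<Sum>k\<in>S p. t k *\<^sub>R g k)"
      using S_sub[of p] by (simp add: sum.subset_diff)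
    also have "(\<Sum>k\<in>I - S p. t k *\<^sub>R g k) = (\<Sum>k\<in>I - S p. cc p k *\<^sub>R g k)"
      using reps_notS[OF t] by (intro sum.cong) auto
    also have "(\<Sum>k\<in>S p. t k *\<^sub>R g k) = c1 *\<^sub>R g k1 + c2 *\<^sub>R g k2 + t k3 *\<^sub>R g k3"
      using k3 k12 c1 c2 y t by simp
    finally have "y = ?P + t k3 *\<^sub>R g k3" by (simp add: algebra_simps)
    thus "y \<in> (+) ?P ` span {g k3}" by (auto intro: span_mul span_base)
  qed
  thus False using line_contra ad by blast
qed

lemma NB:
  assumes vp: "vtx p" and vq: "vtx q" and X: "X \<subseteq> bx p" "X \<subseteq> bx q" and ad: "aff_dim X \<ge> 2"
  shows "(\<Sum>k\<in>I. \<bar>tau p k - tau q k\<bar>) \<le> 1"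
proof -
  let ?w = "p - q"
  have "X \<noteq> {}" using ad by auto
  then obtain y0 where y0: "y0 \<in> X" by blast
  obtain t0 where t0: "reps p t0 y0" using y0 X bx_reps by blast
  obtain t0' where t0': "reps q t0' y0" using y0 X bx_reps by blast
  have wnz: "?w \<bullet> g k \<noteq> 0" if "val p k \<noteq> val q k" for k
    using that val_diff[of p k q] by simp
  define A where "A = S p - S q"
  define B where "B = S q - S p"
  define E where "E = {k \<in> S p \<inter> S q. cc p k \<noteq> cc q k}"
  have AI: "A \<subseteq> I" and BI: "B \<subseteq> I" and EI: "E \<subseteq> I" using S_sub[of p] S_sub[of q]
    by (auto simp: A_def B_def E_def)
  have fin: "finite A" "finite B" "finite E" by (auto simp: A_def B_def E_def)
  have A_fix: "fixedp p X k" and A_d: "\<bar>tau p k - tau q k\<bar> \<le> 1/2" if k: "k \<in> A" for k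
  proof -
    have kI: "k \<in> I" "k \<in> S p" "k \<notin> S q" using k AI by (auto simp: A_def)
    have "val p k \<noteq> val q k" using kI by (auto simp: S_def')
    hence w: "?w \<bullet> g k \<noteq> 0" by (rule wnz)
    have eq: "t k = cc q k" if yX: "y \<in> X" and tp: "reps p t y" for y t
    proof -
      obtain t' where t': "reps q t' y" using yX X bx_reps by blast
      have "t k = t' k" using K1[OF tp t' kI(1) w] .
      thus ?thesis using reps_notS[OF t' kI(1) kI(3)] by simp
    qed
    show "fixedp p X k" unfolding fixedp_def using eq by blast
    have "cc p k \<le> t0 k" "t0 k \<le> cc p k + 1" using reps_bounds[OF t0 kI(1)] kI by (auto simp: hi_def)
    moreover have "t0 k = cc q k" using eq[OF y0 t0] .
    ultimately show "\<bar>tau p k - tau q k\<bar> \<le> 1/2"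
    proof -
      assume a: "cc p k \<le> t0 k" "t0 k \<le> cc p k + 1" "t0 k = cc q k"
      obtain m n where mn: "cc p k = of_int m" "cc q k = of_int n" using cc_int by (metis Ints_cases)
      have h: "real_of_int m \<le> real_of_int n" "real_of_int n \<le> real_of_int (m + 1)" using a mn by auto
      have "m \<le> n" "n \<le> m + 1" using h by (simp only: of_int_le_iff)+
      hence "n = m \<or> n = m + 1" by linarith
      thus ?thesis using kI mn by (auto simp: tau_def)
    qed
  qed
  have B_fix: "fixedp q X k" and B_d: "\<bar>tau p k - tau q k\<bar> \<le> 1/2" if k: "k \<in> B" for k
  proof -
    have kI: "k \<in> I" "k \<in> S q" "k \<notin> S p" using k BI by (auto simp: B_def)
    have "val p k \<noteq> val q k" using kI by (auto simp: S_def')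
    hence w: "?w \<bullet> g k \<noteq> 0" by (rule wnz)
    have eq: "t' k = cc p k" if yX: "y \<in> X" and tq: "reps q t' y" for y t'
    proof -
      obtain t where t: "reps p t y" using yX X bx_reps by blast
      have "t k = t' k" using K1[OF t tq kI(1) w] .
      thus ?thesis using reps_notS[OF t kI(1) kI(3)] by simp
    qed
    show "fixedp q X k" unfolding fixedp_def using eq by blast
    have "cc q k \<le> t0' k" "t0' k \<le> cc q k + 1" using reps_bounds[OF t0' kI(1)] kI by (auto simp: hi_def)
    moreover have "t0' k = cc p k" using eq[OF y0 t0'] .
    ultimately show "\<bar>tau p k - tau q k\<bar> \<le> 1/2"
    proof -
      assume a: "cc q k \<le> t0' k" "t0' k \<le> cc q k + 1" "t0' k = cc p k"
      obtain m n where mn: "cc p k = of_int m" "cc q k = of_int n" using cc_int by (metis Ints_cases)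
      have h: "real_of_int n \<le> real_of_int m" "real_of_int m \<le> real_of_int (n + 1)" using a mn by auto
      have "n \<le> m" "m \<le> n + 1" using h by (simp only: of_int_le_iff)+
      hence "m = n \<or> m = n + 1" by linarith
      thus ?thesis using kI mn by (auto simp: tau_def)
    qed
  qed
  have E_fix: "fixedp p X k \<and> fixedp q X k" and E_d: "\<bar>tau p k - tau q k\<bar> \<le> 1" if k: "k \<in> E" for k
  proof -
    have kI: "k \<in> I" "k \<in> S q" "k \<in> S p" "cc p k \<noteq> cc q k" using k EI by (auto simp: E_def)
    have "val p k \<noteq> val q k" using kI cc_S by metis
    hence w: "?w \<bullet> g k \<noteq> 0" by (rule wnz)
    obtain m n where mn: "cc p k = of_int m" "cc q k = of_int n" using cc_int by (metis Ints_cases)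
    have mn': "m \<noteq> n" using kI(4) mn by auto
    have eq: "t k = of_int (max m n) \<and> (n = m + 1 \<or> m = n + 1)" if "reps p t y" "reps q t' y" for y t t'
    proof -
      have "t k = t' k" using K1[OF that kI(1) w] .
      moreover have "cc p k \<le> t k" "t k \<le> cc p k + 1" "cc q k \<le> t' k" "t' k \<le> cc q k + 1"
        using reps_bounds[OF that(1) kI(1)] reps_bounds[OF that(2) kI(1)] kI by (auto simp: hi_def)
      ultimately have "of_int m \<le> t k" "t k \<le> of_int m + 1" "of_int n \<le> t k" "t k \<le> of_int n + 1"
        using mn by auto
      hence h: "real_of_int n \<le> real_of_int (m + 1)" "real_of_int m \<le> real_of_int (n + 1)" by auto
      hence "n \<le> m + 1" "m \<le> n + 1" by (simp only: of_int_le_iff)+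
      hence c: "n = m + 1 \<or> m = n + 1" using mn' by linarith
      thus ?thesis using \<open>of_int m \<le> t k\<close> \<open>t k \<le> of_int m + 1\<close> \<open>of_int n \<le> t k\<close> \<open>t k \<le> of_int n + 1\<close>
        by auto
    qed
    have "fixedp p X k"
      unfolding fixedp_def
    proof (intro exI[of _ "of_int (max m n)"] ballI allI impI)
      fix y t assume "y \<in> X" "reps p t y"
      moreover obtain t' where "reps q t' y" using \<open>y \<in> X\<close> X bx_reps by blast
      ultimately show "t k = of_int (max m n)" using eq by blast
    qed
    moreover have "fixedp q X k"
      unfolding fixedp_def
    proof (intro exI[of _ "of_int (max m n)"] ballI allI impI)
      fix y t' assume "y \<in> X" "reps q t' y"
      moreover obtain t where "reps p t y" using \<open>y \<in> X\<close> X bx_reps by blast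
      ultimately show "t' k = of_int (max m n)" using eq K1[of p _ y q t' k] kI(1) w by metis
    qed
    ultimately show "fixedp p X k \<and> fixedp q X k" by blast
    have "n = m + 1 \<or> m = n + 1" using eq[OF t0 t0'] by blast
    thus "\<bar>tau p k - tau q k\<bar> \<le> 1" using kI mn by (auto simp: tau_def)
  qed
  have O_d: "tau p k = tau q k" if k: "k \<in> I" "k \<notin> A" "k \<notin> B" "k \<notin> E" for k
  proof (cases "k \<in> S p")
    case True
    hence "k \<in> S q" using k by (auto simp: A_def)
    moreover have "cc p k = cc q k" using k True calculation by (auto simp: E_def)
    ultimately show ?thesis using True by (simp add: tau_def)
  next
    case False
    hence nq: "k \<notin> S q" using k by (auto simp: B_def)
    have "cc p k = cc q k"
    proof (cases "val p k = val q k")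
      case True thus ?thesis by (simp add: cc_def)
    next
      case False
      hence "t0 k = t0' k" using K1[OF t0 t0' k(1)] wnz by blast
      thus ?thesis using reps_notS[OF t0 k(1) \<open>k \<notin> S p\<close>] reps_notS[OF t0' k(1) nq] by simp
    qed
    thus ?thesis using False nq by (simp add: tau_def)
  qed
  have pw: "\<bar>tau p k - tau q k\<bar> \<le> (if k \<in> A then 1/2 else 0) + (if k \<in> B then 1/2 else 0) + (if k \<in> E then 1 else 0)"
    if k: "k \<in> I" for k
  proof -
    have dAB: "k \<in> A \<Longrightarrow> k \<notin> B \<and> k \<notin> E" "k \<in> B \<Longrightarrow> k \<notin> A \<and> k \<notin> E"
      by (auto simp: A_def B_def E_def)
    show ?thesis
      using A_d[of k] B_d[of k] E_d[of k] O_d[OF k] dAB by (cases "k \<in> A"; cases "k \<in> B"; cases "k \<in> E") auto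
  qed
  have "(\<Sum>k\<in>I. \<bar>tau p k - tau q k\<bar>) \<le> (\<Sum>k\<in>I. (if k \<in> A then 1/2 else 0) + (if k \<in> B then 1/2 else 0) + (if k \<in> E then 1 else 0))"
    by (rule sum_mono) (rule pw)
  also have "\<dots> = (\<Sum>k\<in>I. if k \<in> A then 1/2 else 0) + (\<Sum>k\<in>I. if k \<in> B then 1/2 else 0) + (\<Sum>k\<in>I. if k \<in> E then 1 else (0::real))"
    by (simp add: sum.distrib)
  also have "\<dots> = card A / 2 + card B / 2 + card E"
  proof -
    have "{k\<in>I. k \<in> A} = A" "{k\<in>I. k \<in> B} = B" "{k\<in>I. k \<in> E} = E" using AI BI EI by auto
    thus ?thesis by (simp add: sum.inter_filter[symmetric])
  qed
  also have "\<dots> \<le> 1"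
  proof -
    have cAB: "card A = card B"
      using vtx_card[OF vp] vtx_card[OF vq]
      by (simp add: A_def B_def card_Diff_subset_Int Int_commute)
    have "card (A \<union> E) \<le> 1"
    proof (rule ccontr)
      assume "\<not> card (A \<union> E) \<le> 1"
      hence "2 \<le> card (A \<union> E)" by simp
      then obtain k1 k2 where kk: "k1 \<in> A \<union> E" "k2 \<in> A \<union> E" "k1 \<noteq> k2"
        by (metis One_nat_def card_le_Suc0_iff_eq not_less_eq_eq numeral_2_eq_2 fin(1) fin(3) finite_UnI)
      have "k1 \<in> S p" "k2 \<in> S p" using kk by (auto simp: A_def E_def)
      moreover have "fixedp p X k1" "fixedp p X k2" using kk A_fix E_fix by blast+
      ultimately show False using LL[OF vp X(1) _ _ kk(3) _ _ ad] by blast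
    qed
    moreover have "A \<inter> E = {}" by (auto simp: A_def E_def)
    ultimately have "card A + card E \<le> 1" using fin by (simp add: card_Un_disjoint)
    thus ?thesis using cAB by simp
  qed
  finally show ?thesis .
qed

end


context gridloc begin

definition rep :: "(real^3) set \<Rightarrow> real^3" where
  "rep T = (SOME p. vtx p \<and> T = Tl p)"

lemma tiles_iff: "T \<in> tiles \<longleftrightarrow> (\<exists>p. vtx p \<and> T = Tl p)"
  by (auto simp: grid_tiles_def vtx_def)

lemma rep: assumes "T \<in> tiles" shows "vtx (rep T)" "T = Tl (rep T)"
proof -
  have "\<exists>p. vtx p \<and> T = Tl p" using assms tiles_iff by blast
  hence "vtx (rep T) \<and> T = Tl (rep T)" unfolding rep_def by (rule someI_ex)
  thus "vtx (rep T)" "T = Tl (rep T)" by auto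
qed

lemma Rn_iff: "(A, B) \<in> Rn \<longleftrightarrow> A \<in> tiles \<and> B \<in> tiles \<and> aff_dim (A \<inter> B) \<ge> 2"
  by (simp add: tile_nbr_def)

lemma nbr_tau:
  assumes "(A, B) \<in> Rn"
  shows "(\<Sum>k\<in>I. \<bar>tau (rep A) k - tau (rep B) k\<bar>) \<le> 1"
proof -
  have AB: "A \<in> tiles" "B \<in> tiles" "aff_dim (A \<inter> B) \<ge> 2" using assms Rn_iff by auto
  have "A \<inter> B \<subseteq> bx (rep A)" using rep(2)[OF AB(1)] Tl_sub_box by blast
  moreover have "A \<inter> B \<subseteq> bx (rep B)" using rep(2)[OF AB(2)] Tl_sub_box by blast
  ultimately show ?thesis using NB[OF rep(1)[OF AB(1)] rep(1)[OF AB(2)] _ _ AB(3)] by blast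
qed

lemma pow_tau:
  assumes "(A, B) \<in> Rn ^^ n"
  shows "(\<Sum>k\<in>I. \<bar>tau (rep A) k - tau (rep B) k\<bar>) \<le> real n"
  using assms
proof (induction n arbitrary: B)
  case 0
  thus ?case by simp
next
  case (Suc n)
  then obtain C where C: "(A, C) \<in> Rn ^^ n" "(C, B) \<in> Rn" by auto
  have "(\<Sum>k\<in>I. \<bar>tau (rep A) k - tau (rep B) k\<bar>)
      \<le> (\<Sum>k\<in>I. \<bar>tau (rep A) k - tau (rep C) k\<bar> + \<bar>tau (rep C) k - tau (rep B) k\<bar>)"
    by (rule sum_mono) linarith
  also have "\<dots> = (\<Sum>k\<in>I. \<bar>tau (rep A) k - tau (rep C) k\<bar>) + (\<Sum>k\<in>I. \<bar>tau (rep C) k - tau (rep B) k\<bar>)"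
    by (rule sum.distrib)
  also have "\<dots> \<le> real n + 1" using Suc.IH[OF C(1)] nbr_tau[OF C(2)] by linarith
  finally show ?case by simp
qed

definition nu :: "real^3 \<Rightarrow> real" where "nu v = (\<Sum>k\<in>I. \<bar>v \<bullet> g k\<bar>)"

lemma nu_tau: "nu (p - q) \<le> (\<Sum>k\<in>I. \<bar>tau p k - tau q k\<bar>) + 2 * real N"
proof -
  have "nu (p - q) \<le> (\<Sum>k\<in>I. \<bar>tau p k - tau q k\<bar> + 2)"
    unfolding nu_def
  proof (rule sum_mono)
    fix k assume "k \<in> I"
    have "(p - q) \<bullet> g k = val p k - val q k" by (simp add: val_diff)
    thus "\<bar>(p - q) \<bullet> g k\<bar> \<le> \<bar>tau p k - tau q k\<bar> + 2" using tau_val[of p k] tau_val[of q k] by linarith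
  qed
  also have "\<dots> = (\<Sum>k\<in>I. \<bar>tau p k - tau q k\<bar>) + 2 * real N" by (simp add: sum.distrib)
  finally show ?thesis .
qed

lemma pow_nu:
  assumes "(A, B) \<in> Rn ^^ n"
  shows "nu (rep B - rep A) \<le> real n + 2 * real N"
  using nu_tau[of "rep B" "rep A"] pow_tau[OF assms]
  by (simp add: abs_minus_commute)

section \<open>Case A: all grid vectors in a plane\<close>

lemma coord_unique:
  fixes u1 u2 :: "real^3"
  assumes "independent {u1, u2}" "u1 \<noteq> u2" "a *\<^sub>R u1 + b *\<^sub>R u2 = a' *\<^sub>R u1 + b' *\<^sub>R u2"
  shows "a = a'"
proof (rule ccontr)
  assume ne: "a \<noteq> a'"
  have "(a - a') *\<^sub>R u1 = (b' - b) *\<^sub>R u2" using assms(3) by (simp add: algebra_simps)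
  hence e: "(a - a') *\<^sub>R u1 = (b' - b) *\<^sub>R u2" .
  have "u1 = inverse (a - a') *\<^sub>R ((a - a') *\<^sub>R u1)" using ne by simp
  also have "\<dots> = ((b' - b) / (a - a')) *\<^sub>R u2" unfolding e by (simp add: divide_inverse mult.commute)
  finally have "u1 = ((b' - b) / (a - a')) *\<^sub>R u2" .
  hence "u1 \<in> span ({u1, u2} - {u1})" using assms(2) by (auto intro: span_mul span_base)
  hence "dependent {u1, u2}" unfolding dependent_def by blast
  thus False using assms(1) by simp
qed

lemma decomp2:
  assumes "\<forall>k\<in>I. g k = u1 \<or> g k = u2"
  shows "(\<Sum>k\<in>I. t k *\<^sub>R g k) = (\<Sum>k\<in>I \<inter> {k. g k = u1}. t k) *\<^sub>R u1 + (\<Sum>k\<in>I - {k. g k = u1}. t k) *\<^sub>R u2"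
proof -
  have "(\<Sum>k\<in>I. t k *\<^sub>R g k) = (\<Sum>k\<in>I \<inter> {k. g k = u1}. t k *\<^sub>R g k) + (\<Sum>k\<in>I - {k. g k = u1}. t k *\<^sub>R g k)"
    by (rule sum.Int_Diff) simp
  also have "(\<Sum>k\<in>I \<inter> {k. g k = u1}. t k *\<^sub>R g k) = (\<Sum>k\<in>I \<inter> {k. g k = u1}. t k *\<^sub>R u1)"
    by (rule sum.cong) auto
  also have "(\<Sum>k\<in>I - {k. g k = u1}. t k *\<^sub>R g k) = (\<Sum>k\<in>I - {k. g k = u1}. t k *\<^sub>R u2)"
    using assms by (intro sum.cong) auto
  finally show ?thesis by (simp add: scaleR_sum_left)
qed

lemma caseA_dir:
  assumes u: "independent {u1, u2}" "u1 \<noteq> u2" and gk: "\<forall>k\<in>I. g k = u1 \<or> g k = u2"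
    and X: "X \<subseteq> bx p" "X \<subseteq> bx q" and ad: "aff_dim X \<ge> 2"
  shows "(p - q) \<bullet> u1 \<le> 0"
proof (rule ccontr)
  assume "\<not> (p - q) \<bullet> u1 \<le> 0"
  hence pos: "(p - q) \<bullet> u1 > 0" by simp
  let ?G1 = "I \<inter> {k. g k = u1}" and ?G2 = "I - {k. g k = u1}"
  let ?a0 = "\<Sum>k\<in>?G1. cc p k"
  have "X \<subseteq> (+) (?a0 *\<^sub>R u1) ` span {u2}"
  proof
    fix y assume y: "y \<in> X"
    obtain t where t: "reps p t y" using y X bx_reps by blast
    obtain t' where t': "reps q t' y" using y X bx_reps by blast
    have ya: "y = (\<Sum>k\<in>?G1. t k) *\<^sub>R u1 + (\<Sum>k\<in>?G2. t k) *\<^sub>R u2"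
      using t decomp2[OF gk, of t] by (simp add: reps_def)
    have yb: "y = (\<Sum>k\<in>?G1. t' k) *\<^sub>R u1 + (\<Sum>k\<in>?G2. t' k) *\<^sub>R u2"
      using t' decomp2[OF gk, of t'] by (simp add: reps_def)
    have eqa: "(\<Sum>k\<in>?G1. t k) = (\<Sum>k\<in>?G1. t' k)"
      using coord_unique[OF u] ya yb by metis
    have ge: "\<forall>k\<in>?G1. hi q k \<le> cc p k"
    proof
      fix k assume k: "k \<in> ?G1"
      have "val p k - val q k = (p - q) \<bullet> u1" using k by (simp add: val_diff)
      thus "hi q k \<le> cc p k" using pos by (intro TW) simp
    qed
    have s1: "?a0 \<le> (\<Sum>k\<in>?G1. t k)" using reps_bounds[OF t] by (intro sum_mono) auto
    have s2: "(\<Sum>k\<in>?G1. t' k) \<le> (\<Sum>k\<in>?G1. hi q k)" using reps_bounds[OF t'] by (intro sum_mono) auto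
    have s3: "(\<Sum>k\<in>?G1. hi q k) \<le> ?a0" using ge by (intro sum_mono) auto
    have "(\<Sum>k\<in>?G1. t k) = ?a0" using s1 s2 s3 eqa by linarith
    hence "y = ?a0 *\<^sub>R u1 + (\<Sum>k\<in>?G2. t k) *\<^sub>R u2" using ya by simp
    thus "y \<in> (+) (?a0 *\<^sub>R u1) ` span {u2}" by (auto intro: span_mul span_base)
  qed
  thus False using line_contra ad by blast
qed

lemma caseA_nbr:
  assumes u: "independent {u1, u2}" "u1 \<noteq> u2" and gk: "\<forall>k\<in>I. g k = u1 \<or> g k = u2"
    and AB: "(A, B) \<in> Rn"
  shows "\<forall>k\<in>I. val (rep A) k = val (rep B) k"
proof -
  have AB': "A \<in> tiles" "B \<in> tiles" "aff_dim (A \<inter> B) \<ge> 2" using AB Rn_iff by auto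
  have XA: "A \<inter> B \<subseteq> bx (rep A)" using rep(2)[OF AB'(1)] Tl_sub_box by blast
  have XB: "A \<inter> B \<subseteq> bx (rep B)" using rep(2)[OF AB'(2)] Tl_sub_box by blast
  have u': "independent {u2, u1}" "u2 \<noteq> u1" using u by (simp_all add: insert_commute)
  have gk': "\<forall>k\<in>I. g k = u2 \<or> g k = u1" using gk by blast
  have "(rep A - rep B) \<bullet> u1 \<le> 0" using caseA_dir[OF u gk XA XB AB'(3)] .
  moreover have "(rep B - rep A) \<bullet> u1 \<le> 0" using caseA_dir[OF u gk XB XA] AB'(3) by (simp add: Int_commute)
  moreover have "(rep A - rep B) \<bullet> u2 \<le> 0" using caseA_dir[OF u' gk' XA XB AB'(3)] .
  moreover have "(rep B - rep A) \<bullet> u2 \<le> 0" using caseA_dir[OF u' gk' XB XA] AB'(3) by (simp add: Int_commute)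
  ultimately have z: "(rep A - rep B) \<bullet> u1 = 0" "(rep A - rep B) \<bullet> u2 = 0"
    by (simp_all add: inner_diff_left)
  show ?thesis
  proof
    fix k assume k: "k \<in> I"
    have "(rep A - rep B) \<bullet> g k = 0" using gk k z by auto
    thus "val (rep A) k = val (rep B) k" using val_diff[of "rep A" k "rep B"] by simp
  qed
qed

lemma caseA_pow:
  assumes u: "independent {u1, u2}" "u1 \<noteq> u2" and gk: "\<forall>k\<in>I. g k = u1 \<or> g k = u2"
    and AB: "(A, B) \<in> Rn ^^ n" and A: "A \<in> tiles"
  shows "B \<subseteq> bx (rep A)"
proof -
  have "B \<in> tiles \<and> (\<forall>k\<in>I. val (rep A) k = val (rep B) k)"
    using AB
  proof (induction n arbitrary: B)
    case 0 thus ?case using A by simp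
  next
    case (Suc n)
    then obtain C where C: "(A, C) \<in> Rn ^^ n" "(C, B) \<in> Rn" by auto
    have "C \<in> tiles \<and> (\<forall>k\<in>I. val (rep A) k = val (rep C) k)" using Suc.IH[OF C(1)] .
    moreover have "\<forall>k\<in>I. val (rep C) k = val (rep B) k" using caseA_nbr[OF u gk C(2)] .
    moreover have "B \<in> tiles" using C(2) Rn_iff by auto
    ultimately show ?case by simp
  qed
  hence "B \<in> tiles" "bx (rep B) = bx (rep A)" using box_val_eq by auto
  thus ?thesis using rep(2) Tl_sub_box by metis
qed

end


lemma scaleR_solve: fixes v w :: "real^3" assumes "(c::real) \<noteq> 0" "c *\<^sub>R v = w" shows "v = (1 / c) *\<^sub>R w"
proof -
  have "(1 / c) *\<^sub>R w = (1 / c) *\<^sub>R (c *\<^sub>R v)" using assms(2) by simp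
  also have "\<dots> = ((1 / c) * c) *\<^sub>R v" by (rule scaleR_scaleR)
  also have "\<dots> = v" using assms(1) by simp
  finally show ?thesis by simp
qed

lemma perp_cross:
  fixes a b v :: "real^3"
  assumes h: "a \<times> b \<noteq> 0" and va: "v \<bullet> a = 0" and vb: "v \<bullet> b = 0"
  shows "v = ((v \<bullet> (a \<times> b)) / ((a \<times> b) \<bullet> (a \<times> b))) *\<^sub>R (a \<times> b)"
proof -
  let ?h = "a \<times> b"
  have "v \<times> ?h = 0" using Lagrange[of v a b] va vb by simp
  hence "?h \<times> (v \<times> ?h) = 0" by simp
  hence "(?h \<bullet> ?h) *\<^sub>R v = (?h \<bullet> v) *\<^sub>R ?h" using Lagrange[of ?h v ?h] by simp
  moreover have "?h \<bullet> ?h \<noteq> 0" using h by simp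
  ultimately have "v = (1 / (?h \<bullet> ?h)) *\<^sub>R ((?h \<bullet> v) *\<^sub>R ?h)" by (rule scaleR_solve[rotated])
  thus ?thesis by (simp add: inner_commute)
qed

lemma solve3:
  fixes a b c :: "real^3" and \<alpha> \<beta> \<delta> :: real
  assumes D: "(a \<times> b) \<bullet> c \<noteq> 0"
  defines "x \<equiv> (1 / ((a \<times> b) \<bullet> c)) *\<^sub>R (\<alpha> *\<^sub>R (b \<times> c) + \<beta> *\<^sub>R (c \<times> a) + \<delta> *\<^sub>R (a \<times> b))"
  shows "x \<bullet> a = \<alpha>" "x \<bullet> b = \<beta>" "x \<bullet> c = \<delta>"
proof -
  have t1: "(b \<times> c) \<bullet> a = (a \<times> b) \<bullet> c" using cross_triple[of a b c] by simp
  have t2: "(c \<times> a) \<bullet> b = (a \<times> b) \<bullet> c" using cross_triple[of c a b] by simp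
  have z: "(b \<times> c) \<bullet> b = 0" "(b \<times> c) \<bullet> c = 0" "(c \<times> a) \<bullet> a = 0" "(c \<times> a) \<bullet> c = 0"
          "(a \<times> b) \<bullet> a = 0" "(a \<times> b) \<bullet> b = 0"
    by (simp_all add: dot_cross_self)
  show "x \<bullet> a = \<alpha>" "x \<bullet> b = \<beta>" "x \<bullet> c = \<delta>"
    using D t1 t2 z by (simp_all add: x_def inner_add_left)
qed

lemma solve3_norm:
  fixes a b c :: "real^3"
  assumes "norm a = 1" "norm b = 1" "norm c = 1"
  shows "norm ((1 / ((a \<times> b) \<bullet> c)) *\<^sub>R (\<alpha> *\<^sub>R (b \<times> c) + \<beta> *\<^sub>R (c \<times> a) + \<delta> *\<^sub>R (a \<times> b)))
         \<le> (\<bar>\<alpha>\<bar> + \<bar>\<beta>\<bar> + \<bar>\<delta>\<bar>) / \<bar>(a \<times> b) \<bullet> c\<bar>"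
proof -
  have n: "norm (b \<times> c) \<le> 1" "norm (c \<times> a) \<le> 1" "norm (a \<times> b) \<le> 1"
    using cross_norm_le[of b c] cross_norm_le[of c a] cross_norm_le[of a b] assms by simp_all
  have "norm (\<alpha> *\<^sub>R (b \<times> c) + \<beta> *\<^sub>R (c \<times> a) + \<delta> *\<^sub>R (a \<times> b)) \<le> \<bar>\<alpha>\<bar> + \<bar>\<beta>\<bar> + \<bar>\<delta>\<bar>"
  proof -
    have "norm (\<alpha> *\<^sub>R (b \<times> c) + \<beta> *\<^sub>R (c \<times> a) + \<delta> *\<^sub>R (a \<times> b))
        \<le> norm (\<alpha> *\<^sub>R (b \<times> c)) + norm (\<beta> *\<^sub>R (c \<times> a)) + norm (\<delta> *\<^sub>R (a \<times> b))"
      by (meson norm_triangle_ineq order_trans add_right_mono)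
    also have "\<dots> \<le> \<bar>\<alpha>\<bar> + \<bar>\<beta>\<bar> + \<bar>\<delta>\<bar>"
      using n by (intro add_mono) (auto intro: mult_left_le)
    finally show ?thesis .
  qed
  thus ?thesis by (simp add: divide_right_mono)
qed

lemma uniq3:
  fixes a b c v :: "real^3"
  assumes "(a \<times> b) \<bullet> c \<noteq> 0" "v \<bullet> a = 0" "v \<bullet> b = 0" "v \<bullet> c = 0"
  shows "v = 0"
  using triple_ident[of a b c v] assms by simp

lemma norm_le_triple:
  fixes a b c v :: "real^3"
  assumes "(a \<times> b) \<bullet> c \<noteq> 0" "norm a = 1" "norm b = 1" "norm c = 1"
  shows "norm v \<le> (\<bar>v \<bullet> a\<bar> + \<bar>v \<bullet> b\<bar> + \<bar>v \<bullet> c\<bar>) / \<bar>(a \<times> b) \<bullet> c\<bar>"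
proof -
  have "v = (1 / ((a \<times> b) \<bullet> c)) *\<^sub>R ((v \<bullet> a) *\<^sub>R (b \<times> c) + (v \<bullet> b) *\<^sub>R (c \<times> a) + (v \<bullet> c) *\<^sub>R (a \<times> b))"
    using scaleR_solve[OF assms(1) triple_ident[of a b c v]] .
  thus ?thesis using solve3_norm[OF assms(2-4)] by metis
qed

context gridloc begin

lemma indep3:
  assumes "i \<in> I" "j \<in> I" "k \<in> I" "i \<noteq> j" "i \<noteq> k" "j \<noteq> k"
  shows "independent {g i, g j, g k}"
  using mp[OF bspec[OF bspec[OF bspec[OF indep assms(1)] assms(2)] assms(3)]] assms(4-6) by blast

lemma neg_ne:
  assumes "i \<in> I" "j \<in> I" "i \<noteq> j"
  shows "g j \<noteq> - g i"
proof
  assume e: "g j = - g i"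
  obtain k where k: "k \<in> I" "k \<noteq> i" "k \<noteq> j"
  proof -
    have "card (I - {i, j}) \<ge> 1" using N3 assms by (simp add: card_Diff_subset)
    then obtain k where "k \<in> I - {i, j}" by (metis card.empty ex_in_conv not_one_le_zero)
    thus ?thesis using that by blast
  qed
  have ind: "independent {g i, g j, g k}" using indep3 assms k by blast
  have gi: "g i \<noteq> 0" using g_nz assms by blast
  have "g j \<in> span ({g i, g j, g k} - {g j})"
  proof -
    have ne: "g i \<noteq> g j"
    proof
      assume "g i = g j"
      hence "g i + g i = 0" using e by (metis add.right_inverse)
      hence "(2::real) *\<^sub>R g i = 0" by (simp add: scaleR_2)
      thus False using gi by simp
    qed
    have "g i \<in> {g i, g j, g k} - {g j}" using ne by auto
    hence "g i \<in> span ({g i, g j, g k} - {g j})" by (rule span_base)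
    thus ?thesis using e span_neg by fastforce
  qed
  hence "dependent {g i, g j, g k}" unfolding dependent_def by blast
  thus False using ind by simp
qed

lemma h_nz:
  assumes "i \<in> I" "j \<in> I" "i \<noteq> j" "g i \<noteq> g j"
  shows "g i \<times> g j \<noteq> 0"
proof
  assume h0: "g i \<times> g j = 0"
  have u: "norm (g i) = 1" "norm (g j) = 1" using g_unit assms by auto
  have "(g i \<bullet> g j)\<^sup>2 = 1" using norm_cross_dot[of "g i" "g j"] h0 u by simp
  hence "g i \<bullet> g j = 1 \<or> g i \<bullet> g j = -1" by (simp add: power2_eq_1_iff)
  moreover have "g i \<bullet> g i = 1" "g j \<bullet> g j = 1" using u by (simp_all add: dot_square_norm)
  moreover have "(norm (g i - g j))\<^sup>2 = 2 - 2 * (g i \<bullet> g j)" "(norm (g i + g j))\<^sup>2 = 2 + 2 * (g i \<bullet> g j)"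
    using \<open>g i \<bullet> g i = 1\<close> \<open>g j \<bullet> g j = 1\<close>
    by (simp_all add: power2_norm_eq_inner inner_diff_left inner_diff_right inner_add_left inner_add_right inner_commute)
  ultimately have "(norm (g i - g j))\<^sup>2 = 0 \<or> (norm (g i + g j))\<^sup>2 = 0" by auto
  hence "g i = g j \<or> g i + g j = 0" by simp
  thus False
  proof (elim disjE)
    assume "g i = g j" thus False using assms(4) by simp
  next
    assume "g i + g j = 0" hence "g j = - g i" by (metis add.commute eq_neg_iff_add_eq_0)
    thus False using neg_ne assms(1-3) by blast
  qed
qed

lemma triple_idx:
  assumes "i \<in> I" "j \<in> I" "k \<in> I" "i \<noteq> j" "i \<noteq> k" "j \<noteq> k"
    and "g i \<noteq> g j" "g i \<noteq> g k" "g j \<noteq> g k"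
  shows "(g i \<times> g j) \<bullet> g k \<noteq> 0"
  using triple_nz[of "g i" "g j" "g k"] indep3[of i j k] assms by blast

definition Gm :: "real^3 \<Rightarrow> real^3" where "Gm v = (\<Sum>k\<in>I. (v \<bullet> g k) *\<^sub>R g k)"

lemma linear_Gm: "linear Gm"
  unfolding Gm_def linear_iff
  by (simp add: inner_add_left scaleR_add_left sum.distrib scaleR_sum_right)

lemma Gm_scale: "Gm (c *\<^sub>R v) = c *\<^sub>R Gm v"
  using linear_Gm by (simp add: linear_scale)

lemma norm_Gm: "norm (Gm v) \<le> nu v"
  unfolding Gm_def nu_def
  by (rule order_trans[OF norm_sum]) (auto intro: sum_mono simp: g_unit)

lemma nu_nonneg: "0 \<le> nu v" by (simp add: nu_def sum_nonneg)
lemma nu_scale: "nu (c *\<^sub>R v) = \<bar>c\<bar> * nu v" by (simp add: nu_def abs_mult sum_distrib_left)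
lemma nu_neg: "nu (- v) = nu v" by (simp add: nu_def)
lemma nu_add: "nu (v + w) \<le> nu v + nu w"
  unfolding nu_def by (simp add: sum.distrib[symmetric] inner_add_left sum_mono abs_triangle_ineq)
lemma nu_diff: "nu (v - w) \<le> nu v + nu w"
  using nu_add[of v "- w"] nu_neg[of w] by simp
lemma nu_le_norm: "nu v \<le> real N * norm v"
proof -
  have "nu v \<le> (\<Sum>k\<in>I. norm v)"
    unfolding nu_def by (rule sum_mono) (metis Cauchy_Schwarz_ineq2 g_unit mult.right_neutral)
  thus ?thesis by simp
qed
lemma nu_convex: "convex {v. nu v \<le> 1}"
proof (rule convexI)
  fix x y and u v :: real assume "x \<in> {v. nu v \<le> 1}" "y \<in> {v. nu v \<le> 1}" "0 \<le> u" "0 \<le> v" "u + v = 1"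
  thus "u *\<^sub>R x + v *\<^sub>R y \<in> {v. nu v \<le> 1}"
    using nu_add[of "u *\<^sub>R x" "v *\<^sub>R y"] nu_scale[of u x] nu_scale[of v y]
    by simp (smt (verit) mult_left_le)
qed

lemma continuous_nu: "continuous_on UNIV nu"
  unfolding nu_def by (intro continuous_intros)

definition Wset :: "(real^3) set" where
  "Wset = {s *\<^sub>R ((1 / nu (g i \<times> g j)) *\<^sub>R (g i \<times> g j)) | s i j. s \<in> {1, -1} \<and> 1 \<le> i \<and> i < j \<and> j \<le> N}"

lemma finite_Wset: "finite Wset"
proof -
  have "Wset \<subseteq> (\<lambda>(s, i, j). s *\<^sub>R ((1 / nu (g i \<times> g j)) *\<^sub>R (g i \<times> g j))) ` (Sigma {1, -1} (\<lambda>_. Sigma I (\<lambda>_. I)))"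
    unfolding Wset_def by force
  thus ?thesis by (rule finite_subset) auto
qed

lemma Wset_nu: assumes "w \<in> Wset" shows "nu w \<le> 1"
proof -
  obtain s i j where w: "w = s *\<^sub>R ((1 / nu (g i \<times> g j)) *\<^sub>R (g i \<times> g j))" "s \<in> {1, -1}"
    using assms unfolding Wset_def by blast
  have "nu w = \<bar>s\<bar> * (\<bar>1 / nu (g i \<times> g j)\<bar> * nu (g i \<times> g j))" using w(1) by (simp add: nu_scale)
  also have "\<bar>s\<bar> = 1" using w(2) by auto
  also have "\<bar>1 / nu (g i \<times> g j)\<bar> * nu (g i \<times> g j) \<le> 1"
    using nu_nonneg[of "g i \<times> g j"] by (cases "nu (g i \<times> g j) = 0") auto
  finally show ?thesis by simp
qed

lemma Wset_neg: assumes "w \<in> Wset" shows "- w \<in> Wset"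
proof -
  obtain s i j where w: "w = s *\<^sub>R ((1 / nu (g i \<times> g j)) *\<^sub>R (g i \<times> g j))" "s \<in> {1, -1}" "1 \<le> i" "i < j" "j \<le> N"
    using assms unfolding Wset_def by blast
  have "- w = (- s) *\<^sub>R ((1 / nu (g i \<times> g j)) *\<^sub>R (g i \<times> g j))" using w(1) by simp
  moreover have "- s \<in> {1, -1}" using w(2) by auto
  ultimately show ?thesis unfolding Wset_def using w(3-5) by blast
qed

lemma hull_W_sub: "convex hull Wset \<subseteq> {v. nu v \<le> 1}"
  by (rule hull_minimal) (auto simp: Wset_nu nu_convex)

end


context gridloc begin

lemma vertex_ident:
  assumes ij: "1 \<le> i" "i < j" "j \<le> N"
  shows "(1 / Delta2 g N i j) *\<^sub>R upsilon2 g N i j = Gm ((1 / nu (g i \<times> g j)) *\<^sub>R (g i \<times> g j))"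
proof -
  let ?h = "g i \<times> g j"
  have hij: "?h \<bullet> g i = 0" "?h \<bullet> g j = 0" by (simp_all add: dot_cross_self)
  have ijI: "{i, j} \<subseteq> I" using ij by auto
  have inv: "1 / delta3 g i j k = \<bar>?h \<bullet> g k\<bar> / norm ?h" for k
    by (simp add: delta3_def hvec_def)
  have D: "Ddet g i j k = ?h \<bullet> g k" for k by (simp add: Ddet_def det_cross)
  have e: "eps3 g i j k / delta3 g i j k = (?h \<bullet> g k) / norm ?h" for k
  proof -
    have "eps3 g i j k / delta3 g i j k = eps3 g i j k * (\<bar>?h \<bullet> g k\<bar> / norm ?h)"
      using inv[of k] by (simp add: divide_inverse)
    also have "eps3 g i j k * \<bar>?h \<bullet> g k\<bar> = ?h \<bullet> g k"
      by (simp add: eps3_def D)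
    ultimately show ?thesis by simp
  qed
  have sI: "(\<Sum>k\<in>I - {i, j}. f k) = (\<Sum>k\<in>I. f k)" if "f i = 0" "f j = 0" for f :: "nat \<Rightarrow> 'b::comm_monoid_add"
  proof -
    have "(\<Sum>k\<in>I. f k) = (\<Sum>k\<in>I - {i, j}. f k) + (\<Sum>k\<in>{i, j}. f k)"
      using ijI by (simp add: sum.subset_diff)
    thus ?thesis using that by (cases "i = j") auto
  qed
  have Dl: "Delta2 g N i j = nu ?h / norm ?h"
  proof -
    have "Delta2 g N i j = (\<Sum>k\<in>I - {i, j}. \<bar>?h \<bullet> g k\<bar> / norm ?h)" by (simp add: Delta2_def inv)
    also have "\<dots> = (\<Sum>k\<in>I. \<bar>?h \<bullet> g k\<bar> / norm ?h)" using hij by (intro sI) auto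
    finally show ?thesis by (simp add: nu_def sum_divide_distrib)
  qed
  have Up: "upsilon2 g N i j = (1 / norm ?h) *\<^sub>R Gm ?h"
  proof -
    have "upsilon2 g N i j = (\<Sum>k\<in>I - {i, j}. ((?h \<bullet> g k) / norm ?h) *\<^sub>R g k)" by (simp add: upsilon2_def e)
    also have "\<dots> = (\<Sum>k\<in>I. ((?h \<bullet> g k) / norm ?h) *\<^sub>R g k)" using hij by (intro sI) auto
    finally show ?thesis by (simp add: Gm_def scaleR_sum_right)
  qed
  show ?thesis
  proof (cases "?h = 0")
    case True thus ?thesis by (simp add: Dl Up linear_0[OF linear_Gm])
  next
    case False
    hence hn: "norm ?h \<noteq> 0" by simp
    have c: "(1 / (nu ?h / norm ?h)) * (1 / norm ?h) = 1 / nu ?h"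
      using hn by (cases "nu ?h = 0") (simp_all add: field_simps)
    have "(1 / Delta2 g N i j) *\<^sub>R upsilon2 g N i j = ((1 / (nu ?h / norm ?h)) * (1 / norm ?h)) *\<^sub>R Gm ?h"
      unfolding Dl Up by (simp only: scaleR_scaleR)
    also have "\<dots> = (1 / nu ?h) *\<^sub>R Gm ?h" by (simp only: c)
    also have "\<dots> = Gm ((1 / nu ?h) *\<^sub>R ?h)" by (simp only: Gm_scale)
    finally show ?thesis .
  qed
qed

lemma growth_vertices_eq: "growth_vertices g N = Gm ` Wset"
proof (rule set_eqI, rule iffI)
  fix x assume "x \<in> growth_vertices g N"
  then obtain s i j where sij: "x = s *\<^sub>R ((1 / Delta2 g N i j) *\<^sub>R upsilon2 g N i j)" "s \<in> {1, -1}" "1 \<le> i" "i < j" "j \<le> N"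
    unfolding growth_vertices_def by blast
  have "x = s *\<^sub>R Gm ((1 / nu (g i \<times> g j)) *\<^sub>R (g i \<times> g j))" using sij(1) vertex_ident[OF sij(3-5)] by simp
  hence "x = Gm (s *\<^sub>R ((1 / nu (g i \<times> g j)) *\<^sub>R (g i \<times> g j)))" by (simp only: Gm_scale)
  moreover have "s *\<^sub>R ((1 / nu (g i \<times> g j)) *\<^sub>R (g i \<times> g j)) \<in> Wset" unfolding Wset_def using sij by blast
  ultimately show "x \<in> Gm ` Wset" by blast
next
  fix x assume "x \<in> Gm ` Wset"
  then obtain s i j where sij: "x = Gm (s *\<^sub>R ((1 / nu (g i \<times> g j)) *\<^sub>R (g i \<times> g j)))" "s \<in> {1, -1}" "1 \<le> i" "i < j" "j \<le> N"
    unfolding Wset_def by blast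
  have "x = s *\<^sub>R Gm ((1 / nu (g i \<times> g j)) *\<^sub>R (g i \<times> g j))" using sij(1) by (simp only: Gm_scale)
  hence "x = s *\<^sub>R ((1 / Delta2 g N i j) *\<^sub>R upsilon2 g N i j)" using vertex_ident[OF sij(3-5)] by simp
  thus "x \<in> growth_vertices g N" unfolding growth_vertices_def using sij by blast
qed

end

locale gridB = gridloc +
  assumes three: "\<exists>a\<in>{1..N}. \<exists>b\<in>{1..N}. \<exists>c\<in>{1..N}. g a \<noteq> g b \<and> g a \<noteq> g c \<and> g b \<noteq> g c"
begin

lemma three_obt:
  obtains a b c where "a \<in> I" "b \<in> I" "c \<in> I" "g a \<noteq> g b" "g a \<noteq> g c" "g b \<noteq> g c"
  using three by blast

lemma other_two:
  assumes "i \<in> I"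
  obtains c d where "c \<in> I" "d \<in> I" "g c \<noteq> g i" "g d \<noteq> g i" "g c \<noteq> g d"
proof -
  obtain a b c where abc: "a \<in> I" "b \<in> I" "c \<in> I" "g a \<noteq> g b" "g a \<noteq> g c" "g b \<noteq> g c"
    by (rule three_obt)
  show ?thesis
  proof (cases "g i = g a")
    case True thus ?thesis using that[of b c] abc by metis
  next
    case False
    show ?thesis
    proof (cases "g i = g b")
      case True thus ?thesis using that[of a c] abc by metis
    next
      case False2: False
      thus ?thesis using that[of a b] abc False by metis
    qed
  qed
qed

lemma noncoinc:
  assumes ij: "i \<in> I" "j \<in> I" "i \<noteq> j" "g i = g j"
  shows "\<gamma> i - \<gamma> j \<notin> \<int>"
proof
  assume int: "\<gamma> i - \<gamma> j \<in> \<int>"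
  obtain c d where cd: "c \<in> I" "d \<in> I" "g c \<noteq> g i" "g d \<noteq> g i" "g c \<noteq> g d"
    using other_two[OF ij(1)] by blast
  have ne: "i \<noteq> c" "i \<noteq> d" "c \<noteq> d" "j \<noteq> c" "j \<noteq> d" using cd ij by auto
  have D: "(g i \<times> g c) \<bullet> g d \<noteq> 0"
    using triple_idx[of i c d] ij cd ne by metis
  define x where "x = (1 / ((g i \<times> g c) \<bullet> g d)) *\<^sub>R (\<gamma> i *\<^sub>R (g c \<times> g d) + \<gamma> c *\<^sub>R (g d \<times> g i) + \<gamma> d *\<^sub>R (g i \<times> g c))"
  have xs: "x \<bullet> g i = \<gamma> i" "x \<bullet> g c = \<gamma> c" "x \<bullet> g d = \<gamma> d"
    using solve3[OF D, of "\<gamma> i" "\<gamma> c" "\<gamma> d"] by (simp_all add: x_def)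
  have "{i, j, c, d} \<subseteq> S x"
    using xs int ij cd by (auto simp: S_def' val_def)
  hence "card {i, j, c, d} \<le> card (S x)" by (intro card_mono) auto
  moreover have "card {i, j, c, d} = 4" using ne ij by auto
  ultimately show False using card_S_le[of x] by simp
qed

lemma S_g_distinct:
  assumes "i \<in> S p" "j \<in> S p" "i \<noteq> j"
  shows "g i \<noteq> g j"
proof
  assume e: "g i = g j"
  have ij: "i \<in> I" "j \<in> I" using assms S_sub[of p] by auto
  have "val p j - val p i \<in> \<int>" using assms by (auto simp: S_def')
  moreover have "val p j - val p i = \<gamma> i - \<gamma> j" using e by (simp add: val_def)
  ultimately show False using noncoinc[OF ij assms(3) e] by simp
qed

lemma vtx_obt:
  assumes "vtx p"
  obtains a b c where "S p = {a, b, c}" "a \<noteq> b" "a \<noteq> c" "b \<noteq> c" "a \<in> I" "b \<in> I" "c \<in> I"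
    "g a \<noteq> g b" "g a \<noteq> g c" "g b \<noteq> g c" "(g a \<times> g b) \<bullet> g c \<noteq> 0"
proof -
  obtain a b c where abc: "S p = {a, b, c}" "a \<noteq> b" "b \<noteq> c" "a \<noteq> c"
    using vtx_card[OF assms] by (auto simp: card_3_iff)
  have I: "a \<in> I" "b \<in> I" "c \<in> I" using abc S_sub[of p] by auto
  have g: "g a \<noteq> g b" "g a \<noteq> g c" "g b \<noteq> g c" using S_g_distinct abc by auto
  have "(g a \<times> g b) \<bullet> g c \<noteq> 0" using triple_idx[of a b c] I g abc by metis
  thus ?thesis using that abc I g by metis
qed

lemma nu_lower:
  obtains c0 where "c0 > 0" "\<And>v. c0 * norm v \<le> nu v"
proof -
  obtain a b c where abc: "a \<in> I" "b \<in> I" "c \<in> I" "g a \<noteq> g b" "g a \<noteq> g c" "g b \<noteq> g c"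
    by (rule three_obt)
  have ne: "a \<noteq> b" "a \<noteq> c" "b \<noteq> c" using abc by auto
  have D: "(g a \<times> g b) \<bullet> g c \<noteq> 0" using triple_idx[of a b c] abc ne by metis
  have u: "norm (g a) = 1" "norm (g b) = 1" "norm (g c) = 1" using abc g_unit by auto
  show ?thesis
  proof (rule that[of "\<bar>(g a \<times> g b) \<bullet> g c\<bar>"])
    show "0 < \<bar>(g a \<times> g b) \<bullet> g c\<bar>" using D by simp
  next
    fix v
    have s: "\<bar>v \<bullet> g a\<bar> + \<bar>v \<bullet> g b\<bar> + \<bar>v \<bullet> g c\<bar> \<le> nu v"
    proof -
      have "\<bar>v \<bullet> g a\<bar> + \<bar>v \<bullet> g b\<bar> + \<bar>v \<bullet> g c\<bar> = (\<Sum>k\<in>{a, b, c}. \<bar>v \<bullet> g k\<bar>)"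
        using ne by simp
      also have "\<dots> \<le> nu v" unfolding nu_def using abc by (intro sum_mono2) auto
      finally show ?thesis .
    qed
    have "norm v \<le> (\<bar>v \<bullet> g a\<bar> + \<bar>v \<bullet> g b\<bar> + \<bar>v \<bullet> g c\<bar>) / \<bar>(g a \<times> g b) \<bullet> g c\<bar>"
      by (rule norm_le_triple[OF D u])
    hence "\<bar>(g a \<times> g b) \<bullet> g c\<bar> * norm v \<le> \<bar>v \<bullet> g a\<bar> + \<bar>v \<bullet> g b\<bar> + \<bar>v \<bullet> g c\<bar>"
      using D by (simp add: field_simps)
    thus "\<bar>(g a \<times> g b) \<bullet> g c\<bar> * norm v \<le> nu v" using s by linarith
  qed
qed

lemma nu_pos: "v \<noteq> 0 \<Longrightarrow> 0 < nu v"
proof -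
  assume "v \<noteq> 0"
  obtain c0 where c0: "c0 > 0" "\<And>w. c0 * norm w \<le> nu w" using nu_lower by blast
  have "0 < c0 * norm v" using c0(1) \<open>v \<noteq> 0\<close> by simp
  thus "0 < nu v" using c0(2)[of v] by linarith
qed


lemma sign_abs: "(s::real) = 1 \<or> s = -1 \<Longrightarrow> 0 \<le> s * a \<Longrightarrow> s * a = \<bar>a\<bar>"
  by auto

lemma W_member:
  assumes "i \<in> I" "j \<in> I" "i \<noteq> j" "s \<in> {1, -1}"
  shows "s *\<^sub>R ((1 / nu (g i \<times> g j)) *\<^sub>R (g i \<times> g j)) \<in> Wset"
proof (cases "i < j")
  case True thus ?thesis unfolding Wset_def using assms by auto
next
  case False
  hence ji: "j < i" using assms(3) by simp
  have "g i \<times> g j = - (g j \<times> g i)" by (rule cross_skew)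
  hence e: "s *\<^sub>R ((1 / nu (g i \<times> g j)) *\<^sub>R (g i \<times> g j)) = (- s) *\<^sub>R ((1 / nu (g j \<times> g i)) *\<^sub>R (g j \<times> g i))"
    by (simp add: nu_neg)
  have "- s \<in> {1, -1}" using assms(4) by auto
  have "(- s) *\<^sub>R ((1 / nu (g j \<times> g i)) *\<^sub>R (g j \<times> g i)) \<in> Wset"
    unfolding Wset_def mem_Collect_eq
    by (intro exI[of _ "-s"] exI[of _ j] exI[of _ i] conjI) (use \<open>- s \<in> {1, -1}\<close> assms ji in auto)
  thus ?thesis unfolding e .
qed

lemma ext_in_W:
  fixes s :: "nat \<Rightarrow> real"
  assumes s: "\<forall>k\<in>I. s k = 1 \<or> s k = -1"
    and e: "e extreme_point_of {x. (\<forall>k\<in>I. 0 \<le> s k * (x \<bullet> g k)) \<and> (\<Sum>k\<in>I. s k * (x \<bullet> g k)) = 1}"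
  shows "e \<in> Wset"
proof -
  let ?Q = "{x. (\<forall>k\<in>I. 0 \<le> s k * (x \<bullet> g k)) \<and> (\<Sum>k\<in>I. s k * (x \<bullet> g k)) = 1}"
  have eQ: "e \<in> ?Q" using e by (simp add: extreme_point_of_def)
  have abs_eq: "s k * (x \<bullet> g k) = \<bar>x \<bullet> g k\<bar>" if "k \<in> I" "0 \<le> s k * (x \<bullet> g k)" for k x
    using s that sign_abs by blast
  have nue: "nu e = 1"
  proof -
    have "nu e = (\<Sum>k\<in>I. s k * (e \<bullet> g k))" unfolding nu_def
    proof (rule sum.cong)
      fix k assume k: "k \<in> I"
      have "0 \<le> s k * (e \<bullet> g k)" using eQ k by auto
      thus "\<bar>e \<bullet> g k\<bar> = s k * (e \<bullet> g k)" using abs_eq[OF k] by simp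
    qed simp
    thus ?thesis using eQ by simp
  qed
  let ?A = "{k\<in>I. e \<bullet> g k = 0}"
  show ?thesis
  proof (cases "\<exists>i\<in>?A. \<exists>j\<in>?A. g i \<noteq> g j")
    case True
    then obtain i j where ij: "i \<in> ?A" "j \<in> ?A" "g i \<noteq> g j" by blast
    have ij': "i \<in> I" "j \<in> I" "i \<noteq> j" using ij by auto
    let ?h = "g i \<times> g j"
    have hnz: "?h \<noteq> 0" using h_nz ij' ij(3) by blast
    define l where "l = (e \<bullet> ?h) / (?h \<bullet> ?h)"
    have el: "e = l *\<^sub>R ?h" using perp_cross[OF hnz, of e] ij by (simp add: l_def)
    have "\<bar>l\<bar> * nu ?h = 1" using nue el by (simp add: nu_scale)
    hence nh0: "nu ?h \<noteq> 0" by auto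
    have nh: "\<bar>l\<bar> = 1 / nu ?h" using \<open>\<bar>l\<bar> * nu ?h = 1\<close> nh0 by (simp add: eq_divide_eq)
    have "l = 1 / nu ?h \<or> l = - (1 / nu ?h)" using nh by (metis abs_if minus_minus)
    hence "e = 1 *\<^sub>R ((1 / nu ?h) *\<^sub>R ?h) \<or> e = (-1) *\<^sub>R ((1 / nu ?h) *\<^sub>R ?h)" using el by auto
    moreover have w1: "1 *\<^sub>R ((1 / nu ?h) *\<^sub>R ?h) \<in> Wset" by (rule W_member[OF ij']) simp
    moreover have w2: "(-1) *\<^sub>R ((1 / nu ?h) *\<^sub>R ?h) \<in> Wset" by (rule W_member[OF ij']) simp
    ultimately show ?thesis by metis
  next
    case False
    hence same: "\<forall>i\<in>?A. \<forall>j\<in>?A. g i = g j" by blast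
    let ?\<sigma> = "\<Sum>k\<in>I. s k *\<^sub>R g k"
    let ?G = "insert ?\<sigma> (g ` ?A)"
    have cA: "card (g ` ?A) \<le> 1"
      using same by (auto simp: card_le_Suc0_iff_eq)
    have "dim ?G \<le> card ?G" by (rule dim_le_card) (auto intro: span_base)
    also have "card ?G \<le> Suc (card (g ` ?A))" by (simp add: card_insert_le_m1 card_insert_if)
    finally have dimG: "dim ?G < DIM(real^3)" using cA by simp
    obtain d where d: "d \<noteq> 0" "\<And>y. y \<in> span ?G \<Longrightarrow> orthogonal d y"
      using orthogonal_to_subspace_exists[OF dimG] by blast
    have dA: "d \<bullet> g k = 0" if "k \<in> ?A" for k
      using d(2)[of "g k"] that by (auto simp: orthogonal_def intro: span_base)
    have ds: "(\<Sum>k\<in>I. s k * (d \<bullet> g k)) = 0"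
    proof -
      have "d \<bullet> ?\<sigma> = 0" using d(2)[of ?\<sigma>] by (auto simp: orthogonal_def intro: span_base)
      thus ?thesis by (simp add: inner_sum_right)
    qed
    have pos: "\<forall>k\<in>I - ?A. 0 < s k * (e \<bullet> g k)"
    proof
      fix k assume k: "k \<in> I - ?A"
      have a: "0 \<le> s k * (e \<bullet> g k)" using eQ k by auto
      have "s k \<noteq> 0" using k s by force
      moreover have "e \<bullet> g k \<noteq> 0" using k by auto
      ultimately have "s k * (e \<bullet> g k) \<noteq> 0" by simp
      thus "0 < s k * (e \<bullet> g k)" using a by linarith
    qed
    obtain \<epsilon> where \<epsilon>: "\<epsilon> > 0" "\<forall>k\<in>I - ?A. \<epsilon> \<le> (s k * (e \<bullet> g k)) / (\<bar>d \<bullet> g k\<bar> + 1)"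
      using finite_eps[of "I - ?A" "\<lambda>k. (s k * (e \<bullet> g k)) / (\<bar>d \<bullet> g k\<bar> + 1)"] pos
      by (auto intro: divide_pos_pos)
    have inQ: "e + c *\<^sub>R d \<in> ?Q" if c: "\<bar>c\<bar> \<le> \<epsilon>" for c
    proof -
      have "\<forall>k\<in>I. 0 \<le> s k * ((e + c *\<^sub>R d) \<bullet> g k)"
      proof
        fix k assume k: "k \<in> I"
        have sk: "\<bar>s k\<bar> = 1" using s k by force
        have ex: "s k * ((e + c *\<^sub>R d) \<bullet> g k) = s k * (e \<bullet> g k) + c * (s k * (d \<bullet> g k))"
          by (simp add: inner_add_left algebra_simps)
        show "0 \<le> s k * ((e + c *\<^sub>R d) \<bullet> g k)"
        proof (cases "k \<in> ?A")
          case True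
          have "e \<bullet> g k = 0" "d \<bullet> g k = 0" using True dA by auto
          thus ?thesis by (simp add: inner_add_left)
        next
          case False
          hence kA: "k \<in> I - ?A" using k by simp
          have "\<bar>c * (s k * (d \<bullet> g k))\<bar> \<le> \<epsilon> * \<bar>d \<bullet> g k\<bar>"
            using c sk by (simp add: abs_mult mult_right_mono)
          also have "\<dots> \<le> ((s k * (e \<bullet> g k)) / (\<bar>d \<bullet> g k\<bar> + 1)) * \<bar>d \<bullet> g k\<bar>"
            using \<epsilon>(2) kA by (intro mult_right_mono) auto
          also have "\<dots> \<le> s k * (e \<bullet> g k)"
          proof -
            have "0 < s k * (e \<bullet> g k)" using pos kA by blast
            thus ?thesis by (simp add: field_simps)
          qed
          finally show ?thesis using ex by linarith
        qed
      qed
      moreover have "(\<Sum>k\<in>I. s k * ((e + c *\<^sub>R d) \<bullet> g k)) = 1"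
      proof -
        have "(\<Sum>k\<in>I. s k * ((e + c *\<^sub>R d) \<bullet> g k)) = (\<Sum>k\<in>I. s k * (e \<bullet> g k)) + c * (\<Sum>k\<in>I. s k * (d \<bullet> g k))"
          by (simp add: inner_add_left algebra_simps sum.distrib sum_distrib_left)
        thus ?thesis using eQ ds by simp
      qed
      ultimately show ?thesis by simp
    qed
    have e1: "e + \<epsilon> *\<^sub>R d \<in> ?Q" by (rule inQ) (use \<epsilon>(1) in simp)
    have e2: "e + (- \<epsilon>) *\<^sub>R d \<in> ?Q" by (rule inQ) (use \<epsilon>(1) in simp)
    have mid: "e = midpoint (e + (- \<epsilon>) *\<^sub>R d) (e + \<epsilon> *\<^sub>R d)"
      by (simp add: midpoint_def algebra_simps scaleR_2[symmetric])
    have neq: "e + (- \<epsilon>) *\<^sub>R d \<noteq> e + \<epsilon> *\<^sub>R d"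
    proof
      assume "e + (- \<epsilon>) *\<^sub>R d = e + \<epsilon> *\<^sub>R d"
      hence e0: "(- \<epsilon>) *\<^sub>R d = \<epsilon> *\<^sub>R d" by simp
      have "(- \<epsilon> - \<epsilon>) *\<^sub>R d = (- \<epsilon>) *\<^sub>R d - \<epsilon> *\<^sub>R d" by (rule scaleR_left_diff_distrib)
      also have "\<dots> = 0" using e0 by simp
      finally have "(- \<epsilon> - \<epsilon>) *\<^sub>R d = 0" .
      hence "- \<epsilon> - \<epsilon> = 0 \<or> d = 0" by (simp only: scaleR_eq_0_iff)
      thus False using \<epsilon>(1) d(1) by auto
    qed
    have "e \<in> open_segment (e + (- \<epsilon>) *\<^sub>R d) (e + \<epsilon> *\<^sub>R d)"
      using neq by (subst mid) simp
    thus ?thesis using e e1 e2 by (auto simp: extreme_point_of_def)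
  qed
qed

lemma sphere_in_hull:
  assumes v: "nu v = 1"
  shows "v \<in> convex hull Wset"
proof -
  define s where "s k = (if 0 \<le> v \<bullet> g k then 1 else (-1::real))" for k
  let ?Q = "{x. (\<forall>k\<in>I. 0 \<le> s k * (x \<bullet> g k)) \<and> (\<Sum>k\<in>I. s k * (x \<bullet> g k)) = 1}"
  have s1: "\<forall>k\<in>I. s k = 1 \<or> s k = -1" by (simp add: s_def)
  have vQ: "v \<in> ?Q"
  proof -
    have a: "s k * (v \<bullet> g k) = \<bar>v \<bullet> g k\<bar>" for k by (simp add: s_def)
    show ?thesis using v by (simp add: a nu_def)
  qed
  have Qeq: "?Q = (\<Inter>k\<in>I. {x. 0 \<le> s k * (x \<bullet> g k)}) \<inter> {x. (\<Sum>k\<in>I. s k * (x \<bullet> g k)) = 1}"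
    by auto
  have closedQ: "closed ?Q"
    unfolding Qeq
    by (intro closed_Int closed_INT ballI closed_Collect_le closed_Collect_eq continuous_intros)
  obtain c0 where c0: "c0 > 0" "\<And>w. c0 * norm w \<le> nu w" using nu_lower by blast
  have nuQ: "nu x = 1" if "x \<in> ?Q" for x
  proof -
    have "nu x = (\<Sum>k\<in>I. s k * (x \<bullet> g k))"
      unfolding nu_def
    proof (rule sum.cong)
      fix k assume k: "k \<in> I"
      have "0 \<le> s k * (x \<bullet> g k)" using that k by auto
      thus "\<bar>x \<bullet> g k\<bar> = s k * (x \<bullet> g k)" using sign_abs[of "s k" "x \<bullet> g k"] s1 k by auto
    qed simp
    thus ?thesis using that by simp
  qed
  have "bounded ?Q"
    unfolding bounded_iff
  proof (intro exI ballI)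
    fix x assume "x \<in> ?Q"
    hence "c0 * norm x \<le> 1" using c0(2)[of x] nuQ by simp
    thus "norm x \<le> 1 / c0" using c0(1) by (simp add: field_simps)
  qed
  hence compQ: "compact ?Q" using closedQ by (simp add: compact_eq_bounded_closed)
  have convQ: "convex ?Q"
  proof (rule convexI)
    fix x y and a b :: real assume xy: "x \<in> ?Q" "y \<in> ?Q" and ab: "0 \<le> a" "0 \<le> b" "a + b = 1"
    have lin: "s k * ((a *\<^sub>R x + b *\<^sub>R y) \<bullet> g k) = a * (s k * (x \<bullet> g k)) + b * (s k * (y \<bullet> g k))" for k
      by (simp add: inner_add_left algebra_simps)
    have "\<forall>k\<in>I. 0 \<le> s k * ((a *\<^sub>R x + b *\<^sub>R y) \<bullet> g k)"
      using xy ab by (auto simp: lin)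
    moreover have "(\<Sum>k\<in>I. s k * ((a *\<^sub>R x + b *\<^sub>R y) \<bullet> g k)) = 1"
      using xy ab by (simp add: lin sum.distrib sum_distrib_left[symmetric])
    ultimately show "a *\<^sub>R x + b *\<^sub>R y \<in> ?Q" by simp
  qed
  have "v \<in> convex hull {x. x extreme_point_of ?Q}"
    using Krein_Milman_Minkowski[OF compQ convQ] vQ by blast
  also have "\<dots> \<subseteq> convex hull Wset"
    by (rule hull_mono) (auto intro: ext_in_W[OF s1])
  finally show ?thesis .
qed

lemma W_nonempty: "Wset \<noteq> {}"
  using W_member[of 1 2 1] N3 by auto

lemma zero_in_hull: "0 \<in> convex hull Wset"
proof -
  obtain w where w: "w \<in> Wset" using W_nonempty by blast
  have "- w \<in> Wset" using Wset_neg[OF w] .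
  hence "(1/2) *\<^sub>R w + (1/2) *\<^sub>R (- w) \<in> convex hull Wset"
    using w by (intro convexD[OF convex_convex_hull]) (auto intro: hull_inc)
  thus ?thesis by simp
qed

lemma ball_eq_hull: "{v. nu v \<le> 1} = convex hull Wset"
proof
  show "convex hull Wset \<subseteq> {v. nu v \<le> 1}" by (rule hull_W_sub)
next
  show "{v. nu v \<le> 1} \<subseteq> convex hull Wset"
  proof
    fix v assume "v \<in> {v. nu v \<le> 1}"
    hence v: "nu v \<le> 1" by simp
    show "v \<in> convex hull Wset"
    proof (cases "v = 0")
      case True thus ?thesis using zero_in_hull by simp
    next
      case False
      hence p: "0 < nu v" by (rule nu_pos)
      have "nu ((1 / nu v) *\<^sub>R v) = 1" using p by (simp add: nu_scale)
      hence h: "(1 / nu v) *\<^sub>R v \<in> convex hull Wset" by (rule sphere_in_hull)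
      have "nu v *\<^sub>R ((1 / nu v) *\<^sub>R v) + (1 - nu v) *\<^sub>R 0 \<in> convex hull Wset"
        using h zero_in_hull p v by (intro convexD[OF convex_convex_hull]) auto
      thus ?thesis using p by simp
    qed
  qed
qed

end


lemma seg_in_convex:
  assumes "convex C" "x0 \<in> C" "x1 \<in> C" "0 \<le> s" "s \<le> 1" "x1 - x0 = B"
  shows "x0 + s *\<^sub>R B \<in> C"
proof -
  have "(1 - s) *\<^sub>R x0 + s *\<^sub>R x1 \<in> C" using assms by (intro convexD) auto
  moreover have "(1 - s) *\<^sub>R x0 + s *\<^sub>R x1 = x0 + s *\<^sub>R B"
    using assms(6) by (simp add: algebra_simps flip: assms(6))
  ultimately show ?thesis by simp
qed

context gridB begin

lemma corner:
  assumes v: "vtx p" and abc: "S p = {a, b, c}" "a \<noteq> b" "a \<noteq> c" "b \<noteq> c"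
    and D: "(g a \<times> g b) \<bullet> g c \<noteq> 0"
    and e: "ea \<in> {0, 1}" "eb \<in> {0, 1}" "ec \<in> {0, 1}"
  shows "\<exists>x. x \<notin> GS \<and> p \<in> closure (connected_component_set (- GS) x) \<and>
             KK x = KK p + ea *\<^sub>R g a + eb *\<^sub>R g b + ec *\<^sub>R g c"
proof -
  define sg where "sg e = 2 * e - (1::real)" for e
  define d where "d = (1 / ((g a \<times> g b) \<bullet> g c)) *\<^sub>R (sg ea *\<^sub>R (g b \<times> g c) + sg eb *\<^sub>R (g c \<times> g a) + sg ec *\<^sub>R (g a \<times> g b))"
  have dg: "d \<bullet> g a = sg ea" "d \<bullet> g b = sg eb" "d \<bullet> g c = sg ec"
    using solve3[OF D, of "sg ea" "sg eb" "sg ec"] by (simp_all add: d_def)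
  have abcI: "a \<in> I" "b \<in> I" "c \<in> I" using abc S_sub[of p] by auto
  define \<delta> where "\<delta> k = min (val p k - (cc p k - 1)) (cc p k - val p k)" for k
  have \<delta>pos: "\<forall>k\<in>I - S p. 0 < \<delta> k / (\<bar>d \<bullet> g k\<bar> + 1)"
  proof
    fix k assume k: "k \<in> I - S p"
    have "val p k < cc p k" using cc_notS k by auto
    moreover have "cc p k - 1 < val p k" using cc_bounds(2)[of p k] by simp
    ultimately show "0 < \<delta> k / (\<bar>d \<bullet> g k\<bar> + 1)" by (simp add: \<delta>_def)
  qed
  obtain e0 where e0: "e0 > 0" "\<forall>k\<in>I - S p. e0 \<le> \<delta> k / (\<bar>d \<bullet> g k\<bar> + 1)"
    using finite_eps[OF _ \<delta>pos] by auto
  define \<epsilon>0 where "\<epsilon>0 = min e0 (1/2)"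
  have \<epsilon>0: "0 < \<epsilon>0" "\<epsilon>0 \<le> 1/2" using e0 by (auto simp: \<epsilon>0_def)
  define xs where "xs \<epsilon> = p + \<epsilon> *\<^sub>R d" for \<epsilon>
  define ee where "ee k = (if k = a then ea else if k = b then eb else if k = c then ec else 0)" for k
  have props: "(\<forall>k\<in>I. val (xs \<epsilon>) k \<notin> \<int> \<and> cc (xs \<epsilon>) k = cc p k + ee k)"
    if \<epsilon>: "0 < \<epsilon>" "\<epsilon> \<le> \<epsilon>0" for \<epsilon>
  proof
    fix k assume k: "k \<in> I"
    have vx: "val (xs \<epsilon>) k = val p k + \<epsilon> * (d \<bullet> g k)" by (simp add: xs_def val_add)
    show "val (xs \<epsilon>) k \<notin> \<int> \<and> cc (xs \<epsilon>) k = cc p k + ee k"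
    proof (cases "k \<in> S p")
      case True
      hence kabc: "k = a \<or> k = b \<or> k = c" using abc by auto
      obtain m where m: "val p k = of_int m" using True by (auto simp: S_def' elim!: Ints_cases)
      have cp: "cc p k = of_int m" using cc_S[OF True] m by simp
      have ek: "ee k \<in> {0, 1}" and dk: "d \<bullet> g k = sg (ee k)"
        using kabc e dg abc by (auto simp: ee_def)
      have eps: "0 < \<epsilon>" "\<epsilon> < 1" using \<epsilon> \<epsilon>0 by auto
      show ?thesis
      proof (cases "ee k = 1")
        case True
        hence vv: "val (xs \<epsilon>) k = of_int m + \<epsilon>" using vx m dk by (simp add: sg_def)
        have "ceiling (val (xs \<epsilon>) k) = m + 1" unfolding vv using eps by (intro ceiling_unique) auto
        moreover have "val (xs \<epsilon>) k \<notin> \<int>"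
        proof
          assume "val (xs \<epsilon>) k \<in> \<int>"
          then obtain n where n: "val (xs \<epsilon>) k = of_int n" by (rule Ints_cases)
          hence "of_int m + \<epsilon> = of_int n" using vv by simp
          hence "of_int m < (of_int n :: real)" "of_int n < (of_int m + 1 :: real)" using eps by auto
          hence "m < n" "n < m + 1" by linarith+
          thus False by simp
        qed
        ultimately show ?thesis using cp True by (simp add: cc_def)
      next
        case False
        hence e0': "ee k = 0" using ek by auto
        hence vv: "val (xs \<epsilon>) k = of_int m - \<epsilon>" using vx m dk by (simp add: sg_def)
        have "ceiling (val (xs \<epsilon>) k) = m" unfolding vv using eps by (intro ceiling_unique) auto
        moreover have "val (xs \<epsilon>) k \<notin> \<int>"
        proof
          assume "val (xs \<epsilon>) k \<in> \<int>"
          then obtain n where n: "val (xs \<epsilon>) k = of_int n" by (rule Ints_cases)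
          hence "of_int m - \<epsilon> = of_int n" using vv by simp
          hence "of_int m - 1 < (of_int n :: real)" "of_int n < (of_int m :: real)" using eps by auto
          hence "m - 1 < n" "n < m" by linarith+
          thus False by simp
        qed
        ultimately show ?thesis using cp e0' by (simp add: cc_def)
      qed
    next
      case False
      hence kS: "k \<in> I - S p" using k by simp
      hence eek: "ee k = 0" using abc by (auto simp: ee_def)
      have lt: "val p k < cc p k" "cc p k - 1 < val p k" using cc_notS[OF k False] cc_bounds(2)[of p k] by auto
      have "\<epsilon> * \<bar>d \<bullet> g k\<bar> \<le> \<epsilon>0 * \<bar>d \<bullet> g k\<bar>" using \<epsilon> by (intro mult_right_mono) auto
      also have "\<dots> \<le> e0 * \<bar>d \<bullet> g k\<bar>" by (intro mult_right_mono) (auto simp: \<epsilon>0_def)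
      also have "\<dots> \<le> (\<delta> k / (\<bar>d \<bullet> g k\<bar> + 1)) * \<bar>d \<bullet> g k\<bar>" using e0(2) kS by (intro mult_right_mono) auto
      also have "\<dots> < \<delta> k"
      proof -
        have "0 < \<delta> k" using lt by (simp add: \<delta>_def)
        thus ?thesis by (simp add: field_simps)
      qed
      finally have small: "\<bar>\<epsilon> * (d \<bullet> g k)\<bar> < \<delta> k" using \<epsilon> by (simp add: abs_mult)
      have b1: "cc p k - 1 < val (xs \<epsilon>) k" "val (xs \<epsilon>) k < cc p k"
        using small vx lt by (auto simp: \<delta>_def)
      obtain m where m: "cc p k = of_int m" using cc_int by (metis Ints_cases)
      have "ceiling (val (xs \<epsilon>) k) = m" using b1 m by (intro ceiling_unique) auto
      moreover have "val (xs \<epsilon>) k \<notin> \<int>"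
      proof
        assume "val (xs \<epsilon>) k \<in> \<int>"
        then obtain n where n: "val (xs \<epsilon>) k = of_int n" by (rule Ints_cases)
        hence "of_int m - 1 < (of_int n :: real)" "of_int n < (of_int m :: real)" using b1 m by auto
        hence "m - 1 < n" "n < m" by linarith+
        thus False by simp
      qed
      ultimately show ?thesis using m eek by (simp add: cc_def)
    qed
  qed
  have notGS: "xs \<epsilon> \<notin> GS" if "0 < \<epsilon>" "\<epsilon> \<le> \<epsilon>0" for \<epsilon>
    using props[OF that] GS_iff by blast
  have Kx: "KK (xs \<epsilon>) = KK p + ea *\<^sub>R g a + eb *\<^sub>R g b + ec *\<^sub>R g c" if "0 < \<epsilon>" "\<epsilon> \<le> \<epsilon>0" for \<epsilon>
  proof -
    have "KK (xs \<epsilon>) = (\<Sum>k\<in>I. (cc p k + ee k) *\<^sub>R g k)"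
      unfolding Kmap_eq using props[OF that] by (intro sum.cong) auto
    also have "\<dots> = KK p + (\<Sum>k\<in>I. ee k *\<^sub>R g k)"
      by (simp add: Kmap_eq scaleR_add_left sum.distrib)
    also have "(\<Sum>k\<in>I. ee k *\<^sub>R g k) = (\<Sum>k\<in>I. (if k = a then ea *\<^sub>R g a else 0) + (if k = b then eb *\<^sub>R g b else 0) + (if k = c then ec *\<^sub>R g c else 0))"
      using abc by (intro sum.cong) (auto simp: ee_def)
    also have "\<dots> = ea *\<^sub>R g a + eb *\<^sub>R g b + ec *\<^sub>R g c"
      using abcI by (simp add: sum.distrib)
    finally show ?thesis by (simp add: add.assoc)
  qed
  let ?Seg = "xs ` {0<..\<epsilon>0}"
  have connSeg: "connected ?Seg"
    unfolding xs_def by (intro connected_continuous_image continuous_intros) (simp add: is_interval_connected)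
  have Seg_sub: "?Seg \<subseteq> - GS" using notGS by auto
  have x0: "xs \<epsilon>0 \<in> ?Seg" using \<epsilon>0 by auto
  have Seg_comp: "?Seg \<subseteq> connected_component_set (- GS) (xs \<epsilon>0)"
    by (rule connected_component_maximal[OF x0 connSeg Seg_sub])
  have "p \<in> closure ?Seg"
    unfolding closure_approachable
  proof (intro allI impI)
    fix r :: real assume r: "r > 0"
    define \<epsilon> where "\<epsilon> = min \<epsilon>0 (r / (2 * (norm d + 1)))"
    have rp: "0 < r / (2 * (norm d + 1))" using r by (intro divide_pos_pos) (auto intro: add_nonneg_pos)
    have \<epsilon>: "0 < \<epsilon>" "\<epsilon> \<le> \<epsilon>0" using rp \<epsilon>0 by (auto simp: \<epsilon>_def)
    have "dist (xs \<epsilon>) p = \<epsilon> * norm d" using \<epsilon> by (simp add: xs_def dist_norm)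
    also have "\<dots> \<le> (r / (2 * (norm d + 1))) * norm d" by (intro mult_right_mono) (auto simp: \<epsilon>_def)
    also have "\<dots> = r * (norm d / (2 * (norm d + 1)))" by simp
    also have "\<dots> < r * 1"
    proof (rule mult_strict_left_mono[OF _ r])
      have "0 < 2 * (norm d + 1)" by (simp add: add_nonneg_pos)
      thus "norm d / (2 * (norm d + 1)) < 1" by (simp add: divide_less_eq)
    qed
    finally show "\<exists>y\<in>?Seg. dist y p < r" using \<epsilon> by auto
  qed
  hence "p \<in> closure (connected_component_set (- GS) (xs \<epsilon>0))" using closure_mono[OF Seg_comp] by blast
  thus ?thesis using notGS[OF \<epsilon>0(1) order_refl] Kx[OF \<epsilon>0(1) order_refl] by blast
qed

lemma Tl_sup:
  assumes v: "vtx p" and abc: "S p = {a, b, c}" "a \<noteq> b" "a \<noteq> c" "b \<noteq> c"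
    and D: "(g a \<times> g b) \<bullet> g c \<noteq> 0"
    and s: "0 \<le> sa" "sa \<le> 1" "0 \<le> sb" "sb \<le> 1" "0 \<le> sc" "sc \<le> 1"
  shows "KK p + sa *\<^sub>R g a + sb *\<^sub>R g b + sc *\<^sub>R g c \<in> Tl p"
proof -
  have cv: "convex (Tl p)" unfolding grid_tile_at_def by (rule convex_convex_hull)
  have c0: "KK p + ea *\<^sub>R g a + eb *\<^sub>R g b + ec *\<^sub>R g c \<in> Tl p"
    if ee: "ea \<in> {0, 1}" "eb \<in> {0, 1}" "ec \<in> {0, 1}" for ea eb ec
  proof -
    obtain x where x: "x \<notin> GS" "p \<in> closure (connected_component_set (- GS) x)"
      "KK x = KK p + ea *\<^sub>R g a + eb *\<^sub>R g b + ec *\<^sub>R g c"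
      using corner[OF v abc D ee] by blast
    have "KK x \<in> {KK x | x. x \<notin> GS \<and> p \<in> closure (connected_component_set (- GS) x)}"
      using x by blast
    hence "KK x \<in> Tl p" unfolding grid_tile_at_def by (rule hull_inc)
    thus ?thesis using x(3) by simp
  qed
  have c1: "KK p + sa *\<^sub>R g a + eb *\<^sub>R g b + ec *\<^sub>R g c \<in> Tl p"
    if ee: "eb \<in> {0, 1}" "ec \<in> {0, 1}" for eb ec
  proof -
    have x0: "KK p + 0 *\<^sub>R g a + eb *\<^sub>R g b + ec *\<^sub>R g c \<in> Tl p" by (rule c0) (use ee in auto)
    have x1: "KK p + 1 *\<^sub>R g a + eb *\<^sub>R g b + ec *\<^sub>R g c \<in> Tl p" by (rule c0) (use ee in auto)
    have "(KK p + 0 *\<^sub>R g a + eb *\<^sub>R g b + ec *\<^sub>R g c) + sa *\<^sub>R g a \<in> Tl p"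
      by (rule seg_in_convex[OF cv x0 x1]) (use s in auto)
    thus ?thesis by (simp add: algebra_simps)
  qed
  have c2: "KK p + sa *\<^sub>R g a + sb *\<^sub>R g b + ec *\<^sub>R g c \<in> Tl p"
    if ee: "ec \<in> {0, 1}" for ec
  proof -
    have x0: "KK p + sa *\<^sub>R g a + 0 *\<^sub>R g b + ec *\<^sub>R g c \<in> Tl p" by (rule c1) (use ee in auto)
    have x1: "KK p + sa *\<^sub>R g a + 1 *\<^sub>R g b + ec *\<^sub>R g c \<in> Tl p" by (rule c1) (use ee in auto)
    have "(KK p + sa *\<^sub>R g a + 0 *\<^sub>R g b + ec *\<^sub>R g c) + sb *\<^sub>R g b \<in> Tl p"
      by (rule seg_in_convex[OF cv x0 x1]) (use s in auto)
    thus ?thesis by (simp add: algebra_simps)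
  qed
  have x0: "KK p + sa *\<^sub>R g a + sb *\<^sub>R g b + 0 *\<^sub>R g c \<in> Tl p" by (rule c2) auto
  have x1: "KK p + sa *\<^sub>R g a + sb *\<^sub>R g b + 1 *\<^sub>R g c \<in> Tl p" by (rule c2) auto
  have "(KK p + sa *\<^sub>R g a + sb *\<^sub>R g b + 0 *\<^sub>R g c) + sc *\<^sub>R g c \<in> Tl p"
    by (rule seg_in_convex[OF cv x0 x1]) (use s in auto)
  thus ?thesis by (simp add: algebra_simps)
qed

end


lemma ceil_mid:
  fixes a d :: real
  assumes nc: "\<forall>t. 0 < t \<and> t < 1 \<longrightarrow> a + t * d \<notin> \<int>"
  shows "a \<notin> \<int> \<Longrightarrow> ceiling (a + d / 2) = ceiling a"
    and "a \<in> \<int> \<Longrightarrow> of_int (ceiling (a + d / 2)) = a \<or> of_int (ceiling (a + d / 2)) = a + 1"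
proof -
  have half: "a + d / 2 \<notin> \<int>" using nc[rule_format, of "1/2"] by simp
  { assume na: "a \<notin> \<int>"
    show "ceiling (a + d / 2) = ceiling a"
    proof (rule ccontr)
      assume ne: "ceiling (a + d / 2) \<noteq> ceiling a"
      obtain m :: int where m: "min a (a + d / 2) < of_int m" "of_int m < max a (a + d / 2)"
      proof (cases "ceiling a < ceiling (a + d / 2)")
        case True
        have "a < of_int (ceiling a)" using na by (metis Ints_of_int ceiling_correct order_le_less)
        moreover have "of_int (ceiling a) < a + d / 2"
          using True by (metis ceiling_less_iff less_le_not_le not_less ceiling_le_iff)
        ultimately show ?thesis using that[of "ceiling a"] by auto
      next
        case False
        hence lt: "ceiling (a + d / 2) < ceiling a" using ne by simp
        have "a + d / 2 < of_int (ceiling (a + d / 2))" using half by (metis Ints_of_int ceiling_correct order_le_less)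
        moreover have "of_int (ceiling (a + d / 2)) < a"
          using lt by (metis ceiling_less_iff less_le_not_le not_less ceiling_le_iff)
        ultimately show ?thesis using that[of "ceiling (a + d / 2)"] by auto
      qed
      have dnz: "d \<noteq> 0" using m by auto
      define t where "t = (of_int m - a) / d"
      have "a + t * d = of_int m" using dnz by (simp add: t_def)
      moreover have "0 < t" "t < 1/2"
        using m dnz unfolding t_def by (auto simp: field_simps min_def max_def split: if_splits)
      ultimately show False using nc[rule_format, of t] by auto
    qed }
  { assume ia: "a \<in> \<int>"
    then obtain n where n: "a = of_int n" by (rule Ints_cases)
    show "of_int (ceiling (a + d / 2)) = a \<or> of_int (ceiling (a + d / 2)) = a + 1"
    proof (cases "d > 0")
      case True
      have "a + d / 2 < a + 1"
      proof (rule ccontr)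
        assume "\<not> a + d / 2 < a + 1"
        hence "1 \<le> d / 2" by simp
        hence "0 < 1 / d" "1 / d < 1" using True by (auto simp: field_simps)
        moreover have "a + (1 / d) * d = of_int (n + 1)" using True n by simp
        ultimately show False using nc[rule_format, of "1 / d"] by (metis Ints_of_int)
      qed
      hence "ceiling (a + d / 2) = n + 1" using True n by (intro ceiling_unique) auto
      thus ?thesis using n by simp
    next
      case False
      have dne: "d \<noteq> 0" using half ia by auto
      hence dn: "d < 0" using False by simp
      have "a - 1 < a + d / 2"
      proof (rule ccontr)
        assume "\<not> a - 1 < a + d / 2"
        hence "d / 2 \<le> -1" by simp
        hence "0 < -1 / d" "-1 / d < 1" using dn by (auto simp: field_simps)
        moreover have "a + (-1 / d) * d = of_int (n - 1)" using dn n by simp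
        ultimately show False using nc[rule_format, of "-1 / d"] by (metis Ints_of_int)
      qed
      hence "ceiling (a + d / 2) = n" using dn n by (intro ceiling_unique) auto
      thus ?thesis using n by simp
    qed }
qed

lemma card_cross:
  fixes a d :: real
  assumes "d \<noteq> 0"
  shows "finite {t. 0 < t \<and> t < 1 \<and> a + t * d \<in> \<int>} \<and> real (card {t. 0 < t \<and> t < 1 \<and> a + t * d \<in> \<int>}) \<le> \<bar>d\<bar> + 1"
proof -
  define lo where "lo = min a (a + d)"
  define hi where "hi = max a (a + d)"
  have lohi: "hi - lo = \<bar>d\<bar>" by (simp add: lo_def hi_def)
  define M where "M = {m :: int. lo < of_int m \<and> of_int m < hi}"
  let ?T = "{t. 0 < t \<and> t < 1 \<and> a + t * d \<in> \<int>}"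
  have sub: "?T \<subseteq> (\<lambda>m. (of_int m - a) / d) ` M"
  proof
    fix t assume t: "t \<in> ?T"
    then obtain m where m: "a + t * d = of_int m" by (auto elim!: Ints_cases)
    have "t = (of_int m - a) / d" using m assms by (simp add: field_simps)
    moreover have "m \<in> M"
    proof -
      have "0 < t" "t < 1" using t by auto
      hence "lo < a + t * d \<and> a + t * d < hi"
      proof (cases "d > 0")
        case True
        have "0 < t * d" using \<open>0 < t\<close> True by simp
        moreover have "t * d < 1 * d" using \<open>t < 1\<close> True by (intro mult_strict_right_mono)
        ultimately show ?thesis using True unfolding lo_def hi_def by auto
      next
        case False
        hence dn: "d < 0" using assms by simp
        have "t * d < 0" using \<open>0 < t\<close> dn by (simp add: mult_pos_neg)
        moreover have "1 * d < t * d" using \<open>t < 1\<close> dn by (intro mult_strict_right_mono_neg)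
        ultimately show ?thesis using dn unfolding lo_def hi_def by auto
      qed
      thus ?thesis using m by (simp add: M_def)
    qed
    ultimately show "t \<in> (\<lambda>m. (of_int m - a) / d) ` M" by blast
  qed
  have MS: "M \<subseteq> {floor lo + 1 .. ceiling hi - 1}"
  proof
    fix m assume "m \<in> M"
    hence "lo < of_int m" "of_int m < hi" by (auto simp: M_def)
    hence "floor lo < m" "m < ceiling hi" by (auto simp: floor_less_iff less_ceiling_iff)
    thus "m \<in> {floor lo + 1 .. ceiling hi - 1}" by auto
  qed
  have finM: "finite M" using MS finite_subset by blast
  have "card M \<le> card {floor lo + 1 .. ceiling hi - 1}" using MS by (intro card_mono) auto
  also have "\<dots> = nat (ceiling hi - 1 - floor lo)" by simp
  finally have "real (card M) \<le> real (nat (ceiling hi - 1 - floor lo))" by linarith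
  also have "\<dots> \<le> hi - lo + 1"
  proof -
    have f: "of_int (ceiling hi) < hi + 1" "lo - 1 < of_int (floor lo)" by linarith+
    have lh: "lo \<le> hi" using lohi by simp
    show ?thesis
    proof (cases "ceiling hi - 1 - floor lo \<ge> 0")
      case True
      hence "real (nat (ceiling hi - 1 - floor lo)) = of_int (ceiling hi) - 1 - of_int (floor lo)" by simp
      thus ?thesis using f by linarith
    next
      case False
      hence "real (nat (ceiling hi - 1 - floor lo)) = 0" by simp
      thus ?thesis using lh by linarith
    qed
  qed
  finally have cM: "real (card M) \<le> \<bar>d\<bar> + 1" using lohi by simp
  have finT: "finite ?T" using sub finM by (meson finite_imageI finite_subset)
  have "card ?T \<le> card ((\<lambda>m. (of_int m - a) / d) ` M)" using sub finM by (intro card_mono) auto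
  also have "\<dots> \<le> card M" by (rule card_image_le[OF finM])
  finally show ?thesis using finT cM by linarith
qed


context gridB begin

definition reach :: "(real^3) set \<Rightarrow> (real^3) set \<Rightarrow> nat \<Rightarrow> bool" where
  "reach A B n \<longleftrightarrow> (\<exists>m\<le>n. (A, B) \<in> Rn ^^ m)"

lemma reach_refl: "reach A A 0" by (auto simp: reach_def)
lemma reach_mono: "reach A B n \<Longrightarrow> n \<le> n' \<Longrightarrow> reach A B n'" unfolding reach_def by (meson le_trans)
lemma reach_trans: assumes "reach A B n" "reach B C n'" shows "reach A C (n + n')"
proof -
  obtain m m' where m: "m \<le> n" "(A, B) \<in> Rn ^^ m" "m' \<le> n'" "(B, C) \<in> Rn ^^ m'"
    using assms by (auto simp: reach_def)
  have "(A, C) \<in> Rn ^^ m O Rn ^^ m'" using m by blast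
  hence "(A, C) \<in> Rn ^^ (m + m')" by (simp add: relpow_add)
  thus ?thesis using m by (auto simp: reach_def intro!: exI[of _ "m + m'"])
qed
lemma reach_nbr: "(A, B) \<in> Rn \<Longrightarrow> reach A B 1"
  unfolding reach_def by (intro exI[of _ 1]) auto

lemma third_idx:
  assumes "i \<in> I" "j \<in> I"
  obtains k where "k \<in> I" "k \<noteq> i" "k \<noteq> j"
proof -
  have a: "card I - card {i, j} \<le> card (I - {i, j})" by (rule diff_card_le_card_Diff) simp
  have b: "card {i, j} \<le> 2" by (simp add: card_insert_if)
  have "card (I - {i, j}) \<ge> 1" using a b N3 by simp
  then obtain k where "k \<in> I - {i, j}" by (metis card.empty ex_in_conv not_one_le_zero)
  thus ?thesis using that by blast
qed

lemma indep2:
  assumes "i \<in> I" "j \<in> I" "i \<noteq> j"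
  shows "independent {g i, g j}"
proof -
  obtain k where k: "k \<in> I" "k \<noteq> i" "k \<noteq> j" using third_idx[OF assms(1,2)] by blast
  have "independent {g i, g j, g k}" using indep3 assms k by metis
  thus ?thesis by (rule independent_mono) auto
qed

lemma aff_dim_ge2:
  assumes X: "{P, P + v1, P + v2} \<subseteq> X" and ind: "independent {v1, v2}" and ne: "v1 \<noteq> v2"
  shows "aff_dim X \<ge> 2"
proof -
  have e: "{P, P + v1, P + v2} = (+) P ` {0, v1, v2}" by auto
  have "aff_dim {0, v1, v2} = int (dim {0, v1, v2})" by (rule aff_dim_zero) (auto intro: hull_inc)
  moreover have "card {v1, v2} \<le> dim {0, v1, v2}" by (rule independent_card_le_dim) (use ind in auto)
  moreover have "card {v1, v2} = 2" using ne by simp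
  ultimately have "aff_dim {P, P + v1, P + v2} \<ge> 2" unfolding e aff_dim_translation_eq by simp
  thus ?thesis using aff_dim_subset[OF X] by simp
qed

lemma sum_split2:
  assumes "i \<in> I" "j \<in> I" "i \<noteq> j"
  shows "(\<Sum>k\<in>I. f k) = (\<Sum>k\<in>I - {i, j}. f k) + f i + f j"
proof -
  have "(\<Sum>k\<in>I. f k) = (\<Sum>k\<in>I - {i, j}. f k) + (\<Sum>k\<in>{i, j}. f k)"
    by (rule sum.subset_diff) (use assms in auto)
  thus ?thesis using assms(3) by (simp add: add.assoc)
qed

lemma third_of_vtx:
  assumes "vtx u" "i \<in> S u" "j \<in> S u" "i \<noteq> j"
  obtains c where "S u = {i, j, c}" "c \<noteq> i" "c \<noteq> j"
proof -
  have "card (S u - {i, j}) = 1" using vtx_card[OF assms(1)] assms(2-4) by (simp add: card_Diff_subset)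
  then obtain c where "S u - {i, j} = {c}" by (auto simp: card_Suc_eq)
  hence "S u = {i, j, c}" "c \<noteq> i" "c \<noteq> j" using assms by auto
  thus ?thesis using that by blast
qed

lemma face_in_tile:
  assumes u: "vtx u" and ij: "i \<noteq> j" "i \<in> S u" "j \<in> S u" and Su: "S u = {i, j, c}" "c \<noteq> i" "c \<noteq> j"
    and \<phi>: "\<forall>k\<in>I - {i, j, c}. \<phi> k = cc u k" "\<phi> c - cc u c \<in> {0, 1}"
    and s: "0 \<le> si" "si \<le> 1" "0 \<le> sj" "sj \<le> 1"
  shows "(\<Sum>k\<in>I - {i, j}. \<phi> k *\<^sub>R g k) + (val u i + si) *\<^sub>R g i + (val u j + sj) *\<^sub>R g j \<in> Tl u"
proof -
  have I3: "i \<in> I" "j \<in> I" "c \<in> I" using Su S_sub[of u] by auto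
  have gd: "g i \<noteq> g j" "g i \<noteq> g c" "g j \<noteq> g c" using S_g_distinct Su ij by auto
  have D: "(g i \<times> g j) \<bullet> g c \<noteq> 0" using triple_idx[of i j c] I3 gd ij Su by metis
  define sc where "sc = \<phi> c - cc u c"
  have sc: "0 \<le> sc" "sc \<le> 1" using \<phi>(2) by (auto simp: sc_def)
  have T: "KK u + si *\<^sub>R g i + sj *\<^sub>R g j + sc *\<^sub>R g c \<in> Tl u"
    using Tl_sup[OF u Su(1) ij(1) Su(2)[symmetric] Su(3)[symmetric] D s sc] by simp
  have ci: "cc u i = val u i" "cc u j = val u j" using cc_S ij by auto
  have "(\<Sum>k\<in>I - {i, j}. \<phi> k *\<^sub>R g k) = (\<Sum>k\<in>I - {i, j}. cc u k *\<^sub>R g k + (if k = c then sc *\<^sub>R g c else 0))"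
  proof (rule sum.cong)
    fix k assume k: "k \<in> I - {i, j}"
    show "\<phi> k *\<^sub>R g k = cc u k *\<^sub>R g k + (if k = c then sc *\<^sub>R g c else 0)"
    proof (cases "k = c")
      case True thus ?thesis by (simp add: sc_def scaleR_diff_left)
    next
      case False thus ?thesis using \<phi>(1) k by auto
    qed
  qed simp
  also have "\<dots> = (\<Sum>k\<in>I - {i, j}. cc u k *\<^sub>R g k) + sc *\<^sub>R g c"
    using I3 Su by (simp add: sum.distrib)
  finally have e1: "(\<Sum>k\<in>I - {i, j}. \<phi> k *\<^sub>R g k) = (\<Sum>k\<in>I - {i, j}. cc u k *\<^sub>R g k) + sc *\<^sub>R g c" .
  have e2: "KK u = (\<Sum>k\<in>I - {i, j}. cc u k *\<^sub>R g k) + val u i *\<^sub>R g i + val u j *\<^sub>R g j"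
    unfolding Kmap_eq using sum_split2[OF I3(1,2) ij(1), of "\<lambda>k. cc u k *\<^sub>R g k"] ci by simp
  have "(\<Sum>k\<in>I - {i, j}. \<phi> k *\<^sub>R g k) + (val u i + si) *\<^sub>R g i + (val u j + sj) *\<^sub>R g j
        = KK u + si *\<^sub>R g i + sj *\<^sub>R g j + sc *\<^sub>R g c"
    unfolding e1 e2 by (simp add: algebra_simps)
  thus ?thesis using T by simp
qed

lemma ADJ:
  assumes u: "vtx u" and z: "vtx z" and uz: "u \<noteq> z"
    and ij: "i \<noteq> j" "i \<in> S u" "j \<in> S u" "i \<in> S z" "j \<in> S z"
    and vi: "val u i = val z i" and vj: "val u j = val z j"
    and nc: "\<forall>t. 0 < t \<and> t < 1 \<longrightarrow> (\<forall>k\<in>I - {i, j}. val (u + t *\<^sub>R (z - u)) k \<notin> \<int>)"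
  shows "(Tl u, Tl z) \<in> Rn"
proof -
  obtain c where Su: "S u = {i, j, c}" "c \<noteq> i" "c \<noteq> j" using third_of_vtx[OF u ij(2,3,1)] by blast
  obtain c' where Sz: "S z = {i, j, c'}" "c' \<noteq> i" "c' \<noteq> j" using third_of_vtx[OF z ij(4,5,1)] by blast
  have I2: "i \<in> I" "j \<in> I" using ij S_sub[of u] by auto
  define \<Delta> where "\<Delta> k = (z - u) \<bullet> g k" for k
  have vline: "val (u + t *\<^sub>R (z - u)) k = val u k + t * \<Delta> k" for t k
    by (simp add: val_add \<Delta>_def)
  have vz: "val z k = val u k + \<Delta> k" for k using val_diff[of z k u] by (simp add: \<Delta>_def)
  define m where "m = u + (1/2) *\<^sub>R (z - u)"
  have vm: "val m k = val u k + \<Delta> k / 2" for k using vline[of "1/2" k] by (simp add: m_def)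
  have vm': "val m k = val z k + (- \<Delta> k) / 2" for k using vm[of k] vz[of k] by simp
  have ncu: "\<forall>t. 0 < t \<and> t < 1 \<longrightarrow> val u k + t * \<Delta> k \<notin> \<int>" if k: "k \<in> I - {i, j}" for k
    using nc k vline by auto
  have ncz: "\<forall>t. 0 < t \<and> t < 1 \<longrightarrow> val z k + t * (- \<Delta> k) \<notin> \<int>" if k: "k \<in> I - {i, j}" for k
  proof (intro allI impI)
    fix t :: real assume t: "0 < t \<and> t < 1"
    have "val z k + t * (- \<Delta> k) = val u k + (1 - t) * \<Delta> k" using vz[of k] by (simp add: algebra_simps)
    thus "val z k + t * (- \<Delta> k) \<notin> \<int>" using ncu[OF k, rule_format, of "1 - t"] t by simp
  qed
  define \<phi> where "\<phi> k = cc m k" for k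
  have \<phi>u1: "\<forall>k\<in>I - {i, j, c}. \<phi> k = cc u k"
  proof
    fix k assume k: "k \<in> I - {i, j, c}"
    hence "k \<notin> S u" using Su by auto
    hence "val u k \<notin> \<int>" using k by (auto simp: S_def')
    thus "\<phi> k = cc u k" using ceil_mid(1)[OF ncu[of k]] k by (simp add: \<phi>_def cc_def vm)
  qed
  have \<phi>u2: "\<phi> c - cc u c \<in> {0, 1}"
  proof -
    have cI: "c \<in> I - {i, j}" using Su S_sub[of u] by auto
    have cS: "c \<in> S u" using Su by auto
    hence "val u c \<in> \<int>" by (simp add: S_def')
    from ceil_mid(2)[OF ncu[OF cI] this] show ?thesis using cc_S[OF cS] by (auto simp: \<phi>_def cc_def vm)
  qed
  have \<phi>z1: "\<forall>k\<in>I - {i, j, c'}. \<phi> k = cc z k"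
  proof
    fix k assume k: "k \<in> I - {i, j, c'}"
    hence "k \<notin> S z" using Sz by auto
    hence "val z k \<notin> \<int>" using k by (auto simp: S_def')
    thus "\<phi> k = cc z k" using ceil_mid(1)[OF ncz[of k]] k by (simp add: \<phi>_def cc_def vm')
  qed
  have \<phi>z2: "\<phi> c' - cc z c' \<in> {0, 1}"
  proof -
    have cI: "c' \<in> I - {i, j}" using Sz S_sub[of z] by auto
    have cS: "c' \<in> S z" using Sz by auto
    hence "val z c' \<in> \<int>" by (simp add: S_def')
    from ceil_mid(2)[OF ncz[OF cI] this] show ?thesis using cc_S[OF cS] by (auto simp: \<phi>_def cc_def vm')
  qed
  define F where "F si sj = (\<Sum>k\<in>I - {i, j}. \<phi> k *\<^sub>R g k) + (val u i + si) *\<^sub>R g i + (val u j + sj) *\<^sub>R g j" for si sj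
  have Fin: "F si sj \<in> Tl u \<inter> Tl z" if "0 \<le> si" "si \<le> 1" "0 \<le> sj" "sj \<le> 1" for si sj
  proof
    show "F si sj \<in> Tl u" unfolding F_def by (rule face_in_tile[OF u ij(1-3) Su \<phi>u1 \<phi>u2 that])
    show "F si sj \<in> Tl z" unfolding F_def vi vj by (rule face_in_tile[OF z ij(1) ij(4,5) Sz \<phi>z1 \<phi>z2 that])
  qed
  have "{F 0 0, F 0 0 + g i, F 0 0 + g j} \<subseteq> Tl u \<inter> Tl z"
  proof -
    have "F 0 0 + g i = F 1 0" "F 0 0 + g j = F 0 1" by (simp_all add: F_def algebra_simps)
    thus ?thesis using Fin[of 0 0] Fin[of 1 0] Fin[of 0 1] by auto
  qed
  moreover have "independent {g i, g j}" using indep2 I2 ij(1) by blast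
  moreover have "g i \<noteq> g j" using S_g_distinct ij by blast
  ultimately have "aff_dim (Tl u \<inter> Tl z) \<ge> 2" by (rule aff_dim_ge2)
  moreover have "Tl u \<in> tiles" "Tl z \<in> tiles" using u z tiles_iff by blast+
  ultimately show ?thesis by (simp add: Rn_iff)
qed

end


context gridB begin

definition Zc :: "nat \<Rightarrow> nat \<Rightarrow> real^3 \<Rightarrow> real^3 \<Rightarrow> real set" where
  "Zc i j u z = {t. 0 < t \<and> t < 1 \<and> (\<exists>k\<in>I - {i, j}. val (u + t *\<^sub>R (z - u)) k \<in> \<int>)}"

lemma vline: "val (u + t *\<^sub>R (z - u)) k = val u k + t * ((z - u) \<bullet> g k)"
  by (simp add: val_add)

lemma same3_eq:
  assumes "vtx u" "i \<in> S u" "j \<in> S u" "k \<in> S u" "i \<noteq> j" "i \<noteq> k" "j \<noteq> k"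
    and "(z - u) \<bullet> g i = 0" "(z - u) \<bullet> g j = 0" "(z - u) \<bullet> g k = 0"
  shows "z = u"
proof -
  have I3: "i \<in> I" "j \<in> I" "k \<in> I" using assms S_sub[of u] by auto
  have gd: "g i \<noteq> g j" "g i \<noteq> g k" "g j \<noteq> g k" using S_g_distinct assms by auto
  have D: "(g i \<times> g j) \<bullet> g k \<noteq> 0" using triple_idx[of i j k] I3 gd assms by metis
  have "z - u = 0" using uniq3[OF D] assms(8-10) by blast
  thus ?thesis by simp
qed

lemma Zc_finite_card:
  assumes u: "vtx u" and z: "vtx z" and uz: "u \<noteq> z"
    and ij: "i \<noteq> j" "i \<in> S u" "j \<in> S u" "i \<in> S z" "j \<in> S z"
    and vi: "val u i = val z i" and vj: "val u j = val z j"
  shows "finite (Zc i j u z) \<and> real (card (Zc i j u z)) \<le> (\<Sum>k\<in>I - {i, j}. \<bar>(z - u) \<bullet> g k\<bar> + 1)"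
proof -
  define Zk where "Zk k = {t. 0 < t \<and> t < 1 \<and> val u k + t * ((z - u) \<bullet> g k) \<in> \<int>}" for k
  have eq: "Zc i j u z = (\<Union>k\<in>I - {i, j}. Zk k)" unfolding Zc_def Zk_def vline by auto
  have zi: "(z - u) \<bullet> g i = 0" "(z - u) \<bullet> g j = 0" using vi vj val_diff[of z i u] val_diff[of z j u] by simp_all
  have each: "finite (Zk k) \<and> real (card (Zk k)) \<le> \<bar>(z - u) \<bullet> g k\<bar> + 1" if k: "k \<in> I - {i, j}" for k
  proof (cases "(z - u) \<bullet> g k = 0")
    case False
    thus ?thesis unfolding Zk_def by (rule card_cross)
  next
    case True
    have "Zk k = {}"
    proof (rule ccontr)
      assume "Zk k \<noteq> {}"
      then obtain t where "val u k + t * ((z - u) \<bullet> g k) \<in> \<int>" unfolding Zk_def by blast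
      hence vu: "val u k \<in> \<int>" using True by simp
      hence "k \<in> S u" using k by (simp add: S_def')
      hence "z = u" using same3_eq[OF u ij(2,3) _ ij(1) _ _ zi True] k by auto
      thus False using uz by simp
    qed
    thus ?thesis by simp
  qed
  have fin: "finite (Zc i j u z)" unfolding eq using each by auto
  have "card (Zc i j u z) \<le> (\<Sum>k\<in>I - {i, j}. card (Zk k))" unfolding eq by (rule card_UN_le) simp
  hence "real (card (Zc i j u z)) \<le> real (\<Sum>k\<in>I - {i, j}. card (Zk k))" by (simp only: of_nat_le_iff)
  also have "\<dots> = (\<Sum>k\<in>I - {i, j}. real (card (Zk k)))" by (rule of_nat_sum)
  also have "\<dots> \<le> (\<Sum>k\<in>I - {i, j}. \<bar>(z - u) \<bullet> g k\<bar> + 1)" using each by (intro sum_mono) auto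
  finally show ?thesis using fin by simp
qed

lemma WL_ind:
  assumes "n = card (Zc i j u z)" "vtx u" "vtx z" "i \<noteq> j" "i \<in> S u" "j \<in> S u" "i \<in> S z" "j \<in> S z"
    "val u i = val z i" "val u j = val z j"
  shows "reach (Tl u) (Tl z) (card (Zc i j u z) + 1)"
  using assms
proof (induction n arbitrary: u rule: less_induct)
  case (less n u)
  note u = less.prems(2) and z = less.prems(3) and ij = less.prems(4-8) and vi = less.prems(9) and vj = less.prems(10)
  show ?case
  proof (cases "u = z")
    case True thus ?thesis using reach_refl reach_mono by blast
  next
    case uz: False
    have zi: "(z - u) \<bullet> g i = 0" "(z - u) \<bullet> g j = 0" using vi vj val_diff[of z i u] val_diff[of z j u] by simp_all
    have fin: "finite (Zc i j u z)" using Zc_finite_card[OF u z uz ij vi vj] by blast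
    show ?thesis
    proof (cases "Zc i j u z = {}")
      case True
      have nc: "\<forall>t. 0 < t \<and> t < 1 \<longrightarrow> (\<forall>k\<in>I - {i, j}. val (u + t *\<^sub>R (z - u)) k \<notin> \<int>)"
        using True unfolding Zc_def by blast
      have "(Tl u, Tl z) \<in> Rn" by (rule ADJ[OF u z uz ij vi vj nc])
      thus ?thesis using reach_nbr True by simp
    next
      case False
      define t0 where "t0 = Min (Zc i j u z)"
      have t0Z: "t0 \<in> Zc i j u z" using Min_in[OF fin False] by (simp add: t0_def)
      have t0min: "\<And>t. t \<in> Zc i j u z \<Longrightarrow> t0 \<le> t" using Min_le[OF fin] by (simp add: t0_def)
      have t01: "0 < t0" "t0 < 1" using t0Z by (auto simp: Zc_def)
      define m where "m = u + t0 *\<^sub>R (z - u)"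
      obtain k0 where k0: "k0 \<in> I - {i, j}" "val m k0 \<in> \<int>" using t0Z unfolding Zc_def m_def by blast
      have vmi: "val m i = val u i" "val m j = val u j" using zi by (simp_all add: m_def vline)
      have iIS: "i \<in> I" "j \<in> I" using ij S_sub[of u] by auto
      have Sm: "{i, j, k0} \<subseteq> S m"
        using vmi k0 ij iIS by (auto simp: S_def')
      have "card {i, j, k0} = 3" using k0 ij by auto
      hence vm: "vtx m" unfolding vtx_def using card_mono[OF finite_S Sm] by simp
      have zu0: "z - u \<noteq> 0" using uz by simp
      have mu: "u \<noteq> m" using t01 zu0 by (simp add: m_def)
      have mz: "m \<noteq> z"
      proof
        assume mz0: "m = z"
        have "(1 - t0) *\<^sub>R (z - u) = z - m" by (simp add: m_def algebra_simps)
        hence "(1 - t0) *\<^sub>R (z - u) = 0" using mz0 by simp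
        thus False using t01 zu0 by simp
      qed
      have ijm: "i \<in> S m" "j \<in> S m" using Sm by auto
      have nc1: "\<forall>s. 0 < s \<and> s < 1 \<longrightarrow> (\<forall>k\<in>I - {i, j}. val (u + s *\<^sub>R (m - u)) k \<notin> \<int>)"
      proof (intro allI impI ballI)
        fix s :: real and k :: nat assume s: "0 < s \<and> s < 1" and k: "k \<in> I - {i, j}"
        show "val (u + s *\<^sub>R (m - u)) k \<notin> \<int>"
        proof
          assume a: "val (u + s *\<^sub>R (m - u)) k \<in> \<int>"
          have "u + s *\<^sub>R (m - u) = u + (s * t0) *\<^sub>R (z - u)" by (simp add: m_def)
          hence a2: "val (u + (s * t0) *\<^sub>R (z - u)) k \<in> \<int>" using a by simp
          have p1: "0 < s * t0" using s t01 by simp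
          have p2: "s * t0 < t0" using s t01 by simp
          have p3: "s * t0 < 1" using p2 t01 by linarith
          have "s * t0 \<in> Zc i j u z" unfolding Zc_def using a2 k p1 p3 by auto
          hence "t0 \<le> s * t0" by (rule t0min)
          moreover have "s * t0 < t0" using s t01 by simp
          ultimately show False by simp
        qed
      qed
      have st1: "(Tl u, Tl m) \<in> Rn"
        by (rule ADJ[OF u vm mu ij(1-3) ijm]) (use vmi nc1 in auto)
      define f where "f s = t0 + s * (1 - t0)" for s
      have fpt: "m + s *\<^sub>R (z - m) = u + f s *\<^sub>R (z - u)" for s
        by (simp add: m_def f_def algebra_simps)
      have fsub: "f ` Zc i j m z \<subseteq> Zc i j u z - {t0}"
      proof
        fix t assume "t \<in> f ` Zc i j m z"
        then obtain s where s: "s \<in> Zc i j m z" "t = f s" by blast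
        have s01: "0 < s" "s < 1" using s(1) by (auto simp: Zc_def)
        have q: "0 < 1 - t0" using t01 by simp
        have q1: "0 < s * (1 - t0)" using s01 q by simp
        have q2: "s * (1 - t0) < 1 * (1 - t0)" using s01 q by (intro mult_strict_right_mono)
        have r1: "0 < f s" unfolding f_def using q1 t01 by simp
        have r2: "f s < 1"
        proof -
          have "t0 + s * (1 - t0) < t0 + 1 * (1 - t0)" using q2 by (rule add_strict_left_mono)
          thus ?thesis by (simp add: f_def)
        qed
        have r3: "t0 < f s" unfolding f_def using q1 by simp
        from r1 r2 r3 have "0 < f s" "f s < 1" "f s \<noteq> t0" by auto
        moreover obtain k where "k \<in> I - {i, j}" "val (m + s *\<^sub>R (z - m)) k \<in> \<int>" using s(1) unfolding Zc_def by blast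
        ultimately show "t \<in> Zc i j u z - {t0}" using s(2) fpt unfolding Zc_def by auto
      qed
      have finm: "finite (Zc i j m z)"
        using Zc_finite_card[OF vm z mz ij(1) ijm ij(4,5)] vmi vi vj by auto
      have injf: "inj_on f (Zc i j m z)" using t01 by (auto simp: inj_on_def f_def)
      have "card (Zc i j m z) = card (f ` Zc i j m z)" using card_image[OF injf] by simp
      also have "\<dots> \<le> card (Zc i j u z - {t0})" using fsub fin by (intro card_mono) auto
      also have "\<dots> < card (Zc i j u z)" by (rule card_Diff1_less[OF fin t0Z])
      finally have lt: "card (Zc i j m z) < card (Zc i j u z)" .
      have IH: "reach (Tl m) (Tl z) (card (Zc i j m z) + 1)"
        using less.IH[OF _ refl vm z ij(1) ijm ij(4,5)] lt less.prems(1) vmi vi vj by auto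
      have "reach (Tl u) (Tl z) (1 + (card (Zc i j m z) + 1))"
        by (rule reach_trans[OF reach_nbr[OF st1] IH])
      thus ?thesis by (rule reach_mono) (use lt in simp)
    qed
  qed
qed

lemma WL:
  assumes u: "vtx u" and z: "vtx z"
    and ij: "i \<noteq> j" "i \<in> S u" "j \<in> S u" "i \<in> S z" "j \<in> S z"
    and vi: "val u i = val z i" and vj: "val u j = val z j"
  shows "\<exists>n. real n \<le> nu (z - u) + real N + 1 \<and> reach (Tl u) (Tl z) n"
proof (cases "u = z")
  case True thus ?thesis using reach_refl by (intro exI[of _ 0]) (simp add: nu_nonneg)
next
  case False
  have r: "reach (Tl u) (Tl z) (card (Zc i j u z) + 1)" by (rule WL_ind[OF refl u z ij vi vj])
  have c: "real (card (Zc i j u z)) \<le> (\<Sum>k\<in>I - {i, j}. \<bar>(z - u) \<bullet> g k\<bar> + 1)"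
    using Zc_finite_card[OF u z False ij vi vj] by blast
  also have "\<dots> = (\<Sum>k\<in>I - {i, j}. \<bar>(z - u) \<bullet> g k\<bar>) + real (card (I - {i, j}))"
    by (simp add: sum.distrib)
  also have "(\<Sum>k\<in>I - {i, j}. \<bar>(z - u) \<bullet> g k\<bar>) \<le> nu (z - u)"
    unfolding nu_def by (rule sum_mono2) auto
  also have "real (card (I - {i, j})) \<le> real N"
    using card_mono[of I "I - {i, j}"] by simp
  finally show ?thesis using r by (intro exI[of _ "card (Zc i j u z) + 1"]) auto
qed

end


context gridB begin

definition K1 :: real where
  "K1 = Max ((\<lambda>(i, j, k). norm (g i \<times> g j) / \<bar>(g i \<times> g j) \<bullet> g k\<bar>) ` (Sigma I (\<lambda>_. Sigma I (\<lambda>_. I))))"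
definition K2 :: real where
  "K2 = Max ((\<lambda>(i, j, k). 1 / \<bar>(g i \<times> g j) \<bullet> g k\<bar>) ` (Sigma I (\<lambda>_. Sigma I (\<lambda>_. I))))"

lemma K1: assumes "i \<in> I" "j \<in> I" "k \<in> I" shows "norm (g i \<times> g j) / \<bar>(g i \<times> g j) \<bullet> g k\<bar> \<le> K1"
  unfolding K1_def by (rule Max_ge) (use assms in force)+
lemma K2: assumes "i \<in> I" "j \<in> I" "k \<in> I" shows "1 / \<bar>(g i \<times> g j) \<bullet> g k\<bar> \<le> K2"
  unfolding K2_def by (rule Max_ge) (use assms in force)+
lemma K1_nonneg: "0 \<le> K1"
  using K1[of 1 1 1] N3 by (smt (verit) atLeastAtMost_iff divide_nonneg_nonneg abs_ge_zero norm_ge_zero le_numeral_extra(4) order_trans one_le_numeral)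
lemma K2_nonneg: "0 \<le> K2"
  using K2[of 1 1 1] N3 by (smt (verit) atLeastAtMost_iff divide_nonneg_nonneg abs_ge_zero zero_le_one le_numeral_extra(4) order_trans one_le_numeral)

lemma dot_le_norm: "k \<in> I \<Longrightarrow> \<bar>v \<bullet> g k\<bar> \<le> norm v"
  using Cauchy_Schwarz_ineq2[of v "g k"] g_unit by simp

lemma WP:
  assumes u: "vtx u" and ij: "i \<in> S u" "j \<in> S u" "i \<noteq> j" and k: "k \<in> I"
    and D: "(g i \<times> g j) \<bullet> g k \<noteq> 0" and m: "mm \<in> \<int>"
  defines "z \<equiv> u + ((mm - val u k) / ((g i \<times> g j) \<bullet> g k)) *\<^sub>R (g i \<times> g j)"
  shows "vtx z \<and> i \<in> S z \<and> j \<in> S z \<and> k \<in> S z \<and> val z i = val u i \<and> val z j = val u j \<and> val z k = mm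
         \<and> norm (z - u) \<le> \<bar>mm - val u k\<bar> * K1
         \<and> (\<exists>n. real n \<le> nu (z - u) + real N + 1 \<and> reach (Tl u) (Tl z) n)"
proof -
  let ?h = "g i \<times> g j"
  let ?l = "(mm - val u k) / (?h \<bullet> g k)"
  have hij: "?h \<bullet> g i = 0" "?h \<bullet> g j = 0" by (simp_all add: dot_cross_self)
  have kij: "k \<noteq> i" "k \<noteq> j" using D hij by auto
  have I2: "i \<in> I" "j \<in> I" using ij S_sub[of u] by auto
  have vz: "val z q = val u q + ?l * (?h \<bullet> g q)" for q by (simp add: z_def val_add)
  have vzi: "val z i = val u i" "val z j = val u j" using vz hij by simp_all
  have vzk: "val z k = mm" using vz[of k] D by simp
  have Sz: "i \<in> S z" "j \<in> S z" "k \<in> S z" using vzi vzk ij I2 k m by (auto simp: S_def')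
  have "card {i, j, k} = 3" using kij ij by auto
  hence vtz: "vtx z" unfolding vtx_def using card_mono[OF finite_S, of "{i, j, k}" z] Sz by simp
  have "norm (z - u) = \<bar>?l\<bar> * norm ?h" by (simp add: z_def)
  also have "\<dots> = \<bar>mm - val u k\<bar> * (norm ?h / \<bar>?h \<bullet> g k\<bar>)" by (simp add: abs_divide)
  also have "\<dots> \<le> \<bar>mm - val u k\<bar> * K1" using K1[OF I2 k] by (intro mult_left_mono) auto
  finally have nb: "norm (z - u) \<le> \<bar>mm - val u k\<bar> * K1" .
  have "\<exists>n. real n \<le> nu (z - u) + real N + 1 \<and> reach (Tl u) (Tl z) n"
    by (rule WL[OF u vtz ij(3) ij(1,2) Sz(1,2)]) (use vzi in auto)
  thus ?thesis using vtz Sz vzi vzk nb by blast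
qed


lemma two_avoid:
  assumes "g x \<noteq> g y"
  obtains w where "w \<in> {x, y}" "g w \<noteq> g b"
proof (cases "g x = g b")
  case True thus ?thesis using that[of y] assms by auto
next
  case False thus ?thesis using that[of x] by auto
qed

lemma three_avoid:
  assumes "S u = {p1, p2, p3}" "p1 \<noteq> p2" "p1 \<noteq> p3" "p2 \<noteq> p3"
    "g p1 \<noteq> g p2" "g p1 \<noteq> g p3" "g p2 \<noteq> g p3"
  obtains x y where "x \<in> S u" "y \<in> S u" "x \<noteq> y" "g x \<noteq> g b" "g y \<noteq> g b"
proof (cases "g p1 = g b")
  case True thus ?thesis using that[of p2 p3] assms by auto
next
  case False
  show ?thesis
  proof (cases "g p2 = g b")
    case True thus ?thesis using that[of p1 p3] assms False by auto
  next
    case False2: False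
    thus ?thesis using that[of p1 p2] assms False by auto
  qed
qed

lemma LC:
  assumes R: "0 \<le> R"
  shows "\<exists>F. \<forall>u v. vtx u \<longrightarrow> vtx v \<longrightarrow> norm (v - u) \<le> R \<longrightarrow> reach (Tl u) (Tl v) F"
proof -
  define R1 where "R1 = R + K1 * R"
  define R2 where "R2 = R1 + K1 * R1"
  define B where "B = (real N * (K1 * R) + real N + 1) + (real N * (K1 * R1) + real N + 1) + (real N * R2 + real N + 1)"
  have K1n: "0 \<le> K1" by (rule K1_nonneg)
  show ?thesis
  proof (intro exI allI impI)
    fix u v assume u: "vtx u" and v: "vtx v" and uv: "norm (v - u) \<le> R"
    obtain a' b' c' where Sv: "S v = {a', b', c'}" "a' \<noteq> b'" "a' \<noteq> c'" "b' \<noteq> c'" "a' \<in> I" "b' \<in> I" "c' \<in> I"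
      "g a' \<noteq> g b'" "g a' \<noteq> g c'" "g b' \<noteq> g c'"
      using vtx_obt[OF v] by metis
    obtain p1 p2 p3 where Su: "S u = {p1, p2, p3}" "p1 \<noteq> p2" "p1 \<noteq> p3" "p2 \<noteq> p3"
      "g p1 \<noteq> g p2" "g p1 \<noteq> g p3" "g p2 \<noteq> g p3"
      using vtx_obt[OF u] by metis
    obtain x y where xy: "x \<in> S u" "y \<in> S u" "x \<noteq> y" "g x \<noteq> g a'" "g y \<noteq> g a'"
      using three_avoid[OF Su] by blast
    have xyI: "x \<in> I" "y \<in> I" using xy S_sub[of u] by auto
    have gxy: "g x \<noteq> g y" using S_g_distinct xy by blast
    have D1: "(g x \<times> g y) \<bullet> g a' \<noteq> 0"
      using triple_idx[of x y a'] xyI Sv(5) xy gxy by metis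
    have ma: "val v a' \<in> \<int>" "val v b' \<in> \<int>" using Sv by (auto simp: S_def')
    define u1 where "u1 = u + ((val v a' - val u a') / ((g x \<times> g y) \<bullet> g a')) *\<^sub>R (g x \<times> g y)"
    have W1: "vtx u1 \<and> x \<in> S u1 \<and> y \<in> S u1 \<and> a' \<in> S u1 \<and> val u1 x = val u x \<and> val u1 y = val u y \<and> val u1 a' = val v a'
         \<and> norm (u1 - u) \<le> \<bar>val v a' - val u a'\<bar> * K1
         \<and> (\<exists>n. real n \<le> nu (u1 - u) + real N + 1 \<and> reach (Tl u) (Tl u1) n)"
      unfolding u1_def by (rule WP[OF u xy(1,2,3) Sv(5) D1 ma(1)])
    have d1: "\<bar>val v a' - val u a'\<bar> \<le> R"
      using dot_le_norm[OF Sv(5), of "v - u"] val_diff[of v a' u] uv by simp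
    have nu1: "norm (u1 - u) \<le> K1 * R" using W1 d1 K1n by (smt (verit) mult_right_mono mult.commute)
    have nvu1: "norm (v - u1) \<le> R1"
    proof -
      have "norm (v - u1) \<le> norm (v - u) + norm (u1 - u)" using norm_triangle_ineq4[of "v - u" "u1 - u"] by simp
      thus ?thesis using nu1 uv by (simp add: R1_def)
    qed
    obtain n1 where n1: "real n1 \<le> nu (u1 - u) + real N + 1" "reach (Tl u) (Tl u1) n1" using W1 by blast
    have n1b: "real n1 \<le> real N * (K1 * R) + real N + 1"
      using n1(1) nu_le_norm[of "u1 - u"] nu1 by (smt (verit) mult_left_mono of_nat_0_le_iff)
    obtain w where w: "w \<in> {x, y}" "g w \<noteq> g b'" using two_avoid[OF gxy] by blast
    have wS: "w \<in> S u1" "a' \<in> S u1" using w W1 by auto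
    have wa: "w \<noteq> a'" "g w \<noteq> g a'" using w xy by auto
    have wI: "w \<in> I" using w xyI by auto
    have D2: "(g w \<times> g a') \<bullet> g b' \<noteq> 0"
      using triple_idx[of w a' b'] wI Sv(5,6) wa w Sv(2,8) by metis
    define u2 where "u2 = u1 + ((val v b' - val u1 b') / ((g w \<times> g a') \<bullet> g b')) *\<^sub>R (g w \<times> g a')"
    have W2: "vtx u2 \<and> w \<in> S u2 \<and> a' \<in> S u2 \<and> b' \<in> S u2 \<and> val u2 w = val u1 w \<and> val u2 a' = val u1 a' \<and> val u2 b' = val v b'
         \<and> norm (u2 - u1) \<le> \<bar>val v b' - val u1 b'\<bar> * K1
         \<and> (\<exists>n. real n \<le> nu (u2 - u1) + real N + 1 \<and> reach (Tl u1) (Tl u2) n)"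
      unfolding u2_def by (rule WP[OF conjunct1[OF W1] wS wa(1) Sv(6) D2 ma(2)])
    have d2: "\<bar>val v b' - val u1 b'\<bar> \<le> R1"
      using dot_le_norm[OF Sv(6), of "v - u1"] val_diff[of v b' u1] nvu1 by simp
    have nu2: "norm (u2 - u1) \<le> K1 * R1" using W2 d2 K1n by (smt (verit) mult_right_mono mult.commute)
    have nvu2: "norm (v - u2) \<le> R2"
    proof -
      have "norm (v - u2) \<le> norm (v - u1) + norm (u2 - u1)" using norm_triangle_ineq4[of "v - u1" "u2 - u1"] by simp
      thus ?thesis using nu2 nvu1 by (simp add: R2_def)
    qed
    obtain n2 where n2: "real n2 \<le> nu (u2 - u1) + real N + 1" "reach (Tl u1) (Tl u2) n2" using W2 by blast
    have n2b: "real n2 \<le> real N * (K1 * R1) + real N + 1"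
      using n2(1) nu_le_norm[of "u2 - u1"] nu2 by (smt (verit) mult_left_mono of_nat_0_le_iff)
    have u2v: "a' \<in> S u2" "b' \<in> S u2" "val u2 a' = val v a'" "val u2 b' = val v b'" using W1 W2 by auto
    obtain n3 where n3: "real n3 \<le> nu (v - u2) + real N + 1" "reach (Tl u2) (Tl v) n3"
      using WL[OF conjunct1[OF W2] v Sv(2) u2v(1,2)] u2v(3,4) Sv(1) by auto
    have n3b: "real n3 \<le> real N * R2 + real N + 1"
      using n3(1) nu_le_norm[of "v - u2"] nvu2 by (smt (verit) mult_left_mono of_nat_0_le_iff)
    have r: "reach (Tl u) (Tl v) (n1 + n2 + n3)"
      by (rule reach_trans[OF reach_trans[OF n1(2) n2(2)] n3(2)])
    have "real (n1 + n2 + n3) \<le> B" using n1b n2b n3b by (simp add: B_def)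
    hence "n1 + n2 + n3 \<le> nat (ceiling B)" by linarith
    thus "reach (Tl u) (Tl v) (nat (ceiling B))" using r reach_mono by blast
  qed
qed

end


context gridB begin

lemma NV:
  assumes I3: "i \<in> I" "j \<in> I" "c \<in> I" and ne: "i \<noteq> j" "i \<noteq> c" "j \<noteq> c"
    and gd: "g i \<noteq> g j" "g i \<noteq> g c" "g j \<noteq> g c"
  shows "\<exists>x. vtx x \<and> i \<in> S x \<and> j \<in> S x \<and> norm (x - q) \<le> 3 * K2"
proof -
  have D: "(g i \<times> g j) \<bullet> g c \<noteq> 0" using triple_idx[OF I3 ne gd] .
  define \<alpha> where "\<alpha> = of_int (ceiling (val q i)) - val q i"
  define \<beta> where "\<beta> = of_int (ceiling (val q j)) - val q j"
  define \<delta> where "\<delta> = of_int (ceiling (val q c)) - val q c"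
  have ab: "0 \<le> \<alpha>" "\<alpha> \<le> 1" "0 \<le> \<beta>" "\<beta> \<le> 1" "0 \<le> \<delta>" "\<delta> \<le> 1"
    unfolding \<alpha>_def \<beta>_def \<delta>_def by linarith+
  define d where "d = (1 / ((g i \<times> g j) \<bullet> g c)) *\<^sub>R (\<alpha> *\<^sub>R (g j \<times> g c) + \<beta> *\<^sub>R (g c \<times> g i) + \<delta> *\<^sub>R (g i \<times> g j))"
  have dg: "d \<bullet> g i = \<alpha>" "d \<bullet> g j = \<beta>" "d \<bullet> g c = \<delta>"
    using solve3[OF D, of \<alpha> \<beta> \<delta>] by (simp_all add: d_def)
  define x where "x = q + d"
  have vx: "val x i = of_int (ceiling (val q i))" "val x j = of_int (ceiling (val q j))" "val x c = of_int (ceiling (val q c))"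
    using dg by (simp_all add: x_def val_add \<alpha>_def \<beta>_def \<delta>_def)
  have Sx: "i \<in> S x" "j \<in> S x" "c \<in> S x" using vx I3 by (auto simp: S_def')
  have "card {i, j, c} = 3" using ne by auto
  hence vtz: "vtx x" unfolding vtx_def using card_mono[OF finite_S, of "{i, j, c}" x] Sx by simp
  have u: "norm (g i) = 1" "norm (g j) = 1" "norm (g c) = 1" using I3 g_unit by auto
  have "norm d \<le> (\<bar>\<alpha>\<bar> + \<bar>\<beta>\<bar> + \<bar>\<delta>\<bar>) / \<bar>(g i \<times> g j) \<bullet> g c\<bar>"
    unfolding d_def by (rule solve3_norm[OF u])
  also have "\<dots> \<le> 3 / \<bar>(g i \<times> g j) \<bullet> g c\<bar>" using ab D by (intro divide_right_mono) auto
  also have "\<dots> = 3 * (1 / \<bar>(g i \<times> g j) \<bullet> g c\<bar>)" by simp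
  also have "\<dots> \<le> 3 * K2" using K2[OF I3] by simp
  finally have "norm (x - q) \<le> 3 * K2" by (simp add: x_def)
  thus ?thesis using vtz Sx by blast
qed

lemma third_value:
  assumes "g i \<noteq> g j"
  obtains c where "c \<in> I" "g c \<noteq> g i" "g c \<noteq> g j"
proof -
  obtain a b c where abc: "a \<in> I" "b \<in> I" "c \<in> I" "g a \<noteq> g b" "g a \<noteq> g c" "g b \<noteq> g c"
    by (rule three_obt)
  show ?thesis
  proof (cases "g a \<noteq> g i \<and> g a \<noteq> g j")
    case True thus ?thesis using that abc by blast
  next
    case False
    show ?thesis
    proof (cases "g b \<noteq> g i \<and> g b \<noteq> g j")
      case True thus ?thesis using that abc by blast
    next
      case False2: False
      have "g c \<noteq> g i" "g c \<noteq> g j" using False False2 abc assms by metis+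
      thus ?thesis using that abc by blast
    qed
  qed
qed

lemma SEG:
  "\<exists>E0 K0. 0 \<le> E0 \<and> 0 \<le> K0 \<and> (\<forall>\<rho>\<in>Wset. \<forall>\<alpha>. 0 \<le> \<alpha> \<longrightarrow> (\<forall>u. vtx u \<longrightarrow>
      (\<exists>v. vtx v \<and> norm (v - (u + \<alpha> *\<^sub>R \<rho>)) \<le> E0 \<and> (\<exists>n. real n \<le> \<alpha> + K0 \<and> reach (Tl u) (Tl v) n))))"
proof -
  have K2n: "0 \<le> K2" by (rule K2_nonneg)
  have K1n: "0 \<le> K1" by (rule K1_nonneg)
  obtain F1 where F1: "\<forall>u v. vtx u \<longrightarrow> vtx v \<longrightarrow> norm (v - u) \<le> 3 * K2 \<longrightarrow> reach (Tl u) (Tl v) F1"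
    using LC[of "3 * K2"] K2n by auto
  define E0 where "E0 = K1 + 3 * K2"
  define K0 where "K0 = real F1 + real N * K1 + real N + 1"
  have E0n: "0 \<le> E0" and K0n: "0 \<le> K0" using K1n K2n by (simp_all add: E0_def K0_def)
  have main: "\<exists>v. vtx v \<and> norm (v - (u + \<alpha> *\<^sub>R \<rho>)) \<le> E0 \<and> (\<exists>n. real n \<le> \<alpha> + K0 \<and> reach (Tl u) (Tl v) n)"
    if \<rho>: "\<rho> \<in> Wset" and \<alpha>: "0 \<le> \<alpha>" and u: "vtx u" for \<rho> \<alpha> u
  proof -
    obtain s i j where sij: "\<rho> = s *\<^sub>R ((1 / nu (g i \<times> g j)) *\<^sub>R (g i \<times> g j))" "s \<in> {1, -1}" "1 \<le> i" "i < j" "j \<le> N"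
      using \<rho> unfolding Wset_def by blast
    let ?h = "g i \<times> g j"
    show ?thesis
    proof (cases "?h = 0")
      case True
      hence "\<rho> = 0" using sij by simp
      thus ?thesis using u reach_refl E0n K0n \<alpha> by (intro exI[of _ u]) (auto intro!: exI[of _ 0])
    next
      case False
      have gij: "g i \<noteq> g j" using False by auto
      have ijI: "i \<in> I" "j \<in> I" "i \<noteq> j" using sij by auto
      obtain c where c: "c \<in> I" "g c \<noteq> g i" "g c \<noteq> g j" using third_value[OF gij] by blast
      have cne: "i \<noteq> c" "j \<noteq> c" using c by auto
      obtain x where x: "vtx x" "i \<in> S x" "j \<in> S x" "norm (x - u) \<le> 3 * K2"
        using NV[OF ijI(1,2) c(1) ijI(3) cne gij c(2)[symmetric] c(3)[symmetric]] by blast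
      have r1: "reach (Tl u) (Tl x) F1" using F1 u x(1) x(4) by blast
      have D: "?h \<bullet> g c \<noteq> 0" using triple_idx[OF ijI(1,2) c(1) ijI(3) cne gij c(2)[symmetric] c(3)[symmetric]] .
      define \<mu> where "\<mu> = \<alpha> * s / nu ?h"
      have q: "u + \<alpha> *\<^sub>R \<rho> = u + \<mu> *\<^sub>R ?h" using sij(1) by (simp add: \<mu>_def)
      define qq where "qq = x + \<mu> *\<^sub>R ?h"
      define mm :: real where "mm = of_int (ceiling (val qq c))"
      have mmZ: "mm \<in> \<int>" by (simp add: mm_def)
      define z where "z = x + ((mm - val x c) / (?h \<bullet> g c)) *\<^sub>R ?h"
      have W: "vtx z \<and> i \<in> S z \<and> j \<in> S z \<and> c \<in> S z \<and> val z i = val x i \<and> val z j = val x j \<and> val z c = mm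
         \<and> norm (z - x) \<le> \<bar>mm - val x c\<bar> * K1
         \<and> (\<exists>n. real n \<le> nu (z - x) + real N + 1 \<and> reach (Tl x) (Tl z) n)"
        unfolding z_def by (rule WP[OF x(1) x(2,3) ijI(3) c(1) D mmZ])
      have vq: "val qq c = val x c + \<mu> * (?h \<bullet> g c)" by (simp add: qq_def val_add)
      have zq: "z - qq = ((mm - val qq c) / (?h \<bullet> g c)) *\<^sub>R ?h"
      proof -
        have "z - qq = ((mm - val x c) / (?h \<bullet> g c) - \<mu>) *\<^sub>R ?h" by (simp add: z_def qq_def algebra_simps)
        also have "(mm - val x c) / (?h \<bullet> g c) - \<mu> = (mm - val qq c) / (?h \<bullet> g c)"
          using D by (simp add: vq field_simps)
        finally show ?thesis .
      qed
      have mq: "0 \<le> mm - val qq c" "mm - val qq c \<le> 1" unfolding mm_def by linarith+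
      have nzq: "norm (z - qq) \<le> K1"
      proof -
        have "norm (z - qq) = \<bar>mm - val qq c\<bar> * (norm ?h / \<bar>?h \<bullet> g c\<bar>)" by (simp add: zq abs_divide)
        also have "\<dots> \<le> 1 * K1" using mq K1[OF ijI(1,2) c(1)] by (intro mult_mono) auto
        finally show ?thesis by simp
      qed
      obtain n2 where n2: "real n2 \<le> nu (z - x) + real N + 1" "reach (Tl x) (Tl z) n2" using W by blast
      have nuzx: "nu (z - x) \<le> \<alpha> + real N * K1"
      proof -
        have "z - x = \<alpha> *\<^sub>R \<rho> + (z - qq)" using q by (simp add: qq_def algebra_simps)
        hence "nu (z - x) \<le> nu (\<alpha> *\<^sub>R \<rho>) + nu (z - qq)" using nu_add by metis
        also have "nu (\<alpha> *\<^sub>R \<rho>) \<le> \<alpha>" using Wset_nu[OF \<rho>] \<alpha> by (simp add: nu_scale mult_left_le)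
        also have "nu (z - qq) \<le> real N * K1" using nu_le_norm[of "z - qq"] nzq by (smt (verit) mult_left_mono of_nat_0_le_iff)
        finally show ?thesis by simp
      qed
      have "norm (z - (u + \<alpha> *\<^sub>R \<rho>)) \<le> E0"
      proof -
        have "z - (u + \<alpha> *\<^sub>R \<rho>) = (z - qq) + (x - u)" using q by (simp add: qq_def algebra_simps)
        hence "norm (z - (u + \<alpha> *\<^sub>R \<rho>)) \<le> norm (z - qq) + norm (x - u)" by (metis norm_triangle_ineq)
        thus ?thesis using nzq x(4) by (simp add: E0_def)
      qed
      moreover have "reach (Tl u) (Tl z) (F1 + n2)" by (rule reach_trans[OF r1 n2(2)])
      moreover have "real (F1 + n2) \<le> \<alpha> + K0" using n2(1) nuzx by (simp add: K0_def)
      ultimately show ?thesis using W by blast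
    qed
  qed
  show ?thesis using main E0n K0n by blast
qed


lemma MS:
  assumes E0: "0 \<le> E0" and K0: "0 \<le> K0"
    and seg: "\<forall>\<rho>\<in>Wset. \<forall>\<alpha>. 0 \<le> \<alpha> \<longrightarrow> (\<forall>u. vtx u \<longrightarrow>
      (\<exists>v. vtx v \<and> norm (v - (u + \<alpha> *\<^sub>R \<rho>)) \<le> E0 \<and> (\<exists>n. real n \<le> \<alpha> + K0 \<and> reach (Tl u) (Tl v) n)))"
    and fin: "finite A"
  shows "A \<subseteq> Wset \<Longrightarrow> (\<forall>\<rho>\<in>A. 0 \<le> \<alpha> \<rho>) \<Longrightarrow> vtx u \<Longrightarrow>
    \<exists>v. vtx v \<and> norm (v - (u + (\<Sum>\<rho>\<in>A. \<alpha> \<rho> *\<^sub>R \<rho>))) \<le> real (card A) * E0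
      \<and> (\<exists>n. real n \<le> (\<Sum>\<rho>\<in>A. \<alpha> \<rho>) + real (card A) * K0 \<and> reach (Tl u) (Tl v) n)"
  using fin
proof (induction A arbitrary: u rule: finite_induct)
  case empty
  thus ?case using reach_refl by (intro exI[of _ u]) (auto intro!: exI[of _ 0])
next
  case (insert r A)
  obtain v1 n1 where v1: "vtx v1" "norm (v1 - (u + (\<Sum>\<rho>\<in>A. \<alpha> \<rho> *\<^sub>R \<rho>))) \<le> real (card A) * E0"
    "real n1 \<le> (\<Sum>\<rho>\<in>A. \<alpha> \<rho>) + real (card A) * K0" "reach (Tl u) (Tl v1) n1"
  proof -
    have "A \<subseteq> Wset" "\<forall>\<rho>\<in>A. 0 \<le> \<alpha> \<rho>" "vtx u" using insert.prems by auto
    from insert.IH[OF this] show ?thesis using that by blast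
  qed
  have rW: "r \<in> Wset" and ar: "0 \<le> \<alpha> r" using insert.prems by auto
  obtain v n2 where v: "vtx v" "norm (v - (v1 + \<alpha> r *\<^sub>R r)) \<le> E0"
    "real n2 \<le> \<alpha> r + K0" "reach (Tl v1) (Tl v) n2"
    using seg rW ar v1(1) by blast
  have sumI: "(\<Sum>\<rho>\<in>insert r A. \<alpha> \<rho> *\<^sub>R \<rho>) = \<alpha> r *\<^sub>R r + (\<Sum>\<rho>\<in>A. \<alpha> \<rho> *\<^sub>R \<rho>)"
    using insert.hyps by simp
  have sumI2: "(\<Sum>\<rho>\<in>insert r A. \<alpha> \<rho>) = \<alpha> r + (\<Sum>\<rho>\<in>A. \<alpha> \<rho>)" using insert.hyps by simp
  have cI: "real (card (insert r A)) = real (card A) + 1" using insert.hyps by simp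
  have "v - (u + (\<Sum>\<rho>\<in>insert r A. \<alpha> \<rho> *\<^sub>R \<rho>)) = (v - (v1 + \<alpha> r *\<^sub>R r)) + (v1 - (u + (\<Sum>\<rho>\<in>A. \<alpha> \<rho> *\<^sub>R \<rho>)))"
    unfolding sumI by (simp add: algebra_simps)
  hence "norm (v - (u + (\<Sum>\<rho>\<in>insert r A. \<alpha> \<rho> *\<^sub>R \<rho>))) \<le> norm (v - (v1 + \<alpha> r *\<^sub>R r)) + norm (v1 - (u + (\<Sum>\<rho>\<in>A. \<alpha> \<rho> *\<^sub>R \<rho>)))"
    by (simp only: norm_triangle_ineq)
  hence f0: "norm (v - (u + (\<Sum>\<rho>\<in>insert r A. \<alpha> \<rho> *\<^sub>R \<rho>))) \<le> E0 + real (card A) * E0"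
    using v(2) v1(2) by linarith
  have f1: "norm (v - (u + (\<Sum>\<rho>\<in>insert r A. \<alpha> \<rho> *\<^sub>R \<rho>))) \<le> real (card (insert r A)) * E0"
    using f0 unfolding cI by (simp add: algebra_simps)
  have f2: "reach (Tl u) (Tl v) (n1 + n2)" by (rule reach_trans[OF v1(4) v(4)])
  have f3: "real (n1 + n2) \<le> (\<Sum>\<rho>\<in>insert r A. \<alpha> \<rho>) + real (card (insert r A)) * K0"
    using v1(3) v(3) unfolding sumI2 cI by (simp add: algebra_simps)
  show ?case using v(1) f1 f2 f3 by blast
qed

lemma UB: "\<exists>C. 0 \<le> C \<and> (\<forall>p q. vtx p \<longrightarrow> vtx q \<longrightarrow> (\<exists>n. real n \<le> nu (q - p) + C \<and> reach (Tl p) (Tl q) n))"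
proof -
  obtain E0 K0 where EK: "0 \<le> E0" "0 \<le> K0" and seg: "\<forall>\<rho>\<in>Wset. \<forall>\<alpha>. 0 \<le> \<alpha> \<longrightarrow> (\<forall>u. vtx u \<longrightarrow>
      (\<exists>v. vtx v \<and> norm (v - (u + \<alpha> *\<^sub>R \<rho>)) \<le> E0 \<and> (\<exists>n. real n \<le> \<alpha> + K0 \<and> reach (Tl u) (Tl v) n)))"
    using SEG by blast
  let ?R = "real (card Wset) * E0"
  obtain F2 where F2: "\<forall>u v. vtx u \<longrightarrow> vtx v \<longrightarrow> norm (v - u) \<le> ?R \<longrightarrow> reach (Tl u) (Tl v) F2"
    using LC[of ?R] EK by auto
  define C where "C = real (card Wset) * K0 + real F2"
  have C0: "0 \<le> C" using EK by (simp add: C_def)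
  have "\<exists>n. real n \<le> nu (q - p) + C \<and> reach (Tl p) (Tl q) n" if p: "vtx p" and q: "vtx q" for p q
  proof (cases "q = p")
    case True thus ?thesis using C0 reach_refl by (intro exI[of _ 0]) (simp add: nu_nonneg)
  next
    case False
    let ?w = "q - p"
    have nw: "0 < nu ?w" using False nu_pos by simp
    have "nu ((1 / nu ?w) *\<^sub>R ?w) = 1" using nw by (simp add: nu_scale)
    hence "(1 / nu ?w) *\<^sub>R ?w \<in> convex hull Wset" by (rule sphere_in_hull)
    then obtain c where c: "\<forall>x\<in>Wset. 0 \<le> c x" "sum c Wset = 1" "(\<Sum>x\<in>Wset. c x *\<^sub>R x) = (1 / nu ?w) *\<^sub>R ?w"
      unfolding convex_hull_finite[OF finite_Wset] by blast
    define \<alpha> where "\<alpha> x = nu ?w * c x" for x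
    have a0: "\<forall>\<rho>\<in>Wset. 0 \<le> \<alpha> \<rho>" using c(1) nw by (simp add: \<alpha>_def)
    have sa: "(\<Sum>\<rho>\<in>Wset. \<alpha> \<rho> *\<^sub>R \<rho>) = ?w"
    proof -
      have "(\<Sum>\<rho>\<in>Wset. \<alpha> \<rho> *\<^sub>R \<rho>) = nu ?w *\<^sub>R (\<Sum>x\<in>Wset. c x *\<^sub>R x)"
        by (simp add: \<alpha>_def scaleR_sum_right)
      also have "\<dots> = ?w" using c(3) nw by simp
      finally show ?thesis .
    qed
    have sa2: "(\<Sum>\<rho>\<in>Wset. \<alpha> \<rho>) = nu ?w" using c(2) by (simp add: \<alpha>_def sum_distrib_left[symmetric])
    obtain v n1 where v: "vtx v" "norm (v - (p + ?w)) \<le> ?R" "real n1 \<le> nu ?w + real (card Wset) * K0"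
      "reach (Tl p) (Tl v) n1"
      using MS[OF EK seg finite_Wset order_refl a0 p] unfolding sa sa2 by blast
    have "norm (q - v) \<le> ?R" using v(2) by (simp add: norm_minus_commute)
    hence "reach (Tl v) (Tl q) F2" using F2 v(1) q by blast
    hence "reach (Tl p) (Tl q) (n1 + F2)" by (rule reach_trans[OF v(4)])
    moreover have "real (n1 + F2) \<le> nu ?w + C" using v(3) by (simp add: C_def)
    ultimately show ?thesis by blast
  qed
  thus ?thesis using C0 by blast
qed

end


context gridloc begin

lemma F_compact: "compact (frontier (convex hull (growth_vertices g N)))"
proof -
  have "finite (growth_vertices g N)" using growth_vertices_eq finite_Wset by simp
  hence "compact (convex hull (growth_vertices g N))" by (intro compact_convex_hull finite_imp_compact)
  thus ?thesis by (rule compact_frontier)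
qed

lemma shell_D:
  assumes "T \<in> coord_shell tiles P0 n"
  shows "T \<in> tiles" "\<exists>T0\<in>P0. (T0, T) \<in> Rn ^^ n" "\<And>m T0. m < n \<Longrightarrow> T0 \<in> P0 \<Longrightarrow> (T0, T) \<notin> Rn ^^ m"
  using assms by (auto simp: coord_shell_def)

end

context gridB begin

lemma Gm_inj: assumes "Gm a = Gm b" shows "a = b"
proof -
  let ?d = "a - b"
  have "Gm ?d = 0" using assms linear_diff[OF linear_Gm] by simp
  hence "?d \<bullet> Gm ?d = 0" by simp
  hence "(\<Sum>k\<in>I. (?d \<bullet> g k) * (?d \<bullet> g k)) = 0" by (simp add: Gm_def inner_sum_right)
  hence "\<forall>k\<in>I. (?d \<bullet> g k) * (?d \<bullet> g k) = 0" by (subst (asm) sum_nonneg_eq_0_iff) auto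
  hence "nu ?d = 0" by (simp add: nu_def)
  hence "?d = 0" using nu_pos by fastforce
  thus ?thesis by simp
qed

lemma hullV: "convex hull (growth_vertices g N) = Gm ` {v. nu v \<le> 1}"
  unfolding growth_vertices_eq ball_eq_hull convex_hull_linear_image[OF linear_Gm] ..

lemma Fmem:
  assumes v: "nu v = 1"
  shows "Gm v \<in> frontier (convex hull (growth_vertices g N))"
proof -
  have inK: "Gm v \<in> convex hull (growth_vertices g N)" unfolding hullV using v by auto
  have "Gm v \<notin> interior (convex hull (growth_vertices g N))"
  proof
    assume "Gm v \<in> interior (convex hull (growth_vertices g N))"
    then obtain e where e: "e > 0" "ball (Gm v) e \<subseteq> Gm ` {v. nu v \<le> 1}"
      unfolding mem_interior hullV by blast
    define \<delta> where "\<delta> = e / (2 * (norm (Gm v) + 1))"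
    have dp: "0 < \<delta>" using e by (simp add: \<delta>_def add_nonneg_pos)
    have "dist (Gm v) ((1 + \<delta>) *\<^sub>R Gm v) = \<delta> * norm (Gm v)"
      using dp by (simp add: dist_norm algebra_simps)
    also have "\<dots> < e"
    proof -
      have "\<delta> * norm (Gm v) = e * (norm (Gm v) / (2 * (norm (Gm v) + 1)))" by (simp add: \<delta>_def)
      also have "\<dots> < e * 1"
        using e by (intro mult_strict_left_mono) (auto simp: divide_less_eq add_nonneg_pos)
      finally show ?thesis by simp
    qed
    finally have "(1 + \<delta>) *\<^sub>R Gm v \<in> Gm ` {v. nu v \<le> 1}" using e(2) by auto
    then obtain v' where v': "nu v' \<le> 1" "(1 + \<delta>) *\<^sub>R Gm v = Gm v'" by auto
    have "Gm ((1 + \<delta>) *\<^sub>R v) = Gm v'" using v'(2) by (simp add: Gm_scale)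
    hence "(1 + \<delta>) *\<^sub>R v = v'" by (rule Gm_inj)
    hence "nu v' = 1 + \<delta>" using v dp by (auto simp: nu_scale)
    thus False using v'(1) dp by simp
  qed
  thus ?thesis using inK by (simp add: frontier_def closure_subset[THEN subsetD])
qed

lemma caseB_main:
  assumes P0: "finite P0" "P0 \<noteq> {}" "P0 \<subseteq> tiles"
  shows "\<exists>x C. \<forall>n. \<forall>T\<in>coord_shell tiles P0 n. \<forall>y\<in>T.
            \<exists>z\<in>frontier (convex hull (growth_vertices g N)). dist y (x + real n *\<^sub>R z) \<le> C"
proof -
  let ?F = "frontier (convex hull (growth_vertices g N))"
  obtain Cu where Cu: "0 \<le> Cu" "\<forall>p q. vtx p \<longrightarrow> vtx q \<longrightarrow> (\<exists>n. real n \<le> nu (q - p) + Cu \<and> reach (Tl p) (Tl q) n)"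
    using UB by blast
  obtain Ts where Ts: "Ts \<in> P0" using P0(2) by blast
  define pr where "pr = rep Ts"
  have vpr: "vtx pr" "Ts = Tl pr" using rep[of Ts] Ts P0(3) by (auto simp: pr_def)
  define M0 where "M0 = Max ((\<lambda>T0. nu (rep T0 - pr)) ` P0)"
  have M0: "nu (rep T0 - pr) \<le> M0" if "T0 \<in> P0" for T0
    unfolding M0_def using P0(1) that by (intro Max_ge) auto
  define C1 where "C1 = Cu + 2 * real N + M0"
  have M0n: "0 \<le> M0" using M0[OF Ts] nu_nonneg[of "rep Ts - pr"] by linarith
  have C1n: "0 \<le> C1" using Cu M0n by (simp add: C1_def)
  define \<Gamma> where "\<Gamma> = (\<Sum>k\<in>I. \<gamma> k *\<^sub>R g k)"
  define x where "x = Gm pr - \<Gamma>"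
  obtain v0 where v0: "v0 \<noteq> (0::real^3)" by (metis zero_neq_one vec_eq_iff vec_lambda_beta zero_index one_index)
  define z0 where "z0 = Gm ((1 / nu v0) *\<^sub>R v0)"
  have z0F: "z0 \<in> ?F" unfolding z0_def by (rule Fmem) (use nu_pos[OF v0] in \<open>simp add: nu_scale\<close>)
  define C where "C = 2 * real N + C1 * (1 + norm z0)"
  have key: "\<exists>z\<in>?F. dist y (x + real n *\<^sub>R z) \<le> C"
    if T: "T \<in> coord_shell tiles P0 n" and y: "y \<in> T" for n T y
  proof -
    have Tt: "T \<in> tiles" using shell_D(1)[OF T] .
    define p where "p = rep T"
    have vp: "vtx p" "T = Tl p" using rep[OF Tt] by (auto simp: p_def)
    define w where "w = p - pr"
    obtain T0 where T0: "T0 \<in> P0" "(T0, T) \<in> Rn ^^ n" using shell_D(2)[OF T] by blast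
    have "nu (p - rep T0) \<le> real n + 2 * real N" using pow_nu[OF T0(2)] by (simp add: p_def)
    moreover have "nu w \<le> nu (p - rep T0) + nu (rep T0 - pr)"
      using nu_add[of "p - rep T0" "rep T0 - pr"] by (simp add: w_def)
    ultimately have low: "nu w \<le> real n + C1 - Cu" using M0[OF T0(1)] by (simp add: C1_def)
    obtain m where m: "real m \<le> nu w + Cu" "reach (Tl pr) (Tl p) m" using Cu(2) vpr(1) vp(1) by (auto simp: w_def)
    obtain m' where m': "m' \<le> m" "(Ts, T) \<in> Rn ^^ m'" using m(2) vpr(2) vp(2) by (auto simp: reach_def)
    have "\<not> m' < n" using shell_D(3)[OF T _ Ts] m'(2) by blast
    hence up: "real n \<le> nu w + Cu" using m'(1) m(1) by linarith
    have diff: "\<bar>nu w - real n\<bar> \<le> C1" using low up Cu M0n by (simp add: C1_def abs_le_iff)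
    have yb: "y \<in> bx p" using y vp(2) Tl_sub_box by blast
    have "(\<Sum>k\<in>I. val p k *\<^sub>R g k) = Gm p - \<Gamma>"
      by (simp add: val_def Gm_def \<Gamma>_def scaleR_diff_left sum_subtractf)
    hence e: "norm (y - (Gm p - \<Gamma>)) \<le> 2 * real N" using box_near[OF yb] by simp
    have Gw: "Gm p - \<Gamma> = x + Gm w" by (simp add: x_def w_def linear_diff[OF linear_Gm])
    show ?thesis
    proof (cases "w = 0")
      case True
      hence nw: "nu w = 0" by (simp add: nu_def)
      hence nC: "real n \<le> C1" using diff by simp
      have "dist y (x + real n *\<^sub>R z0) = norm ((y - (Gm p - \<Gamma>)) - real n *\<^sub>R z0)"
        using Gw True by (simp add: dist_norm linear_0[OF linear_Gm] algebra_simps)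
      also have "\<dots> \<le> norm (y - (Gm p - \<Gamma>)) + real n * norm z0" by (rule order_trans[OF norm_triangle_ineq4]) simp
      also have "\<dots> \<le> 2 * real N + C1 * norm z0" using e nC by (intro add_mono mult_right_mono) auto
      also have "\<dots> \<le> C" using C1n by (simp add: C_def algebra_simps)
      finally show ?thesis using z0F by blast
    next
      case False
      have nwp: "0 < nu w" using nu_pos[OF False] .
      define z where "z = Gm ((1 / nu w) *\<^sub>R w)"
      have zF: "z \<in> ?F" unfolding z_def by (rule Fmem) (use nwp in \<open>simp add: nu_scale\<close>)
      have zz: "z = (1 / nu w) *\<^sub>R Gm w" by (simp add: z_def Gm_scale)
      have eqd: "y - (x + real n *\<^sub>R z) = (y - (Gm p - \<Gamma>)) + ((nu w - real n) / nu w) *\<^sub>R Gm w"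
        using Gw nwp by (simp add: zz algebra_simps diff_divide_distrib scaleR_diff_left)
      have "dist y (x + real n *\<^sub>R z) = norm ((y - (Gm p - \<Gamma>)) + ((nu w - real n) / nu w) *\<^sub>R Gm w)"
        by (simp only: dist_norm eqd)
      also have "\<dots> \<le> norm (y - (Gm p - \<Gamma>)) + norm (((nu w - real n) / nu w) *\<^sub>R Gm w)"
        by (rule norm_triangle_ineq)
      also have "norm (((nu w - real n) / nu w) *\<^sub>R Gm w) = \<bar>nu w - real n\<bar> * (norm (Gm w) / nu w)"
        using nwp by (simp add: abs_divide)
      also have "\<dots> \<le> C1 * 1"
        using diff norm_Gm[of w] nwp by (intro mult_mono) (auto simp: divide_le_eq)
      finally have "dist y (x + real n *\<^sub>R z) \<le> 2 * real N + C1" using e by simp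
      also have "\<dots> \<le> C" using C1n by (simp add: C_def algebra_simps)
      finally show ?thesis using zF by blast
    qed
  qed
  thus ?thesis by blast
qed

end

context gridloc begin

lemma third_idx0:
  assumes "i \<in> I" "j \<in> I"
  obtains k where "k \<in> I" "k \<noteq> i" "k \<noteq> j"
proof -
  have a: "card I - card {i, j} \<le> card (I - {i, j})" by (rule diff_card_le_card_Diff) simp
  have b: "card {i, j} \<le> 2" by (simp add: card_insert_if)
  have "card (I - {i, j}) \<ge> 1" using a b N3 by simp
  then obtain k where "k \<in> I - {i, j}" by (metis card.empty ex_in_conv not_one_le_zero)
  thus ?thesis using that by blast
qed

lemma caseA_vectors:
  assumes no3: "\<not> (\<exists>a\<in>I. \<exists>b\<in>I. \<exists>c\<in>I. g a \<noteq> g b \<and> g a \<noteq> g c \<and> g b \<noteq> g c)"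
  obtains u1 u2 where "independent {u1, u2}" "u1 \<noteq> u2" "\<forall>k\<in>I. g k = u1 \<or> g k = u2"
proof -
  have one: "1 \<in> I" using N3 by auto
  show ?thesis
  proof (cases "\<exists>b\<in>I. g b \<noteq> g 1")
    case True
    then obtain b where b: "b \<in> I" "g b \<noteq> g 1" by blast
    have all: "\<forall>k\<in>I. g k = g 1 \<or> g k = g b"
    proof
      fix k assume k: "k \<in> I"
      show "g k = g 1 \<or> g k = g b"
      proof (rule ccontr)
        assume "\<not> (g k = g 1 \<or> g k = g b)"
        hence "g 1 \<noteq> g b \<and> g 1 \<noteq> g k \<and> g b \<noteq> g k" using b by auto
        thus False using no3 one b(1) k by blast
      qed
    qed
    have b1: "b \<noteq> 1" using b by auto
    obtain c where c: "c \<in> I" "c \<noteq> 1" "c \<noteq> b" using third_idx0[OF one b(1)] by blast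
    have "independent {g 1, g b, g c}" using indep3[OF one b(1) c(1) b1[symmetric] c(2)[symmetric] c(3)[symmetric]] .
    moreover have "{g 1, g b, g c} = {g 1, g b}" using all c(1) by auto
    ultimately have "independent {g 1, g b}" by simp
    thus ?thesis using that[of "g 1" "g b"] b all by auto
  next
    case False
    hence all: "\<forall>k\<in>I. g k = g 1" by blast
    have "dim {g 1} < DIM(real^3)" using dim_le_card[of "{g 1}" "{g 1}"] by (simp add: span_base)
    then obtain d where d: "d \<noteq> 0" "\<And>y. y \<in> span {g 1} \<Longrightarrow> orthogonal d y"
      using orthogonal_to_subspace_exists by blast
    have dn: "d \<notin> span {g 1}"
    proof
      assume "d \<in> span {g 1}"
      hence "orthogonal d d" by (rule d(2))
      thus False using d(1) by (simp add: orthogonal_def)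
    qed
    have g1: "g 1 \<noteq> 0" using g_nz one by blast
    have "independent {g 1}" using g1 by (simp add: independent_insert)
    hence "independent (insert d {g 1})" using dn by (rule independent_insertI[rotated])
    hence ind: "independent {g 1, d}" by (simp add: insert_commute)
    have ne1: "g 1 \<noteq> d" using dn by (auto intro: span_base)
    have all2: "\<forall>k\<in>I. g k = g 1 \<or> g k = d" using all by blast
    show ?thesis by (rule that[OF ind ne1 all2])
  qed
qed

lemma caseA_V:
  assumes u: "independent {u1, u2}" "u1 \<noteq> u2" and gk: "\<forall>k\<in>I. g k = u1 \<or> g k = u2"
  shows "growth_vertices g N = {0}"
proof -
  have W0: "Wset \<subseteq> {0}"
  proof
    fix w assume "w \<in> Wset"
    then obtain s i j where w: "w = s *\<^sub>R ((1 / nu (g i \<times> g j)) *\<^sub>R (g i \<times> g j))" "1 \<le> i" "i < j" "j \<le> N"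
      unfolding Wset_def by blast
    let ?h = "g i \<times> g j"
    have "nu ?h = 0"
    proof (cases "g i = g j")
      case True thus ?thesis by (simp add: nu_def)
    next
      case False
      have "?h \<bullet> g k = 0" if k: "k \<in> I" for k
      proof -
        have "g i \<in> {u1, u2}" "g j \<in> {u1, u2}" "g k \<in> {u1, u2}" using gk k w by auto
        hence "g k = g i \<or> g k = g j" using False by auto
        thus ?thesis by (auto simp: dot_cross_self)
      qed
      thus ?thesis by (simp add: nu_def)
    qed
    thus "w \<in> {0}" using w by simp
  qed
  have N2: "(2::nat) \<le> N" using N3 by simp
  have "(1::real) *\<^sub>R ((1 / nu (g 1 \<times> g 2)) *\<^sub>R (g 1 \<times> g 2)) \<in> Wset"
    unfolding Wset_def mem_Collect_eq
    apply (rule exI[of _ "1::real"])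
    apply (rule exI[of _ "1::nat"])
    apply (rule exI[of _ "2::nat"])
    using N2 by simp
  hence ne: "Wset \<noteq> {}" by blast
  have "Wset = {0}" using subset_singletonD[OF W0] ne by blast
  thus ?thesis by (simp add: growth_vertices_eq linear_0[OF linear_Gm])
qed

lemma caseA_main:
  assumes no3: "\<not> (\<exists>a\<in>I. \<exists>b\<in>I. \<exists>c\<in>I. g a \<noteq> g b \<and> g a \<noteq> g c \<and> g b \<noteq> g c)"
    and P0: "finite P0" "P0 \<noteq> {}" "P0 \<subseteq> tiles"
  shows "\<exists>x C. \<forall>n. \<forall>T\<in>coord_shell tiles P0 n. \<forall>y\<in>T.
            \<exists>z\<in>frontier (convex hull (growth_vertices g N)). dist y (x + real n *\<^sub>R z) \<le> C"
proof -
  obtain u1 u2 where u: "independent {u1, u2}" "u1 \<noteq> u2" "\<forall>k\<in>I. g k = u1 \<or> g k = u2"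
    using caseA_vectors[OF no3] by blast
  have F: "frontier (convex hull (growth_vertices g N)) = {0}"
    using caseA_V[OF u] by (simp add: frontier_def)
  define C where "C = Max ((\<lambda>T0. norm (\<Sum>k\<in>I. val (rep T0) k *\<^sub>R g k)) ` P0) + 2 * real N"
  have Cb: "norm (\<Sum>k\<in>I. val (rep T0) k *\<^sub>R g k) + 2 * real N \<le> C" if "T0 \<in> P0" for T0
    unfolding C_def using P0(1) that by (simp add: Max_ge)
  have "norm y \<le> C" if T: "T \<in> coord_shell tiles P0 n" and y: "y \<in> T" for n T y
  proof -
    obtain T0 where T0: "T0 \<in> P0" "(T0, T) \<in> Rn ^^ n" using shell_D(2)[OF T] by blast
    have "T \<subseteq> bx (rep T0)" using caseA_pow[OF u T0(2)] T0(1) P0(3) by blast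
    hence "norm (y - (\<Sum>k\<in>I. val (rep T0) k *\<^sub>R g k)) \<le> 2 * real N" using y box_near by blast
    hence "norm y \<le> norm (\<Sum>k\<in>I. val (rep T0) k *\<^sub>R g k) + 2 * real N"
      by (smt (verit) norm_triangle_ineq2)
    thus ?thesis using Cb[OF T0(1)] by linarith
  qed
  thus ?thesis unfolding F by (intro exI[of _ 0] exI[of _ C]) auto
qed

end

theorem theorem4:
  fixes g :: "nat \<Rightarrow> real^3" and \<gamma> :: "nat \<Rightarrow> real" and N :: nat
  assumes "N \<ge> 3"
    and "\<forall>i\<in>{1..N}. norm (g i) = 1"
    and "\<forall>i\<in>{1..N}. \<forall>j\<in>{1..N}. \<forall>k\<in>{1..N}. i \<noteq> j \<and> i \<noteq> k \<and> j \<noteq> k \<longrightarrow>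
           independent {g i, g j, g k}"
    and "regular_grid g \<gamma> N"
  shows "is_growth_form (grid_tiles g \<gamma> N) (frontier (convex hull (growth_vertices g N)))"
proof -
  interpret G: gridloc g \<gamma> N using assms by (unfold_locales) auto
  show ?thesis
    unfolding is_growth_form_def
  proof (intro conjI allI impI)
    show "compact (frontier (convex hull (growth_vertices g N)))" by (rule G.F_compact)
  next
    fix P0 assume P0: "finite P0 \<and> P0 \<noteq> {} \<and> P0 \<subseteq> grid_tiles g \<gamma> N"
    show "\<exists>x C. \<forall>n. \<forall>T\<in>coord_shell (grid_tiles g \<gamma> N) P0 n. \<forall>y\<in>T.
            \<exists>z\<in>frontier (convex hull (growth_vertices g N)). dist y (x + real n *\<^sub>R z) \<le> C"
    proof (cases "\<exists>a\<in>{1..N}. \<exists>b\<in>{1..N}. \<exists>c\<in>{1..N}. g a \<noteq> g b \<and> g a \<noteq> g c \<and> g b \<noteq> g c")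
      case True
      interpret B: gridB g \<gamma> N using assms True by (unfold_locales) auto
      show ?thesis using B.caseB_main P0 by blast
    next
      case False
      show ?thesis using G.caseA_main[OF False] P0 by blast
    qed
  qed
qed


end
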